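(* The categories $\mathcal{YD}\mathrm{PH}(\mathrm{Vec}_\Bbbk)$ and $\mathrm{MP}(\mathrm{Vec}_\Bbbk)$ are isomorphic. Explicitly: from a Yetter--Drinfeld post-Hopf algebra $(H,\cdot,1,\Delta,\epsilon,S,\rightharpoonup)$ one obtains the matched pair of actions $(H_\rightharpoonup,\rightharpoonup,\leftharpoonup)$ on its subadjacent Hopf algebra $H_\rightharpoonup=(H,\bullet_\rightharpoonup,1,\Delta,\epsilon,S_\rightharpoonup)$, with $\leftharpoonup$ as in (P6); conversely, from a matched pair of actions $(H,\rightharpoonup,\leftharpoonup)$ on a Hopf algebra $(H,\bullet,1,\Delta,\epsilon,T)$ one obtains the Yetter--Drinfeld post-Hopf algebra $(H,\cdot,1,\Delta,\epsilon,S,\rightharpoonup)$ with $a\cdot b:=a_1\bullet(T(a_2)\rightharpoonup b)$ and $S(a):=a_1\rightharpoonup T(a_2)$; these assignments (identity on underlying maps for morphisms) are mutually inverse.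
   Context: Conventions: $\Bbbk$ is a field; algebras are associative unital, coalgebras coassociative counital; Sweedler notation $\Delta(c)=c_1\otimes c_2$ (summation omitted), iterated as $c_1\otimes c_2\otimes c_3$ etc.; $H\otimes H$ carries the tensor product coalgebra structure. Definition (Yetter--Drinfeld post-Hopf algebra). A tuple $(H,\cdot,1,\Delta,\epsilon,S,\rightharpoonup)$ where $(H,\cdot,1)$ is an algebra, $(H,\Delta,\epsilon)$ is a coalgebra on the same vector space, $S:H\to H$ is linear with $x_1\cdot S(x_2)=S(x_1)\cdot x_2=\epsilon(x)1$ for all $x$, and $\rightharpoonup:H\otimes H\to H$ is a coalgebra morphism, such that for all $x,y,z\in H$: (P1) $x\rightharpoonup(y\cdot z)=(x_1\rightharpoonup y)\cdot(x_2\rightharpoonup z)$; (P2) $x\rightharpoonup(y\rightharpoonup z)=\big(x_1\cdot(x_2\rightharpoonup y)\big)\rightharpoonup z$; (P3) the map $\alpha_\rightharpoonup:H\to\mathrm{End}(H)$, $\alpha_\rightharpoonup(x)(y)=x\rightharpoonup y$, is convolution invertible, i.e. there is $\beta_\rightharpoonup:H\to\mathrm{End}(H)$ with $\alpha_\rightharpoonup(x_1)\circ\beta_\rightharpoonup(x_2)=\beta_\rightharpoonup(x_1)\circ\alpha_\rightharpoonup(x_2)=\epsilon(x)\mathrm{Id}_H$; (P4) $\epsilon(a\cdot b)=\epsilon(a)\epsilon(b)$, $\epsilon(1)=1_\Bbbk$, $\Delta(1)=1\otimes 1$; (P5) $\Delta(x\cdot y)=\Big(x_1\cdot\alpha_\rightharpoonup(x_2)\big(\beta_\rightharpoonup(x_4)(y_1)\big)\Big)\otimes(x_3\cdot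 y_2)$; (P6) setting $x\bullet_\rightharpoonup y:=x_1\cdot(x_2\rightharpoonup y)$, $S_\rightharpoonup(x):=\beta_\rightharpoonup(x_1)(S(x_2))$ and $x\leftharpoonup y:=\big(S_\rightharpoonup(x_1\rightharpoonup y_1)\bullet_\rightharpoonup x_2\big)\bullet_\rightharpoonup y_2$, one has $\Delta(S_\rightharpoonup(x))=S_\rightharpoonup(x_2)\otimes S_\rightharpoonup(x_1)$ and $(x_1\rightharpoonup y_1)\otimes(x_2\leftharpoonup y_2)=(x_2\rightharpoonup y_2)\otimes(x_1\leftharpoonup y_1)$. A morphism of Yetter--Drinfeld post-Hopf algebras $(H,\rightharpoonup)\to(H',\rightharpoonup')$ is an algebra and coalgebra morphism $g$ with $g(x\rightharpoonup y)=g(x)\rightharpoonup' g(y)$; these form the category $\mathcal{YD}\mathrm{PH}(\mathrm{Vec}_\Bbbk)$. Fact: $H_\rightharpoonup$ is a Hopf algebra. Definition (matched pair of actions). For a bialgebra $(H,\bullet,1,\Delta,\epsilon)$, a matched pair of actions $(H,\rightharpoonup,\leftharpoonup)$ is a left action $\rightharpoonup$ and a right action $\leftharpoonup$ of $(H,\bullet)$ on itself making $H$ a left and a right module coalgebra, such that for all $a,b,c$: $a\rightharpoonup1=\epsilon(a)1$; $1\leftharpoonup a=\epsilon(a)1$; $a\rightharpoonup(b\bullet c)=(a_1\rightharpoonup b_1)\bullet((a_2\leftharpoonup b_2)\rightharpoonup c)$; $(a\bullet b)\leftharpoonup c=(a\leftharpoonup(b_1\rightharpoonup c_1))\bullet(b_2\leftharpoonup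 c_2)$; $a\bullet b=(a_1\rightharpoonup b_1)\bullet(a_2\leftharpoonup b_2)$. Morphisms are bialgebra morphisms $f$ with $f(a\rightharpoonup b)=f(a)\rightharpoonup f(b)$ and $f(a\leftharpoonup b)=f(a)\leftharpoonup f(b)$. $\mathrm{MP}(\mathrm{Vec}_\Bbbk)$ denotes the category of matched pairs of actions on Hopf algebras. *)

theory Defs
  imports Main "HOL.Vector_Spaces"
begin

text \<open>
An element of H \<otimes> H is represented by a finite list of pairs [(a_i,b_i)]
standing for \<Sum> a_i \<otimes> b_i; two such lists denote the same tensor iff every bilinear
form H \<times> H \<rightarrow> k takes the same value on them (bilinear forms separate the points of
H \<otimes> H over a field).  Similarly for H \<otimes> H \<otimes> H with trilinear forms.  A comultiplication
is a map delta :: 'h \<Rightarrow> ('h \<times> 'h) list, and Sweedler sums x_1 \<otimes> x_2 (\<otimes> x_3 \<otimes> x_4)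
are sums over delta x (resp. its iterates sw3, sw4).  All Sweedler expressions below are
multilinear in the legs, hence independent of the chosen representatives.
\<close>

definition bilinH :: "('k::field \<Rightarrow> 'h::ab_group_add \<Rightarrow> 'h) \<Rightarrow> ('h \<Rightarrow> 'h \<Rightarrow> 'h) \<Rightarrow> bool" where
  "bilinH sc m \<longleftrightarrow> (\<forall>x. Vector_Spaces.linear sc sc (m x)) \<and> (\<forall>y. Vector_Spaces.linear sc sc (\<lambda>x. m x y))"

definition bilinK :: "('k::field \<Rightarrow> 'h::ab_group_add \<Rightarrow> 'h) \<Rightarrow> ('h \<Rightarrow> 'h \<Rightarrow> 'k) \<Rightarrow> bool" where
  "bilinK sc B \<longleftrightarrow> (\<forall>x. Vector_Spaces.linear sc ((*) :: 'k \<Rightarrow> 'k \<Rightarrow> 'k) (B x))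
                  \<and> (\<forall>y. Vector_Spaces.linear sc ((*) :: 'k \<Rightarrow> 'k \<Rightarrow> 'k) (\<lambda>x. B x y))"

definition trilinK :: "('k::field \<Rightarrow> 'h::ab_group_add \<Rightarrow> 'h) \<Rightarrow> ('h \<Rightarrow> 'h \<Rightarrow> 'h \<Rightarrow> 'k) \<Rightarrow> bool" where
  "trilinK sc F \<longleftrightarrow> (\<forall>y z. Vector_Spaces.linear sc ((*) :: 'k \<Rightarrow> 'k \<Rightarrow> 'k) (\<lambda>x. F x y z))
                   \<and> (\<forall>x z. Vector_Spaces.linear sc ((*) :: 'k \<Rightarrow> 'k \<Rightarrow> 'k) (\<lambda>y. F x y z))
                   \<and> (\<forall>x y. Vector_Spaces.linear sc ((*) :: 'k \<Rightarrow> 'k \<Rightarrow> 'k) (\<lambda>z. F x y z))"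

definition teq2 :: "('k::field \<Rightarrow> 'h::ab_group_add \<Rightarrow> 'h) \<Rightarrow> ('h \<times> 'h) list \<Rightarrow> ('h \<times> 'h) list \<Rightarrow> bool" where
  "teq2 sc xs ys \<longleftrightarrow> (\<forall>B. bilinK sc B \<longrightarrow>
      sum_list (map (\<lambda>(a,b). B a b) xs) = sum_list (map (\<lambda>(a,b). B a b) ys))"

definition teq3 :: "('k::field \<Rightarrow> 'h::ab_group_add \<Rightarrow> 'h) \<Rightarrow> ('h \<times> 'h \<times> 'h) list \<Rightarrow> ('h \<times> 'h \<times> 'h) list \<Rightarrow> bool" where
  "teq3 sc xs ys \<longleftrightarrow> (\<forall>F. trilinK sc F \<longrightarrow>
      sum_list (map (\<lambda>(a,b,c). F a b c) xs) = sum_list (map (\<lambda>(a,b,c). F a b c) ys))"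

definition sw3 :: "('h \<Rightarrow> ('h \<times> 'h) list) \<Rightarrow> 'h \<Rightarrow> ('h \<times> 'h \<times> 'h) list" where
  "sw3 delta x = concat (map (\<lambda>(a,b). map (\<lambda>(a1,a2). (a1,a2,b)) (delta a)) (delta x))"

definition sw4 :: "('h \<Rightarrow> ('h \<times> 'h) list) \<Rightarrow> 'h \<Rightarrow> ('h \<times> 'h \<times> 'h \<times> 'h) list" where
  "sw4 delta x = concat (map (\<lambda>(a,b). map (\<lambda>(a1,a2,a3). (a1,a2,a3,b)) (sw3 delta a)) (delta x))"

definition is_algebra :: "('k::field \<Rightarrow> 'h::ab_group_add \<Rightarrow> 'h) \<Rightarrow> ('h \<Rightarrow> 'h \<Rightarrow> 'h) \<Rightarrow> 'h \<Rightarrow> bool" where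
  "is_algebra sc m u \<longleftrightarrow> vector_space sc \<and> bilinH sc m
     \<and> (\<forall>x y z. m (m x y) z = m x (m y z)) \<and> (\<forall>x. m u x = x \<and> m x u = x)"

definition is_coalgebra :: "('k::field \<Rightarrow> 'h::ab_group_add \<Rightarrow> 'h) \<Rightarrow> ('h \<Rightarrow> ('h \<times> 'h) list) \<Rightarrow> ('h \<Rightarrow> 'k) \<Rightarrow> bool" where
  "is_coalgebra sc delta eps \<longleftrightarrow> vector_space sc
     \<and> (\<forall>c x y. teq2 sc (delta (sc c x + y)) (map (\<lambda>(a,b). (sc c a, b)) (delta x) @ delta y))
     \<and> Vector_Spaces.linear sc ((*) :: 'k \<Rightarrow> 'k \<Rightarrow> 'k) eps
     \<and> (\<forall>x. teq3 sc (sw3 delta x) (concat (map (\<lambda>(a,b). map (\<lambda>(b1,b2). (a,b1,b2)) (delta b)) (delta x))))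
     \<and> (\<forall>x. sum_list (map (\<lambda>(a,b). sc (eps a) b) (delta x)) = x)
     \<and> (\<forall>x. sum_list (map (\<lambda>(a,b). sc (eps b) a) (delta x)) = x)"

definition is_bialgebra :: "('k::field \<Rightarrow> 'h::ab_group_add \<Rightarrow> 'h) \<Rightarrow> ('h \<Rightarrow> 'h \<Rightarrow> 'h) \<Rightarrow> 'h
     \<Rightarrow> ('h \<Rightarrow> ('h \<times> 'h) list) \<Rightarrow> ('h \<Rightarrow> 'k) \<Rightarrow> bool" where
  "is_bialgebra sc m u delta eps \<longleftrightarrow> is_algebra sc m u \<and> is_coalgebra sc delta eps
     \<and> (\<forall>x y. teq2 sc (delta (m x y))
                 (concat (map (\<lambda>(a,b). map (\<lambda>(c,d). (m a c, m b d)) (delta y)) (delta x))))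
     \<and> teq2 sc (delta u) [(u,u)]
     \<and> (\<forall>x y. eps (m x y) = eps x * eps y) \<and> eps u = 1"

definition is_antipode :: "('k::field \<Rightarrow> 'h::ab_group_add \<Rightarrow> 'h) \<Rightarrow> ('h \<Rightarrow> 'h \<Rightarrow> 'h) \<Rightarrow> 'h
     \<Rightarrow> ('h \<Rightarrow> ('h \<times> 'h) list) \<Rightarrow> ('h \<Rightarrow> 'k) \<Rightarrow> ('h \<Rightarrow> 'h) \<Rightarrow> bool" where
  "is_antipode sc m u delta eps S \<longleftrightarrow> Vector_Spaces.linear sc sc S
     \<and> (\<forall>x. sum_list (map (\<lambda>(a,b). m a (S b)) (delta x)) = sc (eps x) u)
     \<and> (\<forall>x. sum_list (map (\<lambda>(a,b). m (S a) b) (delta x)) = sc (eps x) u)"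

definition is_hopf :: "('k::field \<Rightarrow> 'h::ab_group_add \<Rightarrow> 'h) \<Rightarrow> ('h \<Rightarrow> 'h \<Rightarrow> 'h) \<Rightarrow> 'h
     \<Rightarrow> ('h \<Rightarrow> ('h \<times> 'h) list) \<Rightarrow> ('h \<Rightarrow> 'k) \<Rightarrow> ('h \<Rightarrow> 'h) \<Rightarrow> bool" where
  "is_hopf sc m u delta eps S \<longleftrightarrow> is_bialgebra sc m u delta eps \<and> is_antipode sc m u delta eps S"

record ('k, 'h) ydph =
  ymul :: "'h \<Rightarrow> 'h \<Rightarrow> 'h"
  yone :: 'h
  ydelta :: "'h \<Rightarrow> ('h \<times> 'h) list"
  yeps :: "'h \<Rightarrow> 'k"
  yS :: "'h \<Rightarrow> 'h"
  yact :: "'h \<Rightarrow> 'h \<Rightarrow> 'h"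

text \<open>beta is a (linear) convolution inverse of alpha(x) = (x \<rightharpoonup> -) in Hom(H, End(H)).\<close>
definition is_conv_inv :: "('k::field \<Rightarrow> 'h::ab_group_add \<Rightarrow> 'h) \<Rightarrow> ('h \<Rightarrow> ('h \<times> 'h) list) \<Rightarrow> ('h \<Rightarrow> 'k)
     \<Rightarrow> ('h \<Rightarrow> 'h \<Rightarrow> 'h) \<Rightarrow> ('h \<Rightarrow> 'h \<Rightarrow> 'h) \<Rightarrow> bool" where
  "is_conv_inv sc delta eps act beta \<longleftrightarrow> bilinH sc beta
     \<and> (\<forall>x y. sum_list (map (\<lambda>(a,b). act a (beta b y)) (delta x)) = sc (eps x) y)
     \<and> (\<forall>x y. sum_list (map (\<lambda>(a,b). beta a (act b y)) (delta x)) = sc (eps x) y)"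

text \<open>The convolution inverse beta (unique when it exists).\<close>
definition betaOf :: "('k::field \<Rightarrow> 'h::ab_group_add \<Rightarrow> 'h) \<Rightarrow> ('k, 'h) ydph \<Rightarrow> ('h \<Rightarrow> 'h \<Rightarrow> 'h)" where
  "betaOf sc A = (SOME beta. is_conv_inv sc (ydelta A) (yeps A) (yact A) beta)"

definition bulletOf :: "('k, 'h::ab_group_add) ydph \<Rightarrow> 'h \<Rightarrow> 'h \<Rightarrow> 'h" where
  "bulletOf A x y = sum_list (map (\<lambda>(a,b). ymul A a (yact A b y)) (ydelta A x))"

definition SOf :: "('k::field \<Rightarrow> 'h::ab_group_add \<Rightarrow> 'h) \<Rightarrow> ('k, 'h) ydph \<Rightarrow> 'h \<Rightarrow> 'h" where
  "SOf sc A x = sum_list (map (\<lambda>(a,b). betaOf sc A a (yS A b)) (ydelta A x))"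

definition ractOf :: "('k::field \<Rightarrow> 'h::ab_group_add \<Rightarrow> 'h) \<Rightarrow> ('k, 'h) ydph \<Rightarrow> 'h \<Rightarrow> 'h \<Rightarrow> 'h" where
  "ractOf sc A x y = sum_list (concat (map (\<lambda>(x1,x2). map (\<lambda>(y1,y2).
       bulletOf A (bulletOf A (SOf sc A (yact A x1 y1)) x2) y2) (ydelta A y)) (ydelta A x)))"

definition is_YDPH :: "('k::field \<Rightarrow> 'h::ab_group_add \<Rightarrow> 'h) \<Rightarrow> ('k, 'h) ydph \<Rightarrow> bool" where
  "is_YDPH sc A \<longleftrightarrow>
     (let m = ymul A; u = yone A; delta = ydelta A; eps = yeps A; S = yS A; act = yact A;
          beta = betaOf sc A; bul = bulletOf A; SA = SOf sc A; ract = ractOf sc A in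
       is_algebra sc m u \<and> is_coalgebra sc delta eps
       \<and> is_antipode sc m u delta eps S
       \<comment> \<open>act : H \<otimes> H \<rightarrow> H is a coalgebra morphism\<close>
       \<and> bilinH sc act
       \<and> (\<forall>x y. teq2 sc (delta (act x y))
                 (concat (map (\<lambda>(x1,x2). map (\<lambda>(y1,y2). (act x1 y1, act x2 y2)) (delta y)) (delta x))))
       \<and> (\<forall>x y. eps (act x y) = eps x * eps y)
       \<comment> \<open>(P1)\<close>
       \<and> (\<forall>x y z. act x (m y z) = sum_list (map (\<lambda>(x1,x2). m (act x1 y) (act x2 z)) (delta x)))
       \<comment> \<open>(P2)\<close>
       \<and> (\<forall>x y z. act x (act y z) = act (bul x y) z)
       \<comment> \<open>(P3)\<close>
       \<and> (\<exists>b. is_conv_inv sc delta eps act b)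
       \<comment> \<open>(P4)\<close>
       \<and> (\<forall>a b. eps (m a b) = eps a * eps b) \<and> eps u = 1 \<and> teq2 sc (delta u) [(u,u)]
       \<comment> \<open>(P5)\<close>
       \<and> (\<forall>x y. teq2 sc (delta (m x y))
            (concat (map (\<lambda>(x1,x2,x3,x4). map (\<lambda>(y1,y2).
                 (m x1 (act x2 (beta x4 y1)), m x3 y2)) (delta y)) (sw4 delta x))))
       \<comment> \<open>(P6)\<close>
       \<and> (\<forall>x. teq2 sc (delta (SA x)) (map (\<lambda>(x1,x2). (SA x2, SA x1)) (delta x)))
       \<and> (\<forall>x y. teq2 sc
            (concat (map (\<lambda>(x1,x2). map (\<lambda>(y1,y2). (act x1 y1, ract x2 y2)) (delta y)) (delta x)))
            (concat (map (\<lambda>(x1,x2). map (\<lambda>(y1,y2). (act x2 y2, ract x1 y1)) (delta y)) (delta x)))))"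

definition is_YD_hom :: "('k::field \<Rightarrow> 'h::ab_group_add \<Rightarrow> 'h) \<Rightarrow> ('k \<Rightarrow> 'g::ab_group_add \<Rightarrow> 'g)
     \<Rightarrow> ('h \<Rightarrow> 'g) \<Rightarrow> ('k, 'h) ydph \<Rightarrow> ('k, 'g) ydph \<Rightarrow> bool" where
  "is_YD_hom sc sc' f A A' \<longleftrightarrow> Vector_Spaces.linear sc sc' f
     \<and> (\<forall>x y. f (ymul A x y) = ymul A' (f x) (f y)) \<and> f (yone A) = yone A'
     \<and> (\<forall>x. teq2 sc' (ydelta A' (f x)) (map (\<lambda>(a,b). (f a, f b)) (ydelta A x)))
     \<and> (\<forall>x. yeps A' (f x) = yeps A x)
     \<and> (\<forall>x y. f (yact A x y) = yact A' (f x) (f y))"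

record ('k, 'h) mpair =
  bmul :: "'h \<Rightarrow> 'h \<Rightarrow> 'h"
  bone :: 'h
  bdelta :: "'h \<Rightarrow> ('h \<times> 'h) list"
  beps :: "'h \<Rightarrow> 'k"
  bT :: "'h \<Rightarrow> 'h"
  lact :: "'h \<Rightarrow> 'h \<Rightarrow> 'h"
  ract :: "'h \<Rightarrow> 'h \<Rightarrow> 'h"

definition is_MP :: "('k::field \<Rightarrow> 'h::ab_group_add \<Rightarrow> 'h) \<Rightarrow> ('k, 'h) mpair \<Rightarrow> bool" where
  "is_MP sc M \<longleftrightarrow>
     (let m = bmul M; u = bone M; delta = bdelta M; eps = beps M; T = bT M;
          la = lact M; ra = ract M in
       is_hopf sc m u delta eps T
       \<comment> \<open>left action, left module coalgebra\<close>
       \<and> bilinH sc la \<and> (\<forall>b. la u b = b) \<and> (\<forall>a b c. la (m a b) c = la a (la b c))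
       \<and> (\<forall>a b. teq2 sc (delta (la a b))
                 (concat (map (\<lambda>(a1,a2). map (\<lambda>(b1,b2). (la a1 b1, la a2 b2)) (delta b)) (delta a))))
       \<and> (\<forall>a b. eps (la a b) = eps a * eps b)
       \<comment> \<open>right action, right module coalgebra\<close>
       \<and> bilinH sc ra \<and> (\<forall>a. ra a u = a) \<and> (\<forall>a b c. ra a (m b c) = ra (ra a b) c)
       \<and> (\<forall>a b. teq2 sc (delta (ra a b))
                 (concat (map (\<lambda>(a1,a2). map (\<lambda>(b1,b2). (ra a1 b1, ra a2 b2)) (delta b)) (delta a))))
       \<and> (\<forall>a b. eps (ra a b) = eps a * eps b)
       \<comment> \<open>matched pair conditions\<close>
       \<and> (\<forall>a. la a u = sc (eps a) u)
       \<and> (\<forall>a. ra u a = sc (eps a) u)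
       \<and> (\<forall>a b c. la a (m b c) = sum_list (concat (map (\<lambda>(a1,a2). map (\<lambda>(b1,b2).
                     m (la a1 b1) (la (ra a2 b2) c)) (delta b)) (delta a))))
       \<and> (\<forall>a b c. ra (m a b) c = sum_list (concat (map (\<lambda>(b1,b2). map (\<lambda>(c1,c2).
                     m (ra a (la b1 c1)) (ra b2 c2)) (delta c)) (delta b))))
       \<and> (\<forall>a b. m a b = sum_list (concat (map (\<lambda>(a1,a2). map (\<lambda>(b1,b2).
                     m (la a1 b1) (ra a2 b2)) (delta b)) (delta a)))))"

definition is_MP_hom :: "('k::field \<Rightarrow> 'h::ab_group_add \<Rightarrow> 'h) \<Rightarrow> ('k \<Rightarrow> 'g::ab_group_add \<Rightarrow> 'g)
     \<Rightarrow> ('h \<Rightarrow> 'g) \<Rightarrow> ('k, 'h) mpair \<Rightarrow> ('k, 'g) mpair \<Rightarrow> bool" where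
  "is_MP_hom sc sc' f M M' \<longleftrightarrow> Vector_Spaces.linear sc sc' f
     \<and> (\<forall>x y. f (bmul M x y) = bmul M' (f x) (f y)) \<and> f (bone M) = bone M'
     \<and> (\<forall>x. teq2 sc' (bdelta M' (f x)) (map (\<lambda>(a,b). (f a, f b)) (bdelta M x)))
     \<and> (\<forall>x. beps M' (f x) = beps M x)
     \<and> (\<forall>x y. f (lact M x y) = lact M' (f x) (f y))
     \<and> (\<forall>x y. f (ract M x y) = ract M' (f x) (f y))"

definition toMP :: "('k::field \<Rightarrow> 'h::ab_group_add \<Rightarrow> 'h) \<Rightarrow> ('k, 'h) ydph \<Rightarrow> ('k, 'h) mpair" where
  "toMP sc A = \<lparr> bmul = bulletOf A, bone = yone A, bdelta = ydelta A, beps = yeps A,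
                 bT = SOf sc A, lact = yact A, ract = ractOf sc A \<rparr>"

definition toYD :: "('k, 'h::ab_group_add) mpair \<Rightarrow> ('k, 'h) ydph" where
  "toYD M = \<lparr> ymul = (\<lambda>a b. sum_list (map (\<lambda>(a1,a2). bmul M a1 (lact M (bT M a2) b)) (bdelta M a))),
              yone = bone M, ydelta = bdelta M, yeps = beps M,
              yS = (\<lambda>a. sum_list (map (\<lambda>(a1,a2). lact M a1 (bT M a2)) (bdelta M a))),
              yact = lact M \<rparr>"

end

theory Submission
  imports Defs
begin

lemma vs_field: "vector_space ((*) :: 'k::field \<Rightarrow> 'k \<Rightarrow> 'k)"
  unfolding vector_space_def by (simp add: algebra_simps)

lemma lin_sum_list:
  assumes "Vector_Spaces.linear s1 s2 f"
  shows "f (sum_list xs) = sum_list (map f xs)"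
proof -
  have a: "\<And>x y. f (x + y) = f x + f y"
    using assms unfolding linear_iff by blast
  have z: "f 0 = 0" using a[of 0 0] by simp
  show ?thesis by (induction xs) (simp_all add: a z)
qed

lemma lin_add: "Vector_Spaces.linear s1 s2 f \<Longrightarrow> f (x + y) = f x + f y"
  unfolding linear_iff by blast
lemma lin_scale: "Vector_Spaces.linear s1 s2 f \<Longrightarrow> f (s1 c x) = s2 c (f x)"
  unfolding linear_iff by blast
lemma lin_vs1: "Vector_Spaces.linear s1 s2 f \<Longrightarrow> vector_space s1"
  unfolding linear_iff by blast
lemma lin_vs2: "Vector_Spaces.linear s1 s2 f \<Longrightarrow> vector_space s2"
  unfolding linear_iff by blast

lemma lin_comp: "Vector_Spaces.linear s1 s2 f \<Longrightarrow> Vector_Spaces.linear s2 s3 g \<Longrightarrow> Vector_Spaces.linear s1 s3 (\<lambda>x. g (f x))"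
  unfolding linear_iff by auto

lemma separation:
  fixes s :: "'k::field \<Rightarrow> 'v::ab_group_add \<Rightarrow> 'v"
  assumes vs: "vector_space s"
    and h: "\<And>\<phi>. Vector_Spaces.linear s ((*) :: 'k \<Rightarrow> 'k \<Rightarrow> 'k) \<phi> \<Longrightarrow> \<phi> v = \<phi> w"
  shows "v = w"
proof (rule ccontr)
  assume ne: "v \<noteq> w"
  interpret V: vector_space s by fact
  obtain B where B: "V.independent B" "UNIV \<subseteq> V.span B"
    using V.basis_exists[of UNIV] by metis
  have sp: "\<And>x. x \<in> V.span B" using B by blast
  have "V.representation B v \<noteq> V.representation B w"
  proof
    assume eq: "V.representation B v = V.representation B w"
    have "v = (\<Sum>b | V.representation B v b \<noteq> 0. s (V.representation B v b) b)"
      using V.sum_nonzero_representation_eq[OF B(1) sp] by metis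
    also have "\<dots> = w" unfolding eq using V.sum_nonzero_representation_eq[OF B(1) sp] by metis
    finally show False using ne by simp
  qed
  then obtain b where b: "V.representation B v b \<noteq> V.representation B w b" by blast
  have "Vector_Spaces.linear s ((*) :: 'k \<Rightarrow> 'k \<Rightarrow> 'k) (\<lambda>x. V.representation B x b)"
    unfolding linear_iff using vs vs_field
    by (simp add: V.representation_add[OF B(1) sp sp] V.representation_scale[OF B(1) sp])
  from h[OF this] b show False by simp
qed

definition bil :: "('k::field \<Rightarrow> 'h::ab_group_add \<Rightarrow> 'h) \<Rightarrow> ('k \<Rightarrow> 'v::ab_group_add \<Rightarrow> 'v) \<Rightarrow> ('h \<Rightarrow> 'h \<Rightarrow> 'v) \<Rightarrow> bool" where
  "bil sc s F \<longleftrightarrow> (\<forall>a. Vector_Spaces.linear sc s (F a)) \<and> (\<forall>b. Vector_Spaces.linear sc s (\<lambda>a. F a b))"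

definition tril :: "('k::field \<Rightarrow> 'h::ab_group_add \<Rightarrow> 'h) \<Rightarrow> ('k \<Rightarrow> 'v::ab_group_add \<Rightarrow> 'v) \<Rightarrow> ('h \<Rightarrow> 'h \<Rightarrow> 'h \<Rightarrow> 'v) \<Rightarrow> bool" where
  "tril sc s F \<longleftrightarrow> (\<forall>b c. Vector_Spaces.linear sc s (\<lambda>a. F a b c)) \<and> (\<forall>a c. Vector_Spaces.linear sc s (\<lambda>b. F a b c))
     \<and> (\<forall>a b. Vector_Spaces.linear sc s (\<lambda>c. F a b c))"

lemma bil_comp: "bil sc s F \<Longrightarrow> Vector_Spaces.linear s s2 \<phi> \<Longrightarrow> bil sc s2 (\<lambda>a b. \<phi> (F a b))"
  unfolding bil_def
proof (elim conjE, intro conjI allI)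
  fix a b assume "\<forall>a. Vector_Spaces.linear sc s (F a)" "\<forall>b. Vector_Spaces.linear sc s (\<lambda>a. F a b)" "Vector_Spaces.linear s s2 \<phi>"
  then show "Vector_Spaces.linear sc s2 (\<lambda>b. \<phi> (F a b))" "Vector_Spaces.linear sc s2 (\<lambda>a. \<phi> (F a b))"
    using lin_comp by blast+
qed

lemma tril_comp: "tril sc s F \<Longrightarrow> Vector_Spaces.linear s s2 \<phi> \<Longrightarrow> tril sc s2 (\<lambda>a b c. \<phi> (F a b c))"
  unfolding tril_def
proof (elim conjE, intro conjI allI)
  fix a b c assume "\<forall>b c. Vector_Spaces.linear sc s (\<lambda>a. F a b c)" "\<forall>a c. Vector_Spaces.linear sc s (\<lambda>b. F a b c)"
     "\<forall>a b. Vector_Spaces.linear sc s (\<lambda>c. F a b c)" "Vector_Spaces.linear s s2 \<phi>"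
  then show "Vector_Spaces.linear sc s2 (\<lambda>a. \<phi> (F a b c))" "Vector_Spaces.linear sc s2 (\<lambda>b. \<phi> (F a b c))"
     "Vector_Spaces.linear sc s2 (\<lambda>c. \<phi> (F a b c))"
    using lin_comp by blast+
qed

lemma bilinK_bil: "bilinK sc B = bil sc (*) B"
  unfolding bilinK_def bil_def by simp
lemma trilinK_tril: "trilinK sc B = tril sc (*) B"
  unfolding trilinK_def tril_def by simp

lemma teq2_transfer:
  fixes sc :: "'k::field \<Rightarrow> 'h::ab_group_add \<Rightarrow> 'h" and s :: "'k \<Rightarrow> 'v::ab_group_add \<Rightarrow> 'v"
  assumes "teq2 sc xs ys" "vector_space s" "bil sc s F"
  shows "sum_list (map (\<lambda>(a,b). F a b) xs) = sum_list (map (\<lambda>(a,b). F a b) ys)"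
proof (rule separation[OF assms(2)])
  fix \<phi> :: "_ \<Rightarrow> 'k" assume \<phi>: "Vector_Spaces.linear s (*) \<phi>"
  have "bilinK sc (\<lambda>a b. \<phi> (F a b))"
    using bil_comp[OF assms(3) \<phi>] unfolding bilinK_bil .
  then have "sum_list (map (\<lambda>(a,b). \<phi> (F a b)) xs) = sum_list (map (\<lambda>(a,b). \<phi> (F a b)) ys)"
    using assms(1) unfolding teq2_def by blast
  then show "\<phi> (sum_list (map (\<lambda>(a,b). F a b) xs)) = \<phi> (sum_list (map (\<lambda>(a,b). F a b) ys))"
    by (simp add: lin_sum_list[OF \<phi>] o_def case_prod_beta')
qed

lemma teq3_transfer:
  fixes sc :: "'k::field \<Rightarrow> 'h::ab_group_add \<Rightarrow> 'h" and s :: "'k \<Rightarrow> 'v::ab_group_add \<Rightarrow> 'v"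
  assumes "teq3 sc xs ys" "vector_space s" "tril sc s F"
  shows "sum_list (map (\<lambda>(a,b,c). F a b c) xs) = sum_list (map (\<lambda>(a,b,c). F a b c) ys)"
proof (rule separation[OF assms(2)])
  fix \<phi> :: "_ \<Rightarrow> 'k" assume \<phi>: "Vector_Spaces.linear s (*) \<phi>"
  have "trilinK sc (\<lambda>a b c. \<phi> (F a b c))"
    using tril_comp[OF assms(3) \<phi>] unfolding trilinK_tril .
  then have "sum_list (map (\<lambda>(a,b,c). \<phi> (F a b c)) xs) = sum_list (map (\<lambda>(a,b,c). \<phi> (F a b c)) ys)"
    using assms(1) unfolding teq3_def by blast
  then show "\<phi> (sum_list (map (\<lambda>(a,b,c). F a b c) xs)) = \<phi> (sum_list (map (\<lambda>(a,b,c). F a b c) ys))"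
    by (simp add: lin_sum_list[OF \<phi>] o_def case_prod_beta')
qed


section \<open>Sweedler sums\<close>

definition Sw :: "('h \<Rightarrow> ('h \<times> 'h) list) \<Rightarrow> 'h \<Rightarrow> ('h \<Rightarrow> 'h \<Rightarrow> 'v::ab_group_add) \<Rightarrow> 'v" where
  "Sw d x F = sum_list (map (\<lambda>(a,b). F a b) (d x))"

lemma Sw_lin_out: "Vector_Spaces.linear s1 s2 L \<Longrightarrow> L (Sw d x F) = Sw d x (\<lambda>a b. L (F a b))"
  unfolding Sw_def by (simp add: lin_sum_list o_def case_prod_beta')

lemma Sw_add: "Sw d x (\<lambda>a b. F a b + G a b) = Sw d x F + Sw d x G"
  unfolding Sw_def by (simp add: case_prod_beta' sum_list_addf)

lemma sum_list_concat': "sum_list (concat xss) = sum_list (map sum_list xss)"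
  by (induction xss) auto

lemma vsR: "vector_space s \<Longrightarrow> s a (x + y) = s a x + s a y" by (simp add: vector_space_def)
lemma vsL: "vector_space s \<Longrightarrow> s (a + b) x = s a x + s b x" by (simp add: vector_space_def)
lemma vsS: "vector_space s \<Longrightarrow> s a (s b x) = s (a * b) x" by (simp add: vector_space_def)
lemma vs1: "vector_space s \<Longrightarrow> s 1 x = x" by (simp add: vector_space_def)
lemma vs0R: "vector_space s \<Longrightarrow> s a 0 = 0" using module.scale_zero_right module_iff_vector_space by metis
lemma vs0L: "vector_space s \<Longrightarrow> s 0 x = 0" using module.scale_zero_left module_iff_vector_space by metis

lemma bil_scale1: "bil sc s F \<Longrightarrow> F (sc c a) b = s c (F a b)"
  unfolding bil_def using lin_scale[of sc s "\<lambda>a. F a b"] by blast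
lemma bil_scale2: "bil sc s F \<Longrightarrow> F a (sc c b) = s c (F a b)"
  unfolding bil_def using lin_scale[of sc s "F a"] by blast
lemma bil_add1: "bil sc s F \<Longrightarrow> F (a + a') b = F a b + F a' b"
  unfolding bil_def using lin_add[of sc s "\<lambda>a. F a b"] by blast
lemma bil_add2: "bil sc s F \<Longrightarrow> F a (b + b') = F a b + F a b'"
  unfolding bil_def using lin_add[of sc s "F a"] by blast

lemma sum_list_swap: fixes F :: "'a \<Rightarrow> 'b \<Rightarrow> 'c::comm_monoid_add" shows "sum_list (map (\<lambda>a. sum_list (map (\<lambda>b. F a b) ys)) xs) = sum_list (map (\<lambda>b. sum_list (map (\<lambda>a. F a b) xs)) ys)"
proof (induction xs)
  case Nil then show ?case by (induction ys) auto
next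
  case (Cons x xs)
  then show ?case by (simp add: sum_list_addf[of "\<lambda>b. F x b"])
qed

lemma Sw_swap: "Sw d x (\<lambda>a b. Sw d' y (\<lambda>c e. F a b c e)) = Sw d' y (\<lambda>c e. Sw d x (\<lambda>a b. F a b c e))"
  unfolding Sw_def using sum_list_swap[of "\<lambda>p q. (case p of (a,b) \<Rightarrow> case q of (c,e) \<Rightarrow> F a b c e)" "d' y" "d x"]
  by (simp add: case_prod_beta')

lemma Sw_concat2: "sum_list (map (\<lambda>(a,b). B a b) (concat (map (\<lambda>(x1,x2). map (\<lambda>(y1,y2). P x1 x2 y1 y2) (dy)) (dx))))
   = sum_list (map (\<lambda>(x1,x2). sum_list (map (\<lambda>(y1,y2). (\<lambda>(a,b). B a b) (P x1 x2 y1 y2)) dy)) dx)"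
  by (simp add: sum_list_concat' map_concat o_def case_prod_beta')

lemma linear_sum_list_fun:
  assumes "vector_space s1" "vector_space s2" "\<And>i. i \<in> set xs \<Longrightarrow> Vector_Spaces.linear s1 s2 (F i)"
  shows "Vector_Spaces.linear s1 s2 (\<lambda>v. sum_list (map (\<lambda>i. F i v) xs))"
  using assms(3)
proof (induction xs)
  case Nil then show ?case using assms(1,2) unfolding linear_iff
    by (simp add: vs0R)
next
  case (Cons a xs)
  then have "Vector_Spaces.linear s1 s2 (F a)" "Vector_Spaces.linear s1 s2 (\<lambda>v. sum_list (map (\<lambda>i. F i v) xs))" by auto
  then show ?case unfolding linear_iff
    by (simp add: algebra_simps vsR[OF assms(2)])
qed

lemma L_Sw_body:
  assumes "vector_space sc" "vector_space s" "\<And>a b. Vector_Spaces.linear sc s (\<lambda>v. F v a b)"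
  shows "Vector_Spaces.linear sc s (\<lambda>v. Sw d c (F v))"
proof -
  have "(\<lambda>v. Sw d c (F v)) = (\<lambda>v. sum_list (map (\<lambda>p. (\<lambda>p v. case p of (a,b) \<Rightarrow> F v a b) p v) (d c)))"
    unfolding Sw_def by simp
  moreover have "Vector_Spaces.linear sc s (\<lambda>v. sum_list (map (\<lambda>p. (\<lambda>p v. case p of (a,b) \<Rightarrow> F v a b) p v) (d c)))"
    by (rule linear_sum_list_fun) (use assms in \<open>auto simp: case_prod_beta'\<close>)
  ultimately show ?thesis by simp
qed

lemma L_bil1: "bil sc s p \<Longrightarrow> Vector_Spaces.linear sc sc f \<Longrightarrow> Vector_Spaces.linear sc s (\<lambda>v. p (f v) c)"
  unfolding bil_def using lin_comp[of sc sc f s "\<lambda>a. p a c"] by blast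
lemma L_bil2: "bil sc s p \<Longrightarrow> Vector_Spaces.linear sc sc f \<Longrightarrow> Vector_Spaces.linear sc s (\<lambda>v. p c (f v))"
  unfolding bil_def using lin_comp[of sc sc f s "p c"] by blast
lemma L_id: "vector_space s \<Longrightarrow> Vector_Spaces.linear s s (\<lambda>v. v)"
  unfolding linear_iff by simp
lemma L_scale_fun: "Vector_Spaces.linear sc ((*)) \<phi> \<Longrightarrow> Vector_Spaces.linear sc sc f \<Longrightarrow> vector_space s \<Longrightarrow> Vector_Spaces.linear sc s (\<lambda>v. s (\<phi> (f v)) c)"
  unfolding linear_iff by (simp add: vsL vsS)
lemma L_scale_c: "Vector_Spaces.linear sc s f \<Longrightarrow> Vector_Spaces.linear sc s (\<lambda>v. s c (f v))"
  unfolding linear_iff by (simp add: vsR vsS mult.commute)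
lemma L_mult1: "Vector_Spaces.linear sc ((*)) f \<Longrightarrow> Vector_Spaces.linear sc ((*)) (\<lambda>v. f v * c)"
  unfolding linear_iff by (simp add: algebra_simps)
lemma L_mult2: "Vector_Spaces.linear sc ((*)) f \<Longrightarrow> Vector_Spaces.linear sc ((*)) (\<lambda>v. c * f v)"
  unfolding linear_iff by (simp add: algebra_simps)
lemma L_add: "Vector_Spaces.linear sc s f \<Longrightarrow> Vector_Spaces.linear sc s g \<Longrightarrow> Vector_Spaces.linear sc s (\<lambda>v. f v + g v)"
  unfolding linear_iff by (simp add: algebra_simps vsR)

lemma Sw_pull1: "bil sc s p \<Longrightarrow> Sw d x (\<lambda>a b. p (F a b) c) = p (Sw d x F) c"
  unfolding bil_def using Sw_lin_out[of sc s "\<lambda>z. p z c" d x F] by simp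
lemma Sw_pull2: "bil sc s p \<Longrightarrow> Sw d x (\<lambda>a b. p c (F a b)) = p c (Sw d x F)"
  unfolding bil_def using Sw_lin_out[of sc s "p c" d x F] by simp
lemma Sw_pullL: "Vector_Spaces.linear s1 s L \<Longrightarrow> Sw d x (\<lambda>a b. L (F a b)) = L (Sw d x F)"
  using Sw_lin_out[of s1 s L d x F] by simp
lemma sl_mr: "sum_list (map (\<lambda>p. f p * (c::'a::ring)) xs) = sum_list (map f xs) * c"
  by (induction xs) (auto simp: algebra_simps)
lemma sl_ml: "sum_list (map (\<lambda>p. (c::'a::ring) * f p) xs) = c * sum_list (map f xs)"
  by (induction xs) (auto simp: algebra_simps)
lemma Sw_mult_right: "Sw d x (\<lambda>a b. F a b * (c::'a::ring)) = Sw d x F * c"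
  unfolding Sw_def using sl_mr[of "\<lambda>(a,b). F a b" c] by (simp add: case_prod_beta')
lemma Sw_mult_left: "Sw d x (\<lambda>a b. (c::'a::ring) * F a b) = c * Sw d x F"
  unfolding Sw_def using sl_ml[of c "\<lambda>(a,b). F a b"] by (simp add: case_prod_beta')
lemma Sw_pull_scale: "vector_space s \<Longrightarrow> Sw d x (\<lambda>a b. s c (F a b)) = s c (Sw d x F)"
  using Sw_lin_out[OF L_scale_c[OF L_id], of s c d x F] by simp

locale coal =
  fixes sc :: "'k::field \<Rightarrow> 'h::ab_group_add \<Rightarrow> 'h" and d :: "'h \<Rightarrow> ('h \<times> 'h) list" and e :: "'h \<Rightarrow> 'k"
  assumes coal: "is_coalgebra sc d e"
begin

lemma vs: "vector_space sc" using coal unfolding is_coalgebra_def by blast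
lemma e_lin: "Vector_Spaces.linear sc (*) e" using coal unfolding is_coalgebra_def by blast

lemma Sw_zero: "vector_space s \<Longrightarrow> bil sc s F \<Longrightarrow> Sw d 0 F = 0"
proof -
  assume s: "vector_space s" "bil sc s F"
  have "teq2 sc (d (sc 1 0 + 0)) (map (\<lambda>(a,b). (sc 1 a, b)) (d 0) @ d 0)"
    using coal unfolding is_coalgebra_def by blast
  from teq2_transfer[OF this s] have "Sw d 0 F = Sw d 0 F + Sw d 0 F"
    using vs unfolding Sw_def by (simp add: vs1 o_def case_prod_beta')
  then show ?thesis by simp
qed

lemma Sw_arg: assumes "vector_space s" "bil sc s F" shows "Vector_Spaces.linear sc s (\<lambda>x. Sw d x F)"
proof -
  have 1: "Sw d (sc c x + y) F = s c (Sw d x F) + Sw d y F" for c x y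
  proof -
    have "teq2 sc (d (sc c x + y)) (map (\<lambda>(a,b). (sc c a, b)) (d x) @ d y)"
      using coal unfolding is_coalgebra_def by blast
    from teq2_transfer[OF this assms] have "Sw d (sc c x + y) F = sum_list (map (\<lambda>(a,b). F (sc c a) b) (d x)) + Sw d y F"
      unfolding Sw_def by (simp add: o_def case_prod_beta')
    also have "sum_list (map (\<lambda>(a,b). F (sc c a) b) (d x)) = sum_list (map (\<lambda>(a,b). s c (F a b)) (d x))"
      using assms(2) by (simp add: bil_scale1)
    also have "\<dots> = s c (Sw d x F)"
      using lin_sum_list[OF L_scale_c[OF L_id[OF assms(1)]], of c] unfolding Sw_def by (simp add: o_def case_prod_beta')
    finally show ?thesis .
  qed
  have 0: "Sw d 0 F = 0" using Sw_zero assms by blast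
  show ?thesis unfolding linear_iff using vs assms(1)
    using 1[of 1] 1[where y=0] by (simp add: vs1 0)
qed

lemma coassoc: assumes "vector_space s" "tril sc s G"
  shows "Sw d x (\<lambda>a b. Sw d a (\<lambda>a1 a2. G a1 a2 b)) = Sw d x (\<lambda>a b. Sw d b (\<lambda>b1 b2. G a b1 b2))"
proof -
  have "teq3 sc (sw3 d x) (concat (map (\<lambda>(a,b). map (\<lambda>(b1,b2). (a,b1,b2)) (d b)) (d x)))"
    using coal unfolding is_coalgebra_def by blast
  from teq3_transfer[OF this assms] show ?thesis
    unfolding Sw_def sw3_def by (simp add: sum_list_concat' map_concat o_def case_prod_beta')
qed

lemma counit1: assumes "Vector_Spaces.linear sc s G" shows "Sw d x (\<lambda>a b. s (e b) (G a)) = G x"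
proof -
  have "sum_list (map (\<lambda>(a,b). sc (e b) a) (d x)) = x" using coal unfolding is_coalgebra_def by blast
  then have "G x = G (Sw d x (\<lambda>a b. sc (e b) a))" unfolding Sw_def by simp
  also have "\<dots> = Sw d x (\<lambda>a b. s (e b) (G a))" by (simp add: Sw_lin_out[OF assms] lin_scale[OF assms])
  finally show ?thesis by simp
qed

lemma counit2: assumes "Vector_Spaces.linear sc s G" shows "Sw d x (\<lambda>a b. s (e a) (G b)) = G x"
proof -
  have "sum_list (map (\<lambda>(a,b). sc (e a) b) (d x)) = x" using coal unfolding is_coalgebra_def by blast
  then have "G x = G (Sw d x (\<lambda>a b. sc (e a) b))" unfolding Sw_def by simp
  also have "\<dots> = Sw d x (\<lambda>a b. s (e a) (G b))" by (simp add: Sw_lin_out[OF assms] lin_scale[OF assms])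
  finally show ?thesis by simp
qed

lemma L_Sw_arg: "Vector_Spaces.linear sc sc f \<Longrightarrow> bil sc s F \<Longrightarrow> vector_space s \<Longrightarrow> Vector_Spaces.linear sc s (\<lambda>v. Sw d (f v) F)"
  using lin_comp Sw_arg by blast


lemma L_Sw_arg': "Vector_Spaces.linear sc sc f \<Longrightarrow> bil sc s F \<Longrightarrow> vector_space s \<Longrightarrow> Vector_Spaces.linear sc s (\<lambda>v. Sw d (f v) F)"
  using L_Sw_arg .

end

definition Sw3 where "Sw3 d x G = Sw d x (\<lambda>a b. Sw d a (\<lambda>a1 a2. G a1 a2 b))"
definition Sw4 where "Sw4 d x G = Sw d x (\<lambda>a b. Sw3 d a (\<lambda>a1 a2 a3. G a1 a2 a3 b))"
definition Sw5 where "Sw5 d x G = Sw d x (\<lambda>a b. Sw4 d a (\<lambda>a1 a2 a3 a4. G a1 a2 a3 a4 b))"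
definition Sw6 where "Sw6 d x G = Sw d x (\<lambda>a b. Sw5 d a (\<lambda>a1 a2 a3 a4 a5. G a1 a2 a3 a4 a5 b))"

definition ml4 :: "('k::field \<Rightarrow> 'h::ab_group_add \<Rightarrow> 'h) \<Rightarrow> ('k \<Rightarrow> 'v::ab_group_add \<Rightarrow> 'v) \<Rightarrow> ('h \<Rightarrow> 'h \<Rightarrow> 'h \<Rightarrow> 'h \<Rightarrow> 'v) \<Rightarrow> bool" where
  "ml4 sc s G \<longleftrightarrow> (\<forall>b c e. Vector_Spaces.linear sc s (\<lambda>a. G a b c e)) \<and> (\<forall>a c e. Vector_Spaces.linear sc s (\<lambda>b. G a b c e))
     \<and> (\<forall>a b e. Vector_Spaces.linear sc s (\<lambda>c. G a b c e)) \<and> (\<forall>a b c. Vector_Spaces.linear sc s (\<lambda>e. G a b c e))"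

definition ml5 :: "('k::field \<Rightarrow> 'h::ab_group_add \<Rightarrow> 'h) \<Rightarrow> ('k \<Rightarrow> 'v::ab_group_add \<Rightarrow> 'v) \<Rightarrow> ('h \<Rightarrow> 'h \<Rightarrow> 'h \<Rightarrow> 'h \<Rightarrow> 'h \<Rightarrow> 'v) \<Rightarrow> bool" where
  "ml5 sc s G \<longleftrightarrow> (\<forall>b c e f. Vector_Spaces.linear sc s (\<lambda>a. G a b c e f)) \<and> (\<forall>a c e f. Vector_Spaces.linear sc s (\<lambda>b. G a b c e f))
     \<and> (\<forall>a b e f. Vector_Spaces.linear sc s (\<lambda>c. G a b c e f)) \<and> (\<forall>a b c f. Vector_Spaces.linear sc s (\<lambda>e. G a b c e f))
     \<and> (\<forall>a b c e. Vector_Spaces.linear sc s (\<lambda>f. G a b c e f))"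

definition ml6 :: "('k::field \<Rightarrow> 'h::ab_group_add \<Rightarrow> 'h) \<Rightarrow> ('k \<Rightarrow> 'v::ab_group_add \<Rightarrow> 'v) \<Rightarrow> ('h \<Rightarrow> 'h \<Rightarrow> 'h \<Rightarrow> 'h \<Rightarrow> 'h \<Rightarrow> 'h \<Rightarrow> 'v) \<Rightarrow> bool" where
  "ml6 sc s G \<longleftrightarrow> (\<forall>b c e f g. Vector_Spaces.linear sc s (\<lambda>a. G a b c e f g)) \<and> (\<forall>a c e f g. Vector_Spaces.linear sc s (\<lambda>b. G a b c e f g))
     \<and> (\<forall>a b e f g. Vector_Spaces.linear sc s (\<lambda>c. G a b c e f g)) \<and> (\<forall>a b c f g. Vector_Spaces.linear sc s (\<lambda>e. G a b c e f g))
     \<and> (\<forall>a b c e g. Vector_Spaces.linear sc s (\<lambda>f. G a b c e f g)) \<and> (\<forall>a b c e f. Vector_Spaces.linear sc s (\<lambda>g. G a b c e f g))"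

definition ml8 :: "('k::field \<Rightarrow> 'h::ab_group_add \<Rightarrow> 'h) \<Rightarrow> ('k \<Rightarrow> 'v::ab_group_add \<Rightarrow> 'v) \<Rightarrow> ('h \<Rightarrow> 'h \<Rightarrow> 'h \<Rightarrow> 'h \<Rightarrow> 'h \<Rightarrow> 'h \<Rightarrow> 'h \<Rightarrow> 'h \<Rightarrow> 'v) \<Rightarrow> bool" where
  "ml8 sc s G \<longleftrightarrow> (\<forall>b c e f g h i. Vector_Spaces.linear sc s (\<lambda>a. G a b c e f g h i)) \<and> (\<forall>a c e f g h i. Vector_Spaces.linear sc s (\<lambda>b. G a b c e f g h i))
     \<and> (\<forall>a b e f g h i. Vector_Spaces.linear sc s (\<lambda>c. G a b c e f g h i)) \<and> (\<forall>a b c f g h i. Vector_Spaces.linear sc s (\<lambda>e. G a b c e f g h i))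
     \<and> (\<forall>a b c e g h i. Vector_Spaces.linear sc s (\<lambda>f. G a b c e f g h i)) \<and> (\<forall>a b c e f h i. Vector_Spaces.linear sc s (\<lambda>g. G a b c e f g h i))
     \<and> (\<forall>a b c e f g i. Vector_Spaces.linear sc s (\<lambda>h. G a b c e f g h i)) \<and> (\<forall>a b c e f g h. Vector_Spaces.linear sc s (\<lambda>i. G a b c e f g h i))"

lemmas ml_defs = bil_def tril_def ml4_def ml5_def ml6_def ml8_def

context coal begin

lemmas Sw_defs = Sw3_def Sw4_def Sw5_def Sw6_def

lemma Sw3_arg: "vector_space s \<Longrightarrow> tril sc s G \<Longrightarrow> Vector_Spaces.linear sc s (\<lambda>x. Sw3 d x G)"
  unfolding Sw_defs by (auto simp: ml_defs intro!: L_Sw_body L_Sw_arg L_id vs)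

lemma Sw4_arg: "vector_space s \<Longrightarrow> ml4 sc s G \<Longrightarrow> Vector_Spaces.linear sc s (\<lambda>x. Sw4 d x G)"
  unfolding Sw_defs by (auto simp: ml_defs intro!: L_Sw_body L_Sw_arg L_id vs)

lemma Sw5_arg: "vector_space s \<Longrightarrow> ml5 sc s G \<Longrightarrow> Vector_Spaces.linear sc s (\<lambda>x. Sw5 d x G)"
  unfolding Sw_defs by (auto simp: ml_defs intro!: L_Sw_body L_Sw_arg L_id vs)


lemma Sw_cong: "(\<And>a b. F a b = G a b) \<Longrightarrow> Sw d x F = Sw d x G"
  by (simp add: Sw_def)

lemma swap3: "Sw3 d a (\<lambda>a1 a2 a3. Sw d' b (\<lambda>p q. F a1 a2 a3 p q)) = Sw d' b (\<lambda>p q. Sw3 d a (\<lambda>a1 a2 a3. F a1 a2 a3 p q))"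
  unfolding Sw3_def
  by (subst Sw_swap[symmetric], rule Sw_cong, subst Sw_swap[symmetric], rule refl)
lemma swap4: "Sw4 d a (\<lambda>a1 a2 a3 a4. Sw d' b (\<lambda>p q. F a1 a2 a3 a4 p q)) = Sw d' b (\<lambda>p q. Sw4 d a (\<lambda>a1 a2 a3 a4. F a1 a2 a3 a4 p q))"
  unfolding Sw4_def
  by (subst Sw_swap[symmetric], rule Sw_cong, subst swap3, rule refl)
lemma swap5: "Sw5 d a (\<lambda>a1 a2 a3 a4 a5. Sw d' b (\<lambda>p q. F a1 a2 a3 a4 a5 p q)) = Sw d' b (\<lambda>p q. Sw5 d a (\<lambda>a1 a2 a3 a4 a5. F a1 a2 a3 a4 a5 p q))"
  unfolding Sw5_def
  by (subst Sw_swap[symmetric], rule Sw_cong, subst swap4, rule refl)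

lemma swap6: "Sw6 d a (\<lambda>a1 a2 a3 a4 a5 a6. Sw d' b (\<lambda>p q. F a1 a2 a3 a4 a5 a6 p q)) = Sw d' b (\<lambda>p q. Sw6 d a (\<lambda>a1 a2 a3 a4 a5 a6. F a1 a2 a3 a4 a5 a6 p q))"
  unfolding Sw6_def
  by (subst Sw_swap[symmetric], rule Sw_cong, subst swap5, rule refl)

lemma S3_1: "Sw3 d x G = Sw d x (\<lambda>a b. Sw d a (\<lambda>p q. G p q b))"
  by (simp add: Sw3_def)
lemma S3_2: "vector_space s \<Longrightarrow> tril sc s G \<Longrightarrow> Sw3 d x G = Sw d x (\<lambda>a b. Sw d b (\<lambda>p q. G a p q))"
  unfolding Sw3_def by (rule coassoc)

lemma S4_1: "Sw4 d x G = Sw3 d x (\<lambda>a1 a2 a3. Sw d a1 (\<lambda>p q. G p q a2 a3))"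
  by (simp add: Sw_defs)
lemma S4_2: "vector_space s \<Longrightarrow> ml4 sc s G \<Longrightarrow> Sw4 d x G = Sw3 d x (\<lambda>a1 a2 a3. Sw d a2 (\<lambda>p q. G a1 p q a3))"
  unfolding Sw4_def Sw3_def[of d x]
  by (rule Sw_cong, rule S3_2[where s=s]) (auto simp: ml_defs)
lemma S4_3: assumes "vector_space s" "ml4 sc s G" shows "Sw4 d x G = Sw3 d x (\<lambda>a1 a2 a3. Sw d a3 (\<lambda>p q. G a1 a2 p q))"
proof -
  have "Sw3 d x (\<lambda>a1 a2 a3. Sw d a3 (\<lambda>p q. G a1 a2 p q)) = Sw d x (\<lambda>a b. Sw d a (\<lambda>a1 a2. Sw d b (\<lambda>p q. G a1 a2 p q)))"
    by (simp add: Sw3_def)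
  also have "\<dots> = Sw d x (\<lambda>a b. Sw d b (\<lambda>p q. Sw d a (\<lambda>a1 a2. G a1 a2 p q)))"
    by (rule Sw_cong, rule Sw_swap)
  also have "\<dots> = Sw d x (\<lambda>a b. Sw d a (\<lambda>c q. Sw d c (\<lambda>a1 a2. G a1 a2 q b)))"
    by (rule coassoc[symmetric, where s=s]) (use assms in \<open>auto simp: ml_defs intro!: L_Sw_body L_Sw_arg L_id vs\<close>)
  finally show ?thesis by (simp add: Sw_defs)
qed

lemma S5_1: "Sw5 d x G = Sw4 d x (\<lambda>a1 a2 a3 a4. Sw d a1 (\<lambda>p q. G p q a2 a3 a4))"
  by (simp add: Sw_defs)
lemma S5_2: "vector_space s \<Longrightarrow> ml5 sc s G \<Longrightarrow> Sw5 d x G = Sw4 d x (\<lambda>a1 a2 a3 a4. Sw d a2 (\<lambda>p q. G a1 p q a3 a4))"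
  unfolding Sw5_def Sw4_def[of d x]
  by (rule Sw_cong, rule S4_2[where s=s]) (auto simp: ml_defs)
lemma S5_3: "vector_space s \<Longrightarrow> ml5 sc s G \<Longrightarrow> Sw5 d x G = Sw4 d x (\<lambda>a1 a2 a3 a4. Sw d a3 (\<lambda>p q. G a1 a2 p q a4))"
  unfolding Sw5_def Sw4_def[of d x]
  by (rule Sw_cong, rule S4_3[where s=s]) (auto simp: ml_defs)
lemma S5_4: assumes "vector_space s" "ml5 sc s G" shows "Sw5 d x G = Sw4 d x (\<lambda>a1 a2 a3 a4. Sw d a4 (\<lambda>p q. G a1 a2 a3 p q))"
proof -
  have "Sw4 d x (\<lambda>a1 a2 a3 a4. Sw d a4 (\<lambda>p q. G a1 a2 a3 p q)) = Sw d x (\<lambda>a b. Sw3 d a (\<lambda>a1 a2 a3. Sw d b (\<lambda>p q. G a1 a2 a3 p q)))"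
    by (simp add: Sw4_def)
  also have "\<dots> = Sw d x (\<lambda>a b. Sw d b (\<lambda>p q. Sw3 d a (\<lambda>a1 a2 a3. G a1 a2 a3 p q)))"
    by (rule Sw_cong, rule swap3)
  also have "\<dots> = Sw d x (\<lambda>a b. Sw d a (\<lambda>c q. Sw3 d c (\<lambda>a1 a2 a3. G a1 a2 a3 q b)))"
    by (rule coassoc[symmetric, where s=s]) (use assms in \<open>auto simp: ml_defs Sw_defs intro!: L_Sw_body L_Sw_arg L_id vs\<close>)
  finally show ?thesis by (simp add: Sw_defs)
qed

lemma S6_1: "Sw6 d x G = Sw5 d x (\<lambda>a1 a2 a3 a4 a5. Sw d a1 (\<lambda>p q. G p q a2 a3 a4 a5))"
  by (simp add: Sw_defs)
lemma S6_2: "vector_space s \<Longrightarrow> ml6 sc s G \<Longrightarrow> Sw6 d x G = Sw5 d x (\<lambda>a1 a2 a3 a4 a5. Sw d a2 (\<lambda>p q. G a1 p q a3 a4 a5))"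
  unfolding Sw6_def Sw5_def[of d x]
  by (rule Sw_cong, rule S5_2[where s=s]) (auto simp: ml_defs)
lemma S6_3: "vector_space s \<Longrightarrow> ml6 sc s G \<Longrightarrow> Sw6 d x G = Sw5 d x (\<lambda>a1 a2 a3 a4 a5. Sw d a3 (\<lambda>p q. G a1 a2 p q a4 a5))"
  unfolding Sw6_def Sw5_def[of d x]
  by (rule Sw_cong, rule S5_3[where s=s]) (auto simp: ml_defs)
lemma S6_4: "vector_space s \<Longrightarrow> ml6 sc s G \<Longrightarrow> Sw6 d x G = Sw5 d x (\<lambda>a1 a2 a3 a4 a5. Sw d a4 (\<lambda>p q. G a1 a2 a3 p q a5))"
  unfolding Sw6_def Sw5_def[of d x]
  by (rule Sw_cong, rule S5_4[where s=s]) (auto simp: ml_defs)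
lemma S6_5: assumes "vector_space s" "ml6 sc s G" shows "Sw6 d x G = Sw5 d x (\<lambda>a1 a2 a3 a4 a5. Sw d a5 (\<lambda>p q. G a1 a2 a3 a4 p q))"
proof -
  have "Sw5 d x (\<lambda>a1 a2 a3 a4 a5. Sw d a5 (\<lambda>p q. G a1 a2 a3 a4 p q)) = Sw d x (\<lambda>a b. Sw4 d a (\<lambda>a1 a2 a3 a4. Sw d b (\<lambda>p q. G a1 a2 a3 a4 p q)))"
    by (simp add: Sw5_def)
  also have "\<dots> = Sw d x (\<lambda>a b. Sw d b (\<lambda>p q. Sw4 d a (\<lambda>a1 a2 a3 a4. G a1 a2 a3 a4 p q)))"
    by (rule Sw_cong, rule swap4)
  also have "\<dots> = Sw d x (\<lambda>a b. Sw d a (\<lambda>c q. Sw4 d c (\<lambda>a1 a2 a3 a4. G a1 a2 a3 a4 q b)))"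
    by (rule coassoc[symmetric, where s=s]) (use assms in \<open>auto simp: ml_defs Sw_defs intro!: L_Sw_body L_Sw_arg L_id vs\<close>)
  finally show ?thesis by (simp add: Sw_defs)
qed

lemma R4: assumes "vector_space s" "ml4 sc s G" shows "Sw4 d x G = Sw d x (\<lambda>a b. Sw3 d b (\<lambda>p q r. G a p q r))"
proof -
  have "Sw d x (\<lambda>a b. Sw3 d b (\<lambda>p q r. G a p q r)) = Sw d x (\<lambda>a b. Sw d b (\<lambda>c r. Sw d c (\<lambda>p q. G a p q r)))"
    by (simp add: S3_1)
  also have "\<dots> = Sw3 d x (\<lambda>a c r. Sw d c (\<lambda>p q. G a p q r))"
    by (rule S3_2[symmetric, OF assms(1)]) (use assms in \<open>auto simp: ml_defs intro!: L_Sw_body L_Sw_arg L_id vs\<close>)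
  also have "\<dots> = Sw4 d x G" by (rule S4_2[symmetric, OF assms])
  finally show ?thesis by simp
qed

lemma R5: assumes "vector_space s" "ml5 sc s G" shows "Sw5 d x G = Sw d x (\<lambda>a b. Sw4 d b (\<lambda>p q r t. G a p q r t))"
proof -
  have "Sw d x (\<lambda>a b. Sw4 d b (\<lambda>p q r t. G a p q r t)) = Sw d x (\<lambda>a b. Sw3 d b (\<lambda>c r t. Sw d c (\<lambda>p q. G a p q r t)))"
    by (simp add: S4_1)
  also have "\<dots> = Sw4 d x (\<lambda>a c r t. Sw d c (\<lambda>p q. G a p q r t))"
    by (rule R4[symmetric, OF assms(1)]) (use assms in \<open>auto simp: ml_defs intro!: L_Sw_body L_Sw_arg L_id vs\<close>)
  also have "\<dots> = Sw5 d x G" by (rule S5_2[symmetric, OF assms])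
  finally show ?thesis by simp
qed

lemma regroup2: assumes s: "vector_space s" and K: "ml6 sc s K"
  shows "Sw d a (\<lambda>a1 a2. Sw d b (\<lambda>b1 b2. Sw d a2 (\<lambda>p q. Sw d b2 (\<lambda>r t. K a1 p q b1 r t))))
       = Sw d a (\<lambda>a' q. Sw d b (\<lambda>b' t. Sw d a' (\<lambda>a1 p. Sw d b' (\<lambda>b1 r. K a1 p q b1 r t))))"
proof -
  note LRK = L_Sw_body L_Sw_arg L_id vs s
  have "Sw d a (\<lambda>a1 a2. Sw d b (\<lambda>b1 b2. Sw d a2 (\<lambda>p q. Sw d b2 (\<lambda>r t. K a1 p q b1 r t))))
      = Sw d a (\<lambda>a1 a2. Sw d a2 (\<lambda>p q. Sw d b (\<lambda>b1 b2. Sw d b2 (\<lambda>r t. K a1 p q b1 r t))))"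
    by (rule Sw_cong, rule Sw_swap)
  also have "\<dots> = Sw3 d a (\<lambda>a1 p q. Sw d b (\<lambda>b1 b2. Sw d b2 (\<lambda>r t. K a1 p q b1 r t)))"
    by (rule S3_2[symmetric, OF s]) (use K in \<open>auto simp: ml_defs intro!: LRK\<close>)
  also have "\<dots> = Sw3 d a (\<lambda>a1 p q. Sw3 d b (\<lambda>b1 r t. K a1 p q b1 r t))"
    by (intro arg_cong[where f="Sw3 d a"] ext S3_2[symmetric, OF s]) (use K in \<open>auto simp: ml_defs intro!: LRK\<close>)
  also have "\<dots> = Sw d a (\<lambda>a' q. Sw d a' (\<lambda>a1 p. Sw d b (\<lambda>b' t. Sw d b' (\<lambda>b1 r. K a1 p q b1 r t))))"
    by (simp add: S3_1)
  also have "\<dots> = Sw d a (\<lambda>a' q. Sw d b (\<lambda>b' t. Sw d a' (\<lambda>a1 p. Sw d b' (\<lambda>b1 r. K a1 p q b1 r t))))"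
    by (rule Sw_cong, rule Sw_swap)
  finally show ?thesis .
qed

lemma regroup2L: assumes s: "vector_space s" and K: "ml6 sc s K"
  shows "Sw d a (\<lambda>a1 a2. Sw d b (\<lambda>b1 b2. Sw d a1 (\<lambda>p q. Sw d b1 (\<lambda>r t. K p q a2 r t b2))))
       = Sw d a (\<lambda>p w. Sw d b (\<lambda>r v. Sw d w (\<lambda>q a2. Sw d v (\<lambda>t b2. K p q a2 r t b2))))"
proof -
  note LRK = L_Sw_body L_Sw_arg L_id vs s
  have "Sw d a (\<lambda>a1 a2. Sw d b (\<lambda>b1 b2. Sw d a1 (\<lambda>p q. Sw d b1 (\<lambda>r t. K p q a2 r t b2))))
      = Sw d a (\<lambda>a1 a2. Sw d a1 (\<lambda>p q. Sw d b (\<lambda>b1 b2. Sw d b1 (\<lambda>r t. K p q a2 r t b2))))"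
    by (rule Sw_cong, rule Sw_swap)
  also have "\<dots> = Sw3 d a (\<lambda>p q a2. Sw d b (\<lambda>b1 b2. Sw d b1 (\<lambda>r t. K p q a2 r t b2)))"
    by (simp add: S3_1)
  also have "\<dots> = Sw3 d a (\<lambda>p q a2. Sw3 d b (\<lambda>r t b2. K p q a2 r t b2))"
    by (simp add: S3_1)
  also have "\<dots> = Sw d a (\<lambda>p w. Sw d w (\<lambda>q a2. Sw3 d b (\<lambda>r t b2. K p q a2 r t b2)))"
    by (rule S3_2[OF s]) (use K in \<open>auto simp: ml_defs Sw_defs intro!: LRK\<close>)
  also have "\<dots> = Sw d a (\<lambda>p w. Sw d w (\<lambda>q a2. Sw d b (\<lambda>r v. Sw d v (\<lambda>t b2. K p q a2 r t b2))))"
    by (intro Sw_cong S3_2[OF s]) (use K in \<open>auto simp: ml_defs Sw_defs intro!: LRK\<close>)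
  also have "\<dots> = Sw d a (\<lambda>p w. Sw d b (\<lambda>r v. Sw d w (\<lambda>q a2. Sw d v (\<lambda>t b2. K p q a2 r t b2))))"
    by (rule Sw_cong, rule Sw_swap)
  finally show ?thesis .
qed

lemma RG: assumes s: "vector_space s" and P: "ml4 sc s P"
  shows "Sw d a (\<lambda>x1 x2. Sw d x1 (\<lambda>g h. Sw d x2 (\<lambda>r t. P g h r t))) = Sw d a (\<lambda>z t. Sw d z (\<lambda>g w. Sw d w (\<lambda>h r. P g h r t)))"
proof -
  have "Sw d a (\<lambda>x1 x2. Sw d x1 (\<lambda>g h. Sw d x2 (\<lambda>r t. P g h r t))) = Sw3 d a (\<lambda>g h x2. Sw d x2 (\<lambda>r t. P g h r t))"
    by (simp add: S3_1)
  also have "\<dots> = Sw4 d a P" by (rule S4_3[symmetric, OF s P])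
  also have "\<dots> = Sw3 d a (\<lambda>g w t. Sw d w (\<lambda>h r. P g h r t))" by (rule S4_2[OF s P])
  finally show ?thesis by (simp add: S3_1)
qed

lemma regroup4: assumes s: "vector_space s" and K: "ml8 sc s K"
  shows "Sw d a (\<lambda>x1 x2. Sw d b (\<lambda>y1 y2. Sw d x1 (\<lambda>g h. Sw d y1 (\<lambda>g' h'. Sw d x2 (\<lambda>r t. Sw d y2 (\<lambda>p q. K g h r t g' h' p q))))))
       = Sw d a (\<lambda>z t. Sw d b (\<lambda>z' q. Sw d z (\<lambda>g w. Sw d z' (\<lambda>g' v. Sw d w (\<lambda>h r. Sw d v (\<lambda>h' p. K g h r t g' h' p q))))))"
proof -
  note LRK = L_Sw_body L_Sw_arg L_id vs s
  have "Sw d a (\<lambda>x1 x2. Sw d b (\<lambda>y1 y2. Sw d x1 (\<lambda>g h. Sw d y1 (\<lambda>g' h'. Sw d x2 (\<lambda>r t. Sw d y2 (\<lambda>p q. K g h r t g' h' p q))))))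
      = Sw d a (\<lambda>x1 x2. Sw d x1 (\<lambda>g h. Sw d b (\<lambda>y1 y2. Sw d y1 (\<lambda>g' h'. Sw d x2 (\<lambda>r t. Sw d y2 (\<lambda>p q. K g h r t g' h' p q))))))"
    by (rule Sw_cong, rule Sw_swap)
  also have "\<dots> = Sw d a (\<lambda>x1 x2. Sw d x1 (\<lambda>g h. Sw d b (\<lambda>y1 y2. Sw d x2 (\<lambda>r t. Sw d y1 (\<lambda>g' h'. Sw d y2 (\<lambda>p q. K g h r t g' h' p q))))))"
    by (intro Sw_cong, rule Sw_swap)
  also have "\<dots> = Sw d a (\<lambda>x1 x2. Sw d x1 (\<lambda>g h. Sw d x2 (\<lambda>r t. Sw d b (\<lambda>y1 y2. Sw d y1 (\<lambda>g' h'. Sw d y2 (\<lambda>p q. K g h r t g' h' p q))))))"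
    by (intro Sw_cong, rule Sw_swap)
  also have "\<dots> = Sw d a (\<lambda>x1 x2. Sw d x1 (\<lambda>g h. Sw d x2 (\<lambda>r t. Sw d b (\<lambda>z' q. Sw d z' (\<lambda>g' v. Sw d v (\<lambda>h' p. K g h r t g' h' p q))))))"
    by (intro Sw_cong RG[OF s]) (use K in \<open>auto simp: ml_defs intro!: LRK\<close>)
  also have "\<dots> = Sw d a (\<lambda>z t. Sw d z (\<lambda>g w. Sw d w (\<lambda>h r. Sw d b (\<lambda>z' q. Sw d z' (\<lambda>g' v. Sw d v (\<lambda>h' p. K g h r t g' h' p q))))))"
    by (rule RG[OF s]) (use K in \<open>auto simp: ml_defs intro!: LRK\<close>)
  also have "\<dots> = Sw d a (\<lambda>z t. Sw d z (\<lambda>g w. Sw d b (\<lambda>z' q. Sw d w (\<lambda>h r. Sw d z' (\<lambda>g' v. Sw d v (\<lambda>h' p. K g h r t g' h' p q))))))"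
    by (intro Sw_cong, rule Sw_swap)
  also have "\<dots> = Sw d a (\<lambda>z t. Sw d b (\<lambda>z' q. Sw d z (\<lambda>g w. Sw d w (\<lambda>h r. Sw d z' (\<lambda>g' v. Sw d v (\<lambda>h' p. K g h r t g' h' p q))))))"
    by (intro Sw_cong, rule Sw_swap)
  also have "\<dots> = Sw d a (\<lambda>z t. Sw d b (\<lambda>z' q. Sw d z (\<lambda>g w. Sw d z' (\<lambda>g' v. Sw d w (\<lambda>h r. Sw d v (\<lambda>h' p. K g h r t g' h' p q))))))"
    by (intro Sw_cong, rule Sw_swap)
  finally show ?thesis .
qed

lemma conv_inv_unique:
  assumes A: "bil sc sc act" and b1: "is_conv_inv sc d e act b1" and b2: "is_conv_inv sc d e act b2"
  shows "b1 = b2"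
proof (intro ext)
  fix x y
  have B1: "bil sc sc b1" and B2: "bil sc sc b2" using b1 b2 unfolding is_conv_inv_def bilinH_def bil_def by blast+
  have i1: "Sw d z (\<lambda>a b. b1 a (act b w)) = sc (e z) w" for z w using b1 unfolding is_conv_inv_def Sw_def by blast
  have i2: "Sw d z (\<lambda>a b. act a (b2 b w)) = sc (e z) w" for z w using b2 unfolding is_conv_inv_def Sw_def by blast
  note LRb = L_Sw_body L_Sw_arg L_id vs L_bil1[OF A] L_bil2[OF A] L_bil1[OF B1] L_bil2[OF B1] L_bil1[OF B2] L_bil2[OF B2] L_scale_fun[OF e_lin]
  have "b1 x y = Sw d x (\<lambda>a c. sc (e c) (b1 a y))"
    by (rule counit1[symmetric]) (auto intro!: LRb)
  also have "\<dots> = Sw d x (\<lambda>a c. Sw d c (\<lambda>p q. b1 a (act p (b2 q y))))"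
    by (simp add: Sw_pull2[OF B1] i2 bil_scale2[OF B1])
  also have "\<dots> = Sw3 d x (\<lambda>a p q. b1 a (act p (b2 q y)))"
    by (rule S3_2[symmetric, OF vs]) (auto simp: ml_defs intro!: LRb)
  also have "\<dots> = Sw d x (\<lambda>w q. sc (e w) (b2 q y))"
    by (simp add: S3_1 Sw_pull1[OF B1] i1)
  also have "\<dots> = b2 x y" by (rule counit2) (auto intro!: LRb)
  finally show "b1 x y = b2 x y" .
qed

end


lemma bilinH_bil: "bilinH sc m = bil sc sc m"
  unfolding bilinH_def bil_def by simp

locale hopfl = coal sc d e
  for sc :: "'k::field \<Rightarrow> 'h::ab_group_add \<Rightarrow> 'h" and d e +
  fixes mul one T
  assumes hopf: "is_hopf sc mul one d e T"
begin

lemma bil_mul: "bil sc sc mul" using hopf unfolding is_hopf_def is_bialgebra_def is_algebra_def bilinH_bil by blast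
lemma mul_assoc: "mul (mul x y) z = mul x (mul y z)" using hopf unfolding is_hopf_def is_bialgebra_def is_algebra_def by blast
lemma mul_one1[simp]: "mul one x = x" using hopf unfolding is_hopf_def is_bialgebra_def is_algebra_def by blast
lemma mul_one2[simp]: "mul x one = x" using hopf unfolding is_hopf_def is_bialgebra_def is_algebra_def by blast
lemma T_lin: "Vector_Spaces.linear sc sc T" using hopf unfolding is_hopf_def is_antipode_def by blast
lemma T_r: "Sw d x (\<lambda>a b. mul a (T b)) = sc (e x) one" using hopf unfolding is_hopf_def is_antipode_def Sw_def by blast
lemma T_l: "Sw d x (\<lambda>a b. mul (T a) b) = sc (e x) one" using hopf unfolding is_hopf_def is_antipode_def Sw_def by blast
lemma e_mul: "e (mul x y) = e x * e y" using hopf unfolding is_hopf_def is_bialgebra_def by blast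
lemma e_one[simp]: "e one = 1" using hopf unfolding is_hopf_def is_bialgebra_def by blast
lemma Sw_one: "vector_space s \<Longrightarrow> bil sc s F \<Longrightarrow> Sw d one F = F one one"
  using teq2_transfer[of sc "d one" "[(one,one)]"] hopf unfolding is_hopf_def is_bialgebra_def Sw_def by simp
lemma comult: assumes "vector_space s" "bil sc s F"
  shows "Sw d (mul x y) F = Sw d x (\<lambda>x1 x2. Sw d y (\<lambda>y1 y2. F (mul x1 y1) (mul x2 y2)))"
proof -
  have "teq2 sc (d (mul x y)) (concat (map (\<lambda>(a,b). map (\<lambda>(c,d). (mul a c, mul b d)) (d y)) (d x)))"
    using hopf unfolding is_hopf_def is_bialgebra_def by blast
  from teq2_transfer[OF this assms] show ?thesis unfolding Sw_def
    by (simp add: sum_list_concat' map_concat o_def case_prod_beta')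
qed

lemmas LRh = L_Sw_body L_Sw_arg L_id vs vs_field L_bil1[OF bil_mul] L_bil2[OF bil_mul] lin_comp[OF _ T_lin]
  L_scale_fun[OF e_lin] L_scale_c lin_comp[OF _ e_lin] L_mult1 L_mult2
lemmas sclh = bil_scale1[OF bil_mul] bil_scale2[OF bil_mul] lin_scale[OF T_lin] lin_scale[OF e_lin]
lemmas pullh = Sw_pull1[OF bil_mul] Sw_pull2[OF bil_mul] Sw_pullL[OF T_lin] Sw_pullL[OF e_lin]

lemma e_T: "e (T x) = e x"
proof -
  have "e (T x) = Sw d x (\<lambda>a b. e a * e (T b))"
    using counit2[of "(*)" "\<lambda>b. e (T b)" x] by (simp add: lin_comp[OF T_lin e_lin])
  also have "\<dots> = e (Sw d x (\<lambda>a b. mul a (T b)))" by (simp add: Sw_lin_out[OF e_lin] e_mul)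
  also have "\<dots> = e x" by (simp add: T_r lin_scale[OF e_lin])
  finally show ?thesis .
qed

lemma T_one: "T one = one"
  using T_r[of one] Sw_one[where s=sc and F="\<lambda>a b. mul a (T b)"]
  by (simp add: vs1[OF vs] bil_def LRh)

lemma aux1: "Sw d a (\<lambda>p q. Sw d b (\<lambda>r t. mul (mul p r) (T (mul q t)))) = sc (e a * e b) one"
proof -
  have "Sw d a (\<lambda>p q. Sw d b (\<lambda>r t. mul (mul p r) (T (mul q t)))) = Sw d (mul a b) (\<lambda>p q. mul p (T q))"
    by (rule comult[symmetric, OF vs]) (auto intro!: LRh simp: bil_def)
  then show ?thesis by (simp add: T_r e_mul)
qed

lemma T_anti_mult: "T (mul x y) = mul (T y) (T x)"
proof -
  have "mul (T y) (T x) = Sw d x (\<lambda>x1 x2. sc (e x2) (mul (T y) (T x1)))"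
    by (rule counit1[symmetric]) (auto intro!: LRh)
  also have "\<dots> = Sw d x (\<lambda>x1 x2. Sw d y (\<lambda>y1 y2. mul (mul (T y1) (T x1)) (sc (e x2 * e y2) one)))"
  proof (rule Sw_cong)
    fix x1 x2
    have "Sw d y (\<lambda>y1 y2. mul (mul (T y1) (T x1)) (sc (e x2 * e y2) one)) = sc (e x2) (Sw d y (\<lambda>y1 y2. sc (e y2) (mul (T y1) (T x1))))"
      by (simp add: Sw_pull_scale[OF vs, symmetric] vsS[OF vs] sclh mult.commute)
    also have "Sw d y (\<lambda>y1 y2. sc (e y2) (mul (T y1) (T x1))) = mul (T y) (T x1)"
      by (rule counit1) (auto intro!: LRh)
    finally show "sc (e x2) (mul (T y) (T x1)) = Sw d y (\<lambda>y1 y2. mul (mul (T y1) (T x1)) (sc (e x2 * e y2) one))" by simp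
  qed
  also have "\<dots> = Sw d x (\<lambda>x1 x2. Sw d y (\<lambda>y1 y2. Sw d x2 (\<lambda>p q. Sw d y2 (\<lambda>r t. mul (T y1) (mul (mul (mul (T x1) p) r) (T (mul q t)))))))"
    by (simp add: aux1[symmetric] pullh mul_assoc)
  also have "\<dots> = Sw d x (\<lambda>x1 x2. Sw d x2 (\<lambda>p q. Sw d y (\<lambda>y1 y2. Sw d y2 (\<lambda>r t. mul (T y1) (mul (mul (mul (T x1) p) r) (T (mul q t)))))))"
    by (rule Sw_cong, rule Sw_swap)
  also have "\<dots> = Sw3 d x (\<lambda>x1 p q. Sw3 d y (\<lambda>y1 r t. mul (T y1) (mul (mul (mul (T x1) p) r) (T (mul q t)))))"
    apply (subst S3_2[OF vs]) apply (auto simp: ml_defs Sw_defs intro!: LRh)[1]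
    apply (rule Sw_cong, rule Sw_cong)
    apply (subst S3_2[OF vs]) apply (auto simp: ml_defs Sw_defs intro!: LRh)[1]
    by (rule refl)
  also have "\<dots> = Sw d x (\<lambda>w q. Sw3 d y (\<lambda>y1 r t. Sw d w (\<lambda>x1 p. mul (T y1) (mul (mul (mul (T x1) p) r) (T (mul q t))))))"
    by (simp only: S3_1[of x]) (rule Sw_cong, rule swap3[symmetric])
  also have "\<dots> = Sw d x (\<lambda>w q. sc (e w) (Sw3 d y (\<lambda>y1 r t. mul (T y1) (mul r (T (mul q t))))))"
    by (simp add: pullh T_l sclh Sw_defs Sw_pull_scale[OF vs])
  also have "\<dots> = Sw3 d y (\<lambda>y1 r t. mul (T y1) (mul r (T (mul x t))))"
    by (rule counit2) (auto intro!: LRh simp: Sw_defs)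
  also have "\<dots> = Sw d y (\<lambda>w t. Sw d w (\<lambda>y1 r. mul (mul (T y1) r) (T (mul x t))))"
    by (simp add: S3_1 mul_assoc)
  also have "\<dots> = Sw d y (\<lambda>w t. sc (e w) (T (mul x t)))"
    by (simp add: pullh T_l sclh)
  also have "\<dots> = T (mul x y)" by (rule counit2) (auto intro!: LRh)
  finally show ?thesis by simp
qed


lemma auxC: assumes s: "vector_space s" and F: "bil sc s F"
  shows "Sw4 d b (\<lambda>b1 b2 b3 b4. F (mul A1 (mul b1 (T b4))) (mul A2 (mul b2 (T b3)))) = s (e b) (F A1 A2)"
proof -
  note LRF = LRh L_bil1[OF F] L_bil2[OF F] s
  have "Sw4 d b (\<lambda>b1 b2 b3 b4. F (mul A1 (mul b1 (T b4))) (mul A2 (mul b2 (T b3))))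
     = Sw3 d b (\<lambda>b1 c b4. Sw d c (\<lambda>b2 b3. F (mul A1 (mul b1 (T b4))) (mul A2 (mul b2 (T b3)))))"
    by (rule S4_2[OF s]) (auto simp: ml_defs intro!: LRF)
  also have "\<dots> = Sw3 d b (\<lambda>b1 c b4. s (e c) (F (mul A1 (mul b1 (T b4))) A2))"
    by (simp add: pullh Sw_pull2[OF F] T_r sclh bil_scale2[OF F])
  also have "\<dots> = Sw d b (\<lambda>b1 w. Sw d w (\<lambda>c b4. s (e c) (F (mul A1 (mul b1 (T b4))) A2)))"
    by (rule S3_2[OF s]) (auto simp: ml_defs intro!: LRF)
  also have "\<dots> = Sw d b (\<lambda>b1 w. F (mul A1 (mul b1 (T w))) A2)"
    by (intro Sw_cong counit2) (auto intro!: LRF)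
  also have "\<dots> = s (e b) (F A1 A2)"
    by (simp add: pullh Sw_pull1[OF F] T_r sclh bil_scale1[OF F])
  finally show ?thesis .
qed

lemma T_anti_comult: assumes s: "vector_space s" and F: "bil sc s F"
  shows "Sw d (T x) F = Sw d x (\<lambda>a b. F (T b) (T a))"
proof -
  note LRF = LRh L_bil1[OF F] L_bil2[OF F] s
  have linTF: "Vector_Spaces.linear sc s (\<lambda>a. Sw d (T a) F)"
    by (rule lin_comp[OF T_lin Sw_arg[OF s F]])
  have "Sw d (T x) F = Sw d x (\<lambda>a b. s (e b) (Sw d (T a) F))"
    by (rule counit1[symmetric, OF linTF])
  also have "\<dots> = Sw d x (\<lambda>a b. Sw d (T a) (\<lambda>A1 A2. Sw4 d b (\<lambda>b1 b2 b3 b4. F (mul A1 (mul b1 (T b4))) (mul A2 (mul b2 (T b3))))))"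
    by (simp add: auxC[OF s F] Sw_pull_scale[OF s])
  also have "\<dots> = Sw d x (\<lambda>a b. Sw4 d b (\<lambda>b1 b2 b3 b4. Sw d (T a) (\<lambda>A1 A2. F (mul A1 (mul b1 (T b4))) (mul A2 (mul b2 (T b3))))))"
    by (rule Sw_cong, rule swap4[symmetric])
  also have "\<dots> = Sw5 d x (\<lambda>a b1 b2 b3 b4. Sw d (T a) (\<lambda>A1 A2. F (mul A1 (mul b1 (T b4))) (mul A2 (mul b2 (T b3)))))"
    by (rule R5[symmetric, OF s]) (auto simp: ml_defs intro!: LRF)
  also have "\<dots> = Sw4 d x (\<lambda>a c b3 b4. Sw d c (\<lambda>b1 b2. Sw d (T a) (\<lambda>A1 A2. F (mul A1 (mul b1 (T b4))) (mul A2 (mul b2 (T b3))))))"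
    by (rule S5_2[OF s]) (auto simp: ml_defs intro!: LRF)
  also have "\<dots> = Sw4 d x (\<lambda>a c b3 b4. Sw d (mul (T a) c) (\<lambda>X Y. F (mul X (T b4)) (mul Y (T b3))))"
  proof (intro arg_cong[where f="Sw4 d x"] ext)
    fix a c b3 b4
    have "Sw d c (\<lambda>b1 b2. Sw d (T a) (\<lambda>A1 A2. F (mul A1 (mul b1 (T b4))) (mul A2 (mul b2 (T b3)))))
        = Sw d (T a) (\<lambda>A1 A2. Sw d c (\<lambda>b1 b2. F (mul (mul A1 b1) (T b4)) (mul (mul A2 b2) (T b3))))"
      by (simp add: Sw_swap[of d c] mul_assoc)
    also have "\<dots> = Sw d (mul (T a) c) (\<lambda>X Y. F (mul X (T b4)) (mul Y (T b3)))"
      by (rule comult[symmetric, OF s]) (auto intro!: LRF simp: bil_def)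
    finally show "Sw d c (\<lambda>b1 b2. Sw d (T a) (\<lambda>A1 A2. F (mul A1 (mul b1 (T b4))) (mul A2 (mul b2 (T b3))))) = Sw d (mul (T a) c) (\<lambda>X Y. F (mul X (T b4)) (mul Y (T b3)))" .
  qed
  also have "\<dots> = Sw3 d x (\<lambda>w b3 b4. Sw d w (\<lambda>a c. Sw d (mul (T a) c) (\<lambda>X Y. F (mul X (T b4)) (mul Y (T b3)))))"
    by (rule S4_1)
  also have "\<dots> = Sw3 d x (\<lambda>w b3 b4. s (e w) (F (T b4) (T b3)))"
  proof (intro arg_cong[where f="Sw3 d x"] ext)
    fix w b3 b4
    have G: "bil sc s (\<lambda>X Y. F (mul X (T b4)) (mul Y (T b3)))" by (auto intro!: LRF simp: bil_def)
    have "Sw d w (\<lambda>a c. Sw d (mul (T a) c) (\<lambda>X Y. F (mul X (T b4)) (mul Y (T b3))))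
        = Sw d (Sw d w (\<lambda>a c. mul (T a) c)) (\<lambda>X Y. F (mul X (T b4)) (mul Y (T b3)))"
      by (rule Sw_pullL[OF Sw_arg[OF s G]])
    also have "\<dots> = s (e w) (F (T b4) (T b3))"
      by (simp add: T_l lin_scale[OF Sw_arg[OF s G]] Sw_one[OF s G])
    finally show "Sw d w (\<lambda>a c. Sw d (mul (T a) c) (\<lambda>X Y. F (mul X (T b4)) (mul Y (T b3)))) = s (e w) (F (T b4) (T b3))" .
  qed
  also have "\<dots> = Sw d x (\<lambda>a b. F (T b) (T a))"
    unfolding S3_1 by (intro Sw_cong counit2) (auto intro!: LRF)
  finally show ?thesis .
qed

end




locale ydph = coal sc d e
  for sc :: "'k::field \<Rightarrow> 'h::ab_group_add \<Rightarrow> 'h" and d e +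
  fixes m u S act beta bul SA ract
  assumes alg: "is_algebra sc m u"
    and anti: "is_antipode sc m u d e S"
    and actb: "bilinH sc act"
    and actc: "\<forall>x y. teq2 sc (d (act x y))
                 (concat (map (\<lambda>(x1,x2). map (\<lambda>(y1,y2). (act x1 y1, act x2 y2)) (d y)) (d x)))"
    and acte: "\<forall>x y. e (act x y) = e x * e y"
    and P1: "\<forall>x y z. act x (m y z) = sum_list (map (\<lambda>(x1,x2). m (act x1 y) (act x2 z)) (d x))"
    and P2: "\<forall>x y z. act x (act y z) = act (bul x y) z"
    and P3: "is_conv_inv sc d e act beta"
    and P4: "(\<forall>a b. e (m a b) = e a * e b)" "e u = 1" "teq2 sc (d u) [(u,u)]"
    and P5: "\<forall>x y. teq2 sc (d (m x y))
            (concat (map (\<lambda>(x1,x2,x3,x4). map (\<lambda>(y1,y2).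
                 (m x1 (act x2 (beta x4 y1)), m x3 y2)) (d y)) (sw4 d x)))"
    and P6a: "\<forall>x. teq2 sc (d (SA x)) (map (\<lambda>(x1,x2). (SA x2, SA x1)) (d x))"
    and P6b: "\<forall>x y. teq2 sc
            (concat (map (\<lambda>(x1,x2). map (\<lambda>(y1,y2). (act x1 y1, ract x2 y2)) (d y)) (d x)))
            (concat (map (\<lambda>(x1,x2). map (\<lambda>(y1,y2). (act x2 y2, ract x1 y1)) (d y)) (d x)))"
    and bul_def: "bul = (\<lambda>x y. Sw d x (\<lambda>a b. m a (act b y)))"
    and SA_def: "SA = (\<lambda>x. Sw d x (\<lambda>a b. beta a (S b)))"
    and ract_def: "ract = (\<lambda>x y. Sw d x (\<lambda>x1 x2. Sw d y (\<lambda>y1 y2. bul (bul (SA (act x1 y1)) x2) y2)))"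
begin

lemma bil_m: "bil sc sc m" using alg unfolding is_algebra_def bilinH_bil by blast
lemma m_assoc: "m (m x y) z = m x (m y z)" using alg unfolding is_algebra_def by blast
lemma m_u1[simp]: "m u x = x" using alg unfolding is_algebra_def by blast
lemma m_u2[simp]: "m x u = x" using alg unfolding is_algebra_def by blast
lemma bil_act: "bil sc sc act" using actb unfolding bilinH_bil .
lemma S_lin: "Vector_Spaces.linear sc sc S" using anti unfolding is_antipode_def by blast
lemma S_anti1: "Sw d x (\<lambda>a b. m a (S b)) = sc (e x) u" using anti unfolding is_antipode_def Sw_def by blast
lemma S_anti2: "Sw d x (\<lambda>a b. m (S a) b) = sc (e x) u" using anti unfolding is_antipode_def Sw_def by blast
lemma bil_beta: "bil sc sc beta" using P3 unfolding is_conv_inv_def bilinH_bil by blast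
lemma ab: "Sw d x (\<lambda>a b. act a (beta b y)) = sc (e x) y" using P3 unfolding is_conv_inv_def Sw_def by blast
lemma ba: "Sw d x (\<lambda>a b. beta a (act b y)) = sc (e x) y" using P3 unfolding is_conv_inv_def Sw_def by blast
lemma P1': "act x (m y z) = Sw d x (\<lambda>x1 x2. m (act x1 y) (act x2 z))" using P1 unfolding Sw_def by blast
lemma e_act: "e (act x y) = e x * e y" using acte by blast
lemma e_m: "e (m x y) = e x * e y" using P4 by blast
lemma e_u[simp]: "e u = 1" using P4 by blast

lemmas LR = L_Sw_body L_Sw_arg L_id vs vs_field L_bil1[OF bil_m] L_bil2[OF bil_m] L_bil1[OF bil_act] L_bil2[OF bil_act]
  L_bil1[OF bil_beta] L_bil2[OF bil_beta] lin_comp[OF _ S_lin] L_scale_fun[OF e_lin] L_scale_c lin_comp[OF _ e_lin]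
  L_mult1 L_mult2

lemma Sw_u: "vector_space s \<Longrightarrow> bil sc s F \<Longrightarrow> Sw d u F = F u u"
  using teq2_transfer[OF P4(3)] unfolding Sw_def by simp

lemma act_c: "vector_space s \<Longrightarrow> bil sc s F \<Longrightarrow> Sw d (act x y) F = Sw d x (\<lambda>x1 x2. Sw d y (\<lambda>y1 y2. F (act x1 y1) (act x2 y2)))"
  using teq2_transfer[OF actc[rule_format]] unfolding Sw_def by (simp add: sum_list_concat' map_concat o_def case_prod_beta')

lemma act_x_u: "act x u = sc (e x) u"
proof -
  have key: "sc (e x) z = m (act x u) z" for z
  proof -
    have "sc (e x) z = Sw d x (\<lambda>a b. act a (beta b z))" by (simp add: ab)
    also have "\<dots> = Sw d x (\<lambda>a b. Sw d a (\<lambda>a1 a2. m (act a1 u) (act a2 (beta b z))))"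
      by (rule Sw_cong) (simp add: P1'[symmetric])
    also have "\<dots> = Sw d x (\<lambda>a1 c. Sw d c (\<lambda>a2 b. m (act a1 u) (act a2 (beta b z))))"
      by (rule coassoc[where s=sc]) (auto simp: ml_defs intro!: LR)
    also have "\<dots> = Sw d x (\<lambda>a1 c. m (act a1 u) (Sw d c (\<lambda>a2 b. act a2 (beta b z))))"
      by (rule Sw_cong) (simp add: Sw_lin_out[OF L_bil2[OF bil_m L_id[OF vs]]])
    also have "\<dots> = Sw d x (\<lambda>a1 c. sc (e c) (m (act a1 u) z))"
      by (simp add: ab bil_scale2[OF bil_m])
    also have "\<dots> = m (act x u) z"
      by (rule counit1) (auto intro!: LR)
    finally show ?thesis .
  qed
  show ?thesis using key[of u] by simp
qed


lemmas scl = bil_scale1[OF bil_m] bil_scale2[OF bil_m] bil_scale1[OF bil_act] bil_scale2[OF bil_act]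
  bil_scale1[OF bil_beta] bil_scale2[OF bil_beta] lin_scale[OF S_lin] lin_scale[OF e_lin]
lemmas pull = Sw_pull1[OF bil_m] Sw_pull2[OF bil_m] Sw_pull1[OF bil_act] Sw_pull2[OF bil_act]
  Sw_pull1[OF bil_beta] Sw_pull2[OF bil_beta] Sw_pullL[OF S_lin] Sw_pullL[OF e_lin]

lemma beta_x_u: "beta x u = sc (e x) u"
proof -
  have "beta x u = Sw d x (\<lambda>a b. sc (e b) (beta a u))"
    by (rule counit1[symmetric]) (auto intro!: LR)
  also have "\<dots> = Sw d x (\<lambda>a b. beta a (sc (e b) u))" by (simp add: scl)
  also have "\<dots> = Sw d x (\<lambda>a b. beta a (act b u))" by (simp add: act_x_u)
  finally show ?thesis by (simp add: ba)
qed

lemma act_u[simp]: "act u y = y"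
proof -
  have uu: "act u u = u" by (simp add: act_x_u vs1[OF vs])
  have "bul u u = u" unfolding bul_def
    by (subst Sw_u[where s=sc]) (auto simp: uu intro!: LR simp: bil_def)
  then have gg: "act u (act u z) = act u z" for z using P2 by simp
  have abu: "act u (beta u y) = y" using ab[of u y] Sw_u[where s=sc and F="\<lambda>a b. act a (beta b y)"]
    by (simp add: bil_def vs1[OF vs] LR)
  show ?thesis using gg[of "beta u y"] abu by simp
qed

lemma bil_bul: "bil sc sc bul"
  unfolding bil_def bul_def by (auto intro!: LR Sw_arg simp: bil_def)

lemma bul_u1: "bul u y = y"
  unfolding bul_def by (subst Sw_u[where s=sc]) (auto simp: act_u intro!: LR simp: bil_def)
lemma bul_u2: "bul x u = x"
  unfolding bul_def by (simp add: act_x_u scl counit1[OF L_id[OF vs]])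

lemma P5': assumes "vector_space s" "bil sc s F"
  shows "Sw d (m x y) F = Sw4 d x (\<lambda>x1 x2 x3 x4. Sw d y (\<lambda>y1 y2. F (m x1 (act x2 (beta x4 y1))) (m x3 y2)))"
  using teq2_transfer[OF P5[rule_format] assms]
  unfolding Sw_def Sw_defs sw4_def sw3_def by (simp add: sum_list_concat' map_concat o_def case_prod_beta')

lemma comult_bul: assumes s: "vector_space s" and F: "bil sc s F"
  shows "Sw d (bul x y) F = Sw d x (\<lambda>x1 x2. Sw d y (\<lambda>y1 y2. F (bul x1 y1) (bul x2 y2)))"
proof -
  note LRF = LR L_bil1[OF F] L_bil2[OF F] s
  have "Sw d (bul x y) F = Sw d x (\<lambda>a b. Sw d (m a (act b y)) F)"
    by (simp add: bul_def Sw_lin_out[OF Sw_arg[OF s F]])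
  also have "\<dots> = Sw d x (\<lambda>a b. Sw4 d a (\<lambda>a1 a2 a3 a4. Sw d (act b y) (\<lambda>p q. F (m a1 (act a2 (beta a4 p))) (m a3 q))))"
    by (rule Sw_cong) (rule P5'[OF s F])
  also have "\<dots> = Sw d x (\<lambda>a b. Sw4 d a (\<lambda>a1 a2 a3 a4. Sw d b (\<lambda>b1 b2. Sw d y (\<lambda>y1 y2. F (m a1 (act a2 (beta a4 (act b1 y1)))) (m a3 (act b2 y2))))))"
    by (intro Sw_cong arg_cong[where f="Sw4 d _"] ext act_c[OF s]) (auto intro!: LRF simp: bil_def)
  also have "\<dots> = Sw5 d x (\<lambda>a1 a2 a3 a4 b. Sw d b (\<lambda>b1 b2. Sw d y (\<lambda>y1 y2. F (m a1 (act a2 (beta a4 (act b1 y1)))) (m a3 (act b2 y2)))))"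
    by (simp add: Sw5_def)
  also have "\<dots> = Sw6 d x (\<lambda>a1 a2 a3 a4 b1 b2. Sw d y (\<lambda>y1 y2. F (m a1 (act a2 (beta a4 (act b1 y1)))) (m a3 (act b2 y2))))"
    by (rule S6_5[symmetric, OF s]) (auto simp: ml_defs intro!: LRF)
  also have "\<dots> = Sw d y (\<lambda>y1 y2. Sw6 d x (\<lambda>a1 a2 a3 a4 b1 b2. F (m a1 (act a2 (beta a4 (act b1 y1)))) (m a3 (act b2 y2))))"
    by (rule swap6)
  also have "\<dots> = Sw d y (\<lambda>y1 y2. Sw d x (\<lambda>x1 x2. F (bul x1 y1) (bul x2 y2)))"
  proof (rule Sw_cong)
    fix y1 y2
    have "Sw6 d x (\<lambda>a1 a2 a3 a4 b1 b2. F (m a1 (act a2 (beta a4 (act b1 y1)))) (m a3 (act b2 y2)))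
       = Sw5 d x (\<lambda>a1 a2 a3 c a5. Sw d c (\<lambda>p q. F (m a1 (act a2 (beta p (act q y1)))) (m a3 (act a5 y2))))"
      by (rule S6_4[OF s]) (auto simp: ml_defs intro!: LRF)
    also have "\<dots> = Sw5 d x (\<lambda>a1 a2 a3 c a5. s (e c) (F (m a1 (act a2 y1)) (m a3 (act a5 y2))))"
      by (simp add: pull Sw_pull1[OF F] ba scl bil_scale1[OF F])
    also have "\<dots> = Sw4 d x (\<lambda>a1 a2 a3 a4. Sw d a4 (\<lambda>p q. s (e p) (F (m a1 (act a2 y1)) (m a3 (act q y2)))))"
      by (rule S5_4[OF s]) (auto simp: ml_defs intro!: LRF)
    also have "\<dots> = Sw4 d x (\<lambda>a1 a2 a3 a4. F (m a1 (act a2 y1)) (m a3 (act a4 y2)))"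
      by (intro arg_cong[where f="Sw4 d x"] ext counit2) (auto intro!: LRF)
    also have "\<dots> = Sw3 d x (\<lambda>c a3 a4. Sw d c (\<lambda>a1 a2. F (m a1 (act a2 y1)) (m a3 (act a4 y2))))"
      by (rule S4_1)
    also have "\<dots> = Sw3 d x (\<lambda>c a3 a4. F (bul c y1) (m a3 (act a4 y2)))"
      by (simp add: Sw_pull1[OF F] bul_def)
    also have "\<dots> = Sw d x (\<lambda>c w. Sw d w (\<lambda>a3 a4. F (bul c y1) (m a3 (act a4 y2))))"
      by (rule S3_2[OF s]) (auto simp: ml_defs intro!: LRF L_bil1[OF bil_bul])
    also have "\<dots> = Sw d x (\<lambda>x1 x2. F (bul x1 y1) (bul x2 y2))"
      by (simp add: Sw_pull2[OF F] bul_def)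
    finally show "Sw6 d x (\<lambda>a1 a2 a3 a4 b1 b2. F (m a1 (act a2 (beta a4 (act b1 y1)))) (m a3 (act b2 y2))) = Sw d x (\<lambda>x1 x2. F (bul x1 y1) (bul x2 y2))" .
  qed
  also have "\<dots> = Sw d x (\<lambda>x1 x2. Sw d y (\<lambda>y1 y2. F (bul x1 y1) (bul x2 y2)))"
    by (rule Sw_swap)
  finally show ?thesis .
qed


lemmas LR2 = LR L_bil1[OF bil_bul] L_bil2[OF bil_bul]

lemma bul_assoc: "bul (bul x y) z = bul x (bul y z)"
proof -
  have "bul (bul x y) z = Sw d x (\<lambda>x1 x2. Sw d y (\<lambda>y1 y2. m (bul x1 y1) (act (bul x2 y2) z)))"
    by (subst bul_def, rule comult_bul[OF vs]) (auto intro!: LR simp: bil_def)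
  also have "\<dots> = Sw d x (\<lambda>x1 x2. Sw d y (\<lambda>y1 y2. Sw d x1 (\<lambda>p q. m (m p (act q y1)) (act x2 (act y2 z)))))"
    by (simp add: pull bul_def P2)
  also have "\<dots> = Sw d x (\<lambda>x1 x2. Sw d x1 (\<lambda>p q. Sw d y (\<lambda>y1 y2. m (m p (act q y1)) (act x2 (act y2 z)))))"
    by (rule Sw_cong, rule Sw_swap[symmetric])
  also have "\<dots> = Sw3 d x (\<lambda>p q x2. Sw d y (\<lambda>y1 y2. m (m p (act q y1)) (act x2 (act y2 z))))"
    by (simp add: S3_1)
  also have "\<dots> = Sw d x (\<lambda>p w. Sw d w (\<lambda>q x2. Sw d y (\<lambda>y1 y2. m (m p (act q y1)) (act x2 (act y2 z)))))"
    by (rule S3_2[OF vs]) (auto simp: ml_defs intro!: LR)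
  also have "\<dots> = Sw d x (\<lambda>p w. m p (act w (bul y z)))"
  proof (rule Sw_cong)
    fix p w
    have "Sw d w (\<lambda>q x2. Sw d y (\<lambda>y1 y2. m (m p (act q y1)) (act x2 (act y2 z))))
        = m p (Sw d w (\<lambda>q x2. Sw d y (\<lambda>y1 y2. m (act q y1) (act x2 (act y2 z)))))"
      by (simp add: m_assoc pull)
    also have "\<dots> = m p (Sw d y (\<lambda>y1 y2. Sw d w (\<lambda>q x2. m (act q y1) (act x2 (act y2 z)))))"
      by (simp add: Sw_swap[of d w])
    also have "\<dots> = m p (act w (bul y z))"
      by (simp add: P1'[symmetric] bul_def pull)
    finally show "Sw d w (\<lambda>q x2. Sw d y (\<lambda>y1 y2. m (m p (act q y1)) (act x2 (act y2 z)))) = m p (act w (bul y z))" .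
  qed
  also have "\<dots> = bul x (bul y z)" by (simp add: bul_def)
  finally show ?thesis .
qed

lemma e_bul: "e (bul x y) = e x * e y"
proof -
  have "e (bul x y) = Sw d x (\<lambda>a b. e a * e b) * e y"
    by (simp add: bul_def Sw_lin_out[OF e_lin] e_m e_act Sw_mult_right[symmetric] mult.assoc)
  also have "Sw d x (\<lambda>a b. e a * e b) = e x"
    using counit2[OF e_lin, of x] by simp
  finally show ?thesis .
qed

lemma SA_lin: "Vector_Spaces.linear sc sc SA"
  unfolding SA_def by (rule Sw_arg[OF vs]) (auto intro!: LR simp: bil_def)

lemmas LR3 = LR2 lin_comp[OF _ SA_lin]
lemmas scl2 = scl bil_scale1[OF bil_bul] bil_scale2[OF bil_bul] lin_scale[OF SA_lin]
lemmas pull2 = pull Sw_pull1[OF bil_bul] Sw_pull2[OF bil_bul] Sw_pullL[OF SA_lin]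

lemma act_SA: "Sw d w (\<lambda>q b. act q (SA b)) = S w"
proof -
  have "Sw d w (\<lambda>q b. act q (SA b)) = Sw d w (\<lambda>q b. Sw d b (\<lambda>r t. act q (beta r (S t))))"
    by (simp add: SA_def pull)
  also have "\<dots> = Sw3 d w (\<lambda>q r t. act q (beta r (S t)))"
    by (rule S3_2[symmetric, OF vs]) (auto simp: ml_defs intro!: LR)
  also have "\<dots> = Sw d w (\<lambda>c t. sc (e c) (S t))"
    by (simp add: S3_1 pull ab)
  also have "\<dots> = S w" by (rule counit2[OF S_lin])
  finally show ?thesis .
qed

lemma SA_r: "Sw d x (\<lambda>a b. bul a (SA b)) = sc (e x) u"
proof -
  have "Sw d x (\<lambda>a b. bul a (SA b)) = Sw3 d x (\<lambda>p q b. m p (act q (SA b)))"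
    by (simp add: S3_1 bul_def)
  also have "\<dots> = Sw d x (\<lambda>p w. Sw d w (\<lambda>q b. m p (act q (SA b))))"
    by (rule S3_2[OF vs]) (auto simp: ml_defs intro!: LR3)
  also have "\<dots> = Sw d x (\<lambda>p w. m p (S w))" by (simp add: pull act_SA)
  finally show ?thesis by (simp add: S_anti1)
qed

lemma act_sc_u: "act (sc c u) y = sc c y" by (simp add: scl act_u)

lemma beta_SA: "beta x y = act (SA x) y"
proof -
  have "beta x y = Sw d x (\<lambda>a b. sc (e b) (beta a y))"
    by (rule counit1[symmetric]) (auto intro!: LR)
  also have "\<dots> = Sw d x (\<lambda>a b. Sw d b (\<lambda>p q. beta a (act p (act (SA q) y))))"
    by (simp add: pull2 P2 SA_r act_sc_u scl)
  also have "\<dots> = Sw3 d x (\<lambda>a p q. beta a (act p (act (SA q) y)))"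
    by (rule S3_2[symmetric, OF vs]) (auto simp: ml_defs intro!: LR3)
  also have "\<dots> = Sw d x (\<lambda>c q. sc (e c) (act (SA q) y))"
    by (simp add: S3_1 pull ba)
  also have "\<dots> = act (SA x) y" by (rule counit2) (auto intro!: LR3)
  finally show ?thesis .
qed

lemma beta_m: "beta x (m y z) = Sw d x (\<lambda>x1 x2. m (beta x2 y) (beta x1 z))"
proof -
  define R where "R = (\<lambda>b. Sw d b (\<lambda>p q. m (beta q y) (beta p z)))"
  have claim: "Sw d x (\<lambda>a b. act a (R b)) = sc (e x) (m y z)" for x
  proof -
    have "Sw d x (\<lambda>a b. act a (R b)) = Sw d x (\<lambda>a b. Sw d b (\<lambda>p q. act a (m (beta q y) (beta p z))))"
      by (simp add: R_def pull)
    also have "\<dots> = Sw3 d x (\<lambda>a p q. act a (m (beta q y) (beta p z)))"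
      by (rule S3_2[symmetric, OF vs]) (auto simp: ml_defs intro!: LR)
    also have "\<dots> = Sw4 d x (\<lambda>a1 a2 p q. m (act a1 (beta q y)) (act a2 (beta p z)))"
      by (simp add: S4_1 P1')
    also have "\<dots> = Sw3 d x (\<lambda>a1 c q. Sw d c (\<lambda>a2 p. m (act a1 (beta q y)) (act a2 (beta p z))))"
      by (rule S4_2[OF vs]) (auto simp: ml_defs intro!: LR)
    also have "\<dots> = Sw3 d x (\<lambda>a1 c q. sc (e c) (m (act a1 (beta q y)) z))"
      by (simp add: pull ab scl)
    also have "\<dots> = Sw d x (\<lambda>a1 w. Sw d w (\<lambda>c q. sc (e c) (m (act a1 (beta q y)) z)))"
      by (rule S3_2[OF vs]) (auto simp: ml_defs intro!: LR)
    also have "\<dots> = Sw d x (\<lambda>a1 w. m (act a1 (beta w y)) z)"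
      by (intro Sw_cong counit2) (auto intro!: LR)
    also have "\<dots> = sc (e x) (m y z)" by (simp add: pull ab scl)
    finally show ?thesis .
  qed
  have "beta x (m y z) = Sw d x (\<lambda>a b. beta a (sc (e b) (m y z)))"
    using counit1[of sc "\<lambda>a. beta a (m y z)" x] by (simp add: scl LR)
  also have "\<dots> = Sw d x (\<lambda>a b. Sw d b (\<lambda>c f. beta a (act c (R f))))"
    by (simp add: claim pull)
  also have "\<dots> = Sw3 d x (\<lambda>a c f. beta a (act c (R f)))"
    by (rule S3_2[symmetric, OF vs]) (auto simp: ml_defs R_def bil_def intro!: LR)
  also have "\<dots> = Sw d x (\<lambda>w f. sc (e w) (R f))"
    by (simp add: S3_1 pull ba)
  also have "\<dots> = R x" by (rule counit2) (auto simp: R_def bil_def intro!: LR)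
  finally show ?thesis by (simp add: R_def)
qed


lemma P6a': "vector_space s \<Longrightarrow> bil sc s F \<Longrightarrow> Sw d (SA x) F = Sw d x (\<lambda>x1 x2. F (SA x2) (SA x1))"
  using teq2_transfer[OF P6a[rule_format]] unfolding Sw_def by (simp add: o_def case_prod_beta')

lemma SA_l: "Sw d x (\<lambda>a b. bul (SA a) b) = sc (e x) u"
proof -
  have "Sw d x (\<lambda>a b. bul (SA a) b) = Sw d x (\<lambda>a b. Sw d a (\<lambda>a1 a2. m (SA a2) (beta a1 b)))"
    by (intro Sw_cong, subst bul_def, subst P6a'[OF vs]) (auto simp: beta_SA bil_def intro!: LR3)
  also have "\<dots> = Sw3 d x (\<lambda>a1 a2 b. Sw d a2 (\<lambda>r t. m (beta r (S t)) (beta a1 b)))"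
    by (simp add: S3_1 SA_def pull)
  also have "\<dots> = Sw4 d x (\<lambda>a1 r t b. m (beta r (S t)) (beta a1 b))"
    by (rule S4_2[symmetric, OF vs]) (auto simp: ml_defs intro!: LR3)
  also have "\<dots> = Sw3 d x (\<lambda>w t b. beta w (m (S t) b))"
    by (simp add: S4_1 beta_m)
  also have "\<dots> = Sw d x (\<lambda>w c. Sw d c (\<lambda>t b. beta w (m (S t) b)))"
    by (rule S3_2[OF vs]) (auto simp: ml_defs intro!: LR3)
  also have "\<dots> = Sw d x (\<lambda>w c. sc (e c) (beta w u))"
    by (simp add: pull S_anti2 scl)
  also have "\<dots> = beta x u" by (rule counit1) (auto intro!: LR3)
  finally show ?thesis by (simp add: beta_x_u)
qed

lemma e_SA: "e (SA x) = e x"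
proof -
  have "e (SA x) = Sw d x (\<lambda>a b. e a * e (SA b))"
    using counit2[of "(*)" "\<lambda>b. e (SA b)" x] by (simp add: lin_comp[OF SA_lin e_lin])
  also have "\<dots> = e (Sw d x (\<lambda>a b. bul a (SA b)))" by (simp add: Sw_lin_out[OF e_lin] e_bul)
  also have "\<dots> = e x" by (simp add: SA_r lin_scale[OF e_lin])
  finally show ?thesis .
qed

lemma SA_u: "SA u = u"
  using SA_r[of u] Sw_u[where s=sc and F="\<lambda>a b. bul a (SA b)"]
  by (simp add: bul_u1 vs1[OF vs] bil_def LR3)

lemma m_recover: "m x z = Sw d x (\<lambda>a b. bul a (act (SA b) z))"
proof -
  have "Sw d x (\<lambda>a b. bul a (act (SA b) z)) = Sw3 d x (\<lambda>p q b. m p (act q (act (SA b) z)))"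
    by (simp add: S3_1 bul_def)
  also have "\<dots> = Sw d x (\<lambda>p w. Sw d w (\<lambda>q b. m p (act q (act (SA b) z))))"
    by (rule S3_2[OF vs]) (auto simp: ml_defs intro!: LR3)
  also have "\<dots> = Sw d x (\<lambda>p w. sc (e w) (m p z))"
    by (simp add: pull2 P2 SA_r act_sc_u scl)
  also have "\<dots> = m x z" by (rule counit1) (auto intro!: LR3)
  finally show ?thesis by simp
qed

lemma hopf_bul: "is_hopf sc bul u d e SA"
  unfolding is_hopf_def is_bialgebra_def is_antipode_def is_algebra_def
proof (intro conjI allI)
  show "vector_space sc" by (rule vs)
  show "bilinH sc bul" using bil_bul unfolding bilinH_bil .
  show "is_coalgebra sc d e" by (rule coal)
  show "teq2 sc (d u) [(u, u)]" using P4 by blast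
  show "e u = 1" by simp
  show "Vector_Spaces.linear sc sc SA" by (rule SA_lin)
  fix x y z
  show "bul (bul x y) z = bul x (bul y z)" by (rule bul_assoc)
  show "bul u x = x" by (simp add: bul_u1)
  show "bul x u = x" by (simp add: bul_u2)
  show "e (bul x y) = e x * e y" by (rule e_bul)
  show "sum_list (map (\<lambda>(a, b). bul a (SA b)) (d x)) = sc (e x) u" using SA_r unfolding Sw_def .
  show "sum_list (map (\<lambda>(a, b). bul (SA a) b) (d x)) = sc (e x) u" using SA_l unfolding Sw_def .
  show "teq2 sc (d (bul x y)) (concat (map (\<lambda>(a, b). map (\<lambda>(c, d). (bul a c, bul b d)) (d y)) (d x)))"
    unfolding teq2_def bilinK_bil
  proof (intro allI impI)
    fix B :: "'h \<Rightarrow> 'h \<Rightarrow> 'k" assume B: "bil sc (*) B"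
    show "sum_list (map (\<lambda>(a, b). B a b) (d (bul x y))) =
          sum_list (map (\<lambda>(a, b). B a b) (concat (map (\<lambda>(a, b). map (\<lambda>(c, d). (bul a c, bul b d)) (d y)) (d x))))"
      using comult_bul[OF vs_field B, of x y] unfolding Sw_def
      by (simp add: sum_list_concat' map_concat o_def case_prod_beta')
  qed
qed


end

sublocale ydph \<subseteq> H: hopfl sc d e bul u SA
  by unfold_locales (rule hopf_bul)

context ydph begin

lemma bul_sc_u1: "bul (sc c u) y = sc c y" by (simp add: scl2 bul_u1)
lemma bul_sc_u2: "bul y (sc c u) = sc c y" by (simp add: scl2 bul_u2)

lemma CA: "Sw d w (\<lambda>a1 p. Sw d v (\<lambda>b1 r. bul (act a1 b1) (SA (act p r)))) = sc (e w * e v) u"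
proof -
  have "Sw d w (\<lambda>a1 p. Sw d v (\<lambda>b1 r. bul (act a1 b1) (SA (act p r)))) = Sw d (act w v) (\<lambda>X Y. bul X (SA Y))"
    by (rule act_c[symmetric, OF vs]) (auto intro!: LR3 simp: bil_def)
  then show ?thesis by (simp add: SA_r e_act)
qed

lemma ract_exp: "ract x y = Sw d x (\<lambda>x1 x2. Sw d y (\<lambda>y1 y2. bul (bul (SA (act x1 y1)) x2) y2))"
  by (simp add: ract_def)

lemma bil_ract: "bil sc sc ract"
  unfolding bil_def ract_def by (auto intro!: LR3 Sw_arg simp: bil_def)

lemmas LR4 = LR3 L_bil1[OF bil_ract] L_bil2[OF bil_ract]
lemmas scl3 = scl2 bil_scale1[OF bil_ract] bil_scale2[OF bil_ract]
lemmas pull3 = pull2 Sw_pull1[OF bil_ract] Sw_pull2[OF bil_ract]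

lemma compat_left: "act a (bul b c) = Sw d a (\<lambda>a1 a2. Sw d b (\<lambda>b1 b2. bul (act a1 b1) (act (ract a2 b2) c)))"
proof -
  have "Sw d a (\<lambda>a1 a2. Sw d b (\<lambda>b1 b2. bul (act a1 b1) (act (ract a2 b2) c)))
      = Sw d a (\<lambda>a1 a2. Sw d b (\<lambda>b1 b2. Sw d a2 (\<lambda>p q. Sw d b2 (\<lambda>r t. bul (act a1 b1) (act (bul (bul (SA (act p r)) q) t) c)))))"
    by (simp add: ract_def pull3)
  also have "\<dots> = Sw d a (\<lambda>a1 a2. Sw d b (\<lambda>b1 b2. Sw d a2 (\<lambda>p q. Sw d b2 (\<lambda>r t. bul (act a1 b1) (act (SA (act p r)) (act q (act t c)))))))"
    by (simp add: P2 bul_assoc)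
  also have "\<dots> = Sw d a (\<lambda>a' q. Sw d b (\<lambda>b' t. Sw d a' (\<lambda>a1 p. Sw d b' (\<lambda>b1 r. bul (act a1 b1) (act (SA (act p r)) (act q (act t c)))))))"
    by (rule regroup2[OF vs]) (auto simp: ml_defs intro!: LR4)
  also have "\<dots> = Sw d a (\<lambda>a' q. Sw d b (\<lambda>b' t. m (act a' b') (act q (act t c))))"
  proof (intro Sw_cong)
    fix a' q b' t
    show "Sw d a' (\<lambda>a1 p. Sw d b' (\<lambda>b1 r. bul (act a1 b1) (act (SA (act p r)) (act q (act t c))))) = m (act a' b') (act q (act t c))"
      by (subst m_recover, rule act_c[symmetric, OF vs]) (auto intro!: LR4 simp: bil_def)
  qed
  also have "\<dots> = Sw d b (\<lambda>b' t. Sw d a (\<lambda>a' q. m (act a' b') (act q (act t c))))"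
    by (rule Sw_swap)
  also have "\<dots> = act a (bul b c)"
    by (simp add: P1'[symmetric] bul_def pull)
  finally show ?thesis by simp
qed

lemma bul_mp: "bul a b = Sw d a (\<lambda>a1 a2. Sw d b (\<lambda>b1 b2. bul (act a1 b1) (ract a2 b2)))"
proof -
  have "Sw d a (\<lambda>a1 a2. Sw d b (\<lambda>b1 b2. bul (act a1 b1) (ract a2 b2)))
      = Sw d a (\<lambda>a1 a2. Sw d b (\<lambda>b1 b2. Sw d a2 (\<lambda>p q. Sw d b2 (\<lambda>r t. bul (act a1 b1) (bul (bul (SA (act p r)) q) t)))))"
    by (simp add: ract_def pull3)
  also have "\<dots> = Sw d a (\<lambda>a1 a2. Sw d b (\<lambda>b1 b2. Sw d a2 (\<lambda>p q. Sw d b2 (\<lambda>r t. bul (bul (act a1 b1) (SA (act p r))) (bul q t)))))"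
    by (simp add: bul_assoc)
  also have "\<dots> = Sw d a (\<lambda>a' q. Sw d b (\<lambda>b' t. Sw d a' (\<lambda>a1 p. Sw d b' (\<lambda>b1 r. bul (bul (act a1 b1) (SA (act p r))) (bul q t)))))"
    by (rule regroup2[OF vs]) (auto simp: ml_defs intro!: LR4)
  also have "\<dots> = Sw d a (\<lambda>a' q. Sw d b (\<lambda>b' t. sc (e a') (sc (e b') (bul q t))))"
    by (simp add: Sw_pull1[OF bil_bul] CA bul_sc_u1 vsS[OF vs])
  also have "\<dots> = Sw d a (\<lambda>a' q. sc (e a') (bul q b))"
    by (simp add: Sw_pull_scale[OF vs] counit2 LR4)
  also have "\<dots> = bul a b" by (rule counit2) (auto intro!: LR4)
  finally show ?thesis by simp
qed


lemma LemR: "Sw d Z (\<lambda>X Y. bul (ract a X) (bul (SA Y) W)) = Sw d a (\<lambda>a1 a2. bul (bul (SA (act a1 Z)) a2) W)"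
proof -
  have "Sw d Z (\<lambda>X Y. bul (ract a X) (bul (SA Y) W))
      = Sw d Z (\<lambda>X Y. Sw d a (\<lambda>a1 a2. Sw d X (\<lambda>X1 X2. bul (bul (bul (SA (act a1 X1)) a2) X2) (bul (SA Y) W))))"
    by (simp add: ract_def pull3)
  also have "\<dots> = Sw d Z (\<lambda>X Y. Sw d X (\<lambda>X1 X2. Sw d a (\<lambda>a1 a2. bul (bul (bul (SA (act a1 X1)) a2) X2) (bul (SA Y) W))))"
    by (rule Sw_cong, rule Sw_swap)
  also have "\<dots> = Sw3 d Z (\<lambda>X1 X2 Y. Sw d a (\<lambda>a1 a2. bul (bul (bul (SA (act a1 X1)) a2) X2) (bul (SA Y) W)))"
    by (simp add: S3_1)
  also have "\<dots> = Sw d Z (\<lambda>X1 w. Sw d w (\<lambda>X2 Y. Sw d a (\<lambda>a1 a2. bul (bul (bul (SA (act a1 X1)) a2) X2) (bul (SA Y) W))))"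
    by (rule S3_2[OF vs]) (auto simp: ml_defs intro!: LR4)
  also have "\<dots> = Sw d Z (\<lambda>X1 w. sc (e w) (Sw d a (\<lambda>a1 a2. bul (bul (SA (act a1 X1)) a2) W)))"
  proof (rule Sw_cong)
    fix X1 w
    have "Sw d w (\<lambda>X2 Y. Sw d a (\<lambda>a1 a2. bul (bul (bul (SA (act a1 X1)) a2) X2) (bul (SA Y) W)))
        = Sw d a (\<lambda>a1 a2. Sw d w (\<lambda>X2 Y. bul (bul (SA (act a1 X1)) a2) (bul (bul X2 (SA Y)) W)))"
      by (subst Sw_swap, simp add: bul_assoc)
    also have "\<dots> = Sw d a (\<lambda>a1 a2. bul (bul (SA (act a1 X1)) a2) (bul (sc (e w) u) W))"
      by (simp add: pull2 SA_r)
    also have "\<dots> = sc (e w) (Sw d a (\<lambda>a1 a2. bul (bul (SA (act a1 X1)) a2) W))"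
      by (simp add: bul_sc_u1 scl2 Sw_pull_scale[OF vs])
    finally show "Sw d w (\<lambda>X2 Y. Sw d a (\<lambda>a1 a2. bul (bul (bul (SA (act a1 X1)) a2) X2) (bul (SA Y) W))) = sc (e w) (Sw d a (\<lambda>a1 a2. bul (bul (SA (act a1 X1)) a2) W))" .
  qed
  also have "\<dots> = Sw d a (\<lambda>a1 a2. bul (bul (SA (act a1 Z)) a2) W)"
    by (rule counit1) (auto intro!: LR4)
  finally show ?thesis .
qed

lemma compat_right: "ract (bul a b) c = Sw d b (\<lambda>b1 b2. Sw d c (\<lambda>c1 c2. bul (ract a (act b1 c1)) (ract b2 c2)))"
proof -
  have "Sw d b (\<lambda>b1 b2. Sw d c (\<lambda>c1 c2. bul (ract a (act b1 c1)) (ract b2 c2)))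
     = Sw d b (\<lambda>b1 b2. Sw d c (\<lambda>c1 c2. Sw d b2 (\<lambda>p q. Sw d c2 (\<lambda>r t. bul (ract a (act b1 c1)) (bul (bul (SA (act p r)) q) t)))))"
    by (intro Sw_cong, subst (2) ract_exp, simp add: pull3)
  also have "\<dots> = Sw d b (\<lambda>b' q. Sw d c (\<lambda>c' t. Sw d b' (\<lambda>b1 p. Sw d c' (\<lambda>c1 r. bul (ract a (act b1 c1)) (bul (bul (SA (act p r)) q) t)))))"
    by (rule regroup2[OF vs]) (auto simp: ml_defs intro!: LR4)
  also have "\<dots> = Sw d b (\<lambda>b' q. Sw d c (\<lambda>c' t. Sw d a (\<lambda>a1 a2. bul (bul (SA (act a1 (act b' c'))) a2) (bul q t))))"
  proof (intro Sw_cong)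
    fix b' q c' t
    have "Sw d b' (\<lambda>b1 p. Sw d c' (\<lambda>c1 r. bul (ract a (act b1 c1)) (bul (bul (SA (act p r)) q) t)))
        = Sw d b' (\<lambda>b1 p. Sw d c' (\<lambda>c1 r. bul (ract a (act b1 c1)) (bul (SA (act p r)) (bul q t))))"
      by (simp add: bul_assoc)
    also have "\<dots> = Sw d (act b' c') (\<lambda>X Y. bul (ract a X) (bul (SA Y) (bul q t)))"
      by (rule act_c[symmetric, OF vs]) (auto intro!: LR4 simp: bil_def)
    also have "\<dots> = Sw d a (\<lambda>a1 a2. bul (bul (SA (act a1 (act b' c'))) a2) (bul q t))"
      by (rule LemR)
    finally show "Sw d b' (\<lambda>b1 p. Sw d c' (\<lambda>c1 r. bul (ract a (act b1 c1)) (bul (bul (SA (act p r)) q) t))) = Sw d a (\<lambda>a1 a2. bul (bul (SA (act a1 (act b' c'))) a2) (bul q t))" .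
  qed
  also have "\<dots> = Sw d a (\<lambda>a1 a2. Sw d b (\<lambda>b' q. Sw d c (\<lambda>c' t. bul (bul (SA (act a1 (act b' c'))) a2) (bul q t))))"
    by (subst Sw_swap, rule Sw_cong, subst Sw_swap, rule refl)
  also have "\<dots> = Sw d a (\<lambda>a1 a2. Sw d b (\<lambda>b' q. Sw d c (\<lambda>c' t. bul (bul (SA (act (bul a1 b') c')) (bul a2 q)) t)))"
    by (simp add: P2 bul_assoc)
  also have "\<dots> = ract (bul a b) c"
    by (subst ract_exp, rule comult_bul[symmetric, OF vs]) (auto intro!: LR4 simp: bil_def)
  finally show ?thesis by simp
qed

lemma ract_u2: "ract x u = x"
proof -
  have h: "\<And>x1 x2. Sw d u (\<lambda>y1 y2. bul (bul (SA (act x1 y1)) x2) y2) = bul (bul (SA (act x1 u)) x2) u"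
    by (rule Sw_u[OF vs]) (auto intro!: LR4 simp: bil_def)
  have "ract x u = Sw d x (\<lambda>x1 x2. bul (bul (SA (act x1 u)) x2) u)"
    by (simp add: ract_exp h)
  also have "\<dots> = Sw d x (\<lambda>x1 x2. sc (e x1) x2)" by (simp add: act_x_u scl2 SA_u bul_u1 bul_u2)
  also have "\<dots> = x" by (rule counit2[OF L_id[OF vs]])
  finally show ?thesis .
qed

lemma ract_u1: "ract u y = sc (e y) u"
proof -
  have "ract u y = Sw d u (\<lambda>x1 x2. Sw d y (\<lambda>y1 y2. bul (bul (SA (act x1 y1)) x2) y2))"
    by (simp add: ract_exp)
  also have "\<dots> = Sw d y (\<lambda>y1 y2. bul (bul (SA (act u y1)) u) y2)"
    by (rule Sw_u[OF vs]) (auto intro!: LR4 simp: bil_def)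
  also have "\<dots> = sc (e y) u" by (simp add: bul_u2 SA_l)
  finally show ?thesis .
qed

lemma e_count: "Sw d x (\<lambda>a b. e a * e b) = e x"
  using counit2[OF e_lin, of x] by simp

lemma e_ract: "e (ract a b) = e a * e b"
proof -
  have "e (ract a b) = Sw d a (\<lambda>x1 x2. Sw d b (\<lambda>y1 y2. (e x1 * e x2) * (e y1 * e y2)))"
    by (simp add: ract_exp Sw_lin_out[OF e_lin] e_bul e_SA e_act mult_ac)
  also have "\<dots> = e a * e b"
    by (simp add: Sw_mult_left e_count Sw_mult_right)
  finally show ?thesis .
qed

lemma P6b': assumes "vector_space s" "bil sc s G"
  shows "Sw d x (\<lambda>x1 x2. Sw d y (\<lambda>y1 y2. G (act x1 y1) (ract x2 y2))) = Sw d x (\<lambda>x1 x2. Sw d y (\<lambda>y1 y2. G (act x2 y2) (ract x1 y1)))"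
  using teq2_transfer[OF P6b[rule_format] assms] unfolding Sw_def
  by (simp add: sum_list_concat' map_concat o_def case_prod_beta')

lemma CR1: assumes s: "vector_space s" and F: "bil sc s F"
  shows "Sw d (bul (bul (SA X) x2) y2) F = Sw d X (\<lambda>X1 X2. Sw d x2 (\<lambda>r t. Sw d y2 (\<lambda>p q. F (bul (bul (SA X2) r) p) (bul (bul (SA X1) t) q))))"
proof -
  note LRF = LR4 L_bil1[OF F] L_bil2[OF F] s
  have "Sw d (bul (bul (SA X) x2) y2) F = Sw d (bul (SA X) x2) (\<lambda>P Q. Sw d y2 (\<lambda>p q. F (bul P p) (bul Q q)))"
    by (rule comult_bul[OF s F])
  also have "\<dots> = Sw d (SA X) (\<lambda>P1 P2. Sw d x2 (\<lambda>r t. Sw d y2 (\<lambda>p q. F (bul (bul P1 r) p) (bul (bul P2 t) q))))"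
    by (rule comult_bul[OF s]) (auto intro!: LRF simp: bil_def)
  also have "\<dots> = Sw d X (\<lambda>X1 X2. Sw d x2 (\<lambda>r t. Sw d y2 (\<lambda>p q. F (bul (bul (SA X2) r) p) (bul (bul (SA X1) t) q))))"
    by (rule P6a'[OF s]) (auto intro!: LRF simp: bil_def)
  finally show ?thesis .
qed

lemma comult_ract: assumes s: "vector_space s" and F: "bil sc s F"
  shows "Sw d (ract a b) F = Sw d a (\<lambda>a1 a2. Sw d b (\<lambda>b1 b2. F (ract a1 b1) (ract a2 b2)))"
proof -
  note LRF = LR4 L_bil1[OF F] L_bil2[OF F] s
  have lin: "Vector_Spaces.linear sc s (\<lambda>z. Sw d z F)" by (rule Sw_arg[OF s F])
  have "Sw d (ract a b) F = Sw d a (\<lambda>x1 x2. Sw d b (\<lambda>y1 y2. Sw d (bul (bul (SA (act x1 y1)) x2) y2) F))"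
    by (simp add: ract_exp Sw_lin_out[OF lin])
  also have "\<dots> = Sw d a (\<lambda>x1 x2. Sw d b (\<lambda>y1 y2. Sw d x1 (\<lambda>g h. Sw d y1 (\<lambda>g' h'. Sw d x2 (\<lambda>r t. Sw d y2 (\<lambda>p q.
        F (bul (bul (SA (act h h')) r) p) (bul (bul (SA (act g g')) t) q)))))))"
    by (intro Sw_cong, subst CR1[OF s F], rule act_c[OF s]) (auto intro!: LRF simp: bil_def)
  also have "\<dots> = Sw d a (\<lambda>z t. Sw d b (\<lambda>z' q. Sw d z (\<lambda>g w. Sw d z' (\<lambda>g' v. Sw d w (\<lambda>h r. Sw d v (\<lambda>h' p.
        F (bul (bul (SA (act h h')) r) p) (bul (bul (SA (act g g')) t) q)))))))"
    by (rule regroup4[OF s]) (auto simp: ml_defs intro!: LRF)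
  also have "\<dots> = Sw d a (\<lambda>z t. Sw d b (\<lambda>z' q. Sw d z (\<lambda>g w. Sw d z' (\<lambda>g' v. F (ract w v) (bul (bul (SA (act g g')) t) q)))))"
    by (simp add: ract_def Sw_pull1[OF F])
  also have "\<dots> = Sw d a (\<lambda>z t. Sw d b (\<lambda>z' q. Sw d z (\<lambda>g w. Sw d z' (\<lambda>g' v. F (ract g g') (bul (bul (SA (act w v)) t) q)))))"
    by (intro Sw_cong P6b'[OF s]) (auto intro!: LRF simp: bil_def)
  also have "\<dots> = Sw d a (\<lambda>a1 a2. Sw d b (\<lambda>b1 b2. Sw d a2 (\<lambda>w t. Sw d b2 (\<lambda>v q. F (ract a1 b1) (bul (bul (SA (act w v)) t) q)))))"
    by (rule regroup2[symmetric, OF s]) (auto simp: ml_defs intro!: LRF)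
  also have "\<dots> = Sw d a (\<lambda>a1 a2. Sw d b (\<lambda>b1 b2. F (ract a1 b1) (ract a2 b2)))"
    by (simp add: ract_def Sw_pull2[OF F])
  finally show ?thesis .
qed


lemma ract_act: "ract a (bul b c) = ract (ract a b) c"
proof -
  have "ract a (bul b c) = Sw d a (\<lambda>a1 a2. Sw d b (\<lambda>b1 b2. Sw d c (\<lambda>c1 c2. bul (bul (SA (act a1 (bul b1 c1))) a2) (bul b2 c2))))"
    by (subst ract_exp, intro Sw_cong, rule comult_bul[OF vs]) (auto intro!: LR4 simp: bil_def)
  also have "\<dots> = Sw d a (\<lambda>a1 a2. Sw d b (\<lambda>b1 b2. Sw d c (\<lambda>c1 c2. Sw d a1 (\<lambda>p q. Sw d b1 (\<lambda>r t.
       bul (bul (bul (SA (act (ract q t) c1)) (SA (act p r))) a2) (bul b2 c2))))))"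
    by (simp add: compat_left pull3 H.T_anti_mult[symmetric])
  also have "\<dots> = Sw d a (\<lambda>a1 a2. Sw d b (\<lambda>b1 b2. Sw d c (\<lambda>c1 c2. Sw d a1 (\<lambda>p q. Sw d b1 (\<lambda>r t.
       bul (bul (bul (SA (act (ract p r) c1)) (SA (act q t))) a2) (bul b2 c2))))))"
  proof (rule Sw_cong, rule Sw_cong, rule Sw_cong)
    fix a1 a2 b1 b2 c1 c2
    show "Sw d a1 (\<lambda>p q. Sw d b1 (\<lambda>r t. bul (bul (bul (SA (act (ract q t) c1)) (SA (act p r))) a2) (bul b2 c2)))
        = Sw d a1 (\<lambda>p q. Sw d b1 (\<lambda>r t. bul (bul (bul (SA (act (ract p r) c1)) (SA (act q t))) a2) (bul b2 c2)))"
      by (rule P6b'[OF vs, of "\<lambda>X Y. bul (bul (bul (SA (act Y c1)) (SA X)) a2) (bul b2 c2)", simplified])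
        (auto intro!: LR4 simp: bil_def)
  qed
  also have "\<dots> = Sw d a (\<lambda>a1 a2. Sw d c (\<lambda>c1 c2. Sw d b (\<lambda>b1 b2. Sw d a1 (\<lambda>p q. Sw d b1 (\<lambda>r t.
       bul (bul (bul (SA (act (ract p r) c1)) (SA (act q t))) a2) (bul b2 c2))))))"
    by (rule Sw_cong, rule Sw_swap)
  also have "\<dots> = Sw d c (\<lambda>c1 c2. Sw d a (\<lambda>a1 a2. Sw d b (\<lambda>b1 b2. Sw d a1 (\<lambda>p q. Sw d b1 (\<lambda>r t.
       bul (bul (bul (SA (act (ract p r) c1)) (SA (act q t))) a2) (bul b2 c2))))))"
    by (rule Sw_swap)
  also have "\<dots> = Sw d c (\<lambda>c1 c2. Sw d a (\<lambda>p w. Sw d b (\<lambda>r v. Sw d w (\<lambda>q a2. Sw d v (\<lambda>t b2.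
       bul (bul (bul (SA (act (ract p r) c1)) (SA (act q t))) a2) (bul b2 c2))))))"
    by (rule Sw_cong, rule regroup2L[OF vs]) (auto simp: ml_defs intro!: LR4)
  also have "\<dots> = Sw d c (\<lambda>c1 c2. Sw d a (\<lambda>p w. Sw d b (\<lambda>r v. Sw d w (\<lambda>q a2. Sw d v (\<lambda>t b2.
       bul (bul (SA (act (ract p r) c1)) (bul (bul (SA (act q t)) a2) b2)) c2)))))"
    by (simp add: bul_assoc)
  also have "\<dots> = Sw d c (\<lambda>c1 c2. Sw d a (\<lambda>p w. Sw d b (\<lambda>r v. bul (bul (SA (act (ract p r) c1)) (ract w v)) c2)))"
    by (simp add: ract_def pull3)
  also have "\<dots> = Sw d a (\<lambda>p w. Sw d c (\<lambda>c1 c2. Sw d b (\<lambda>r v. bul (bul (SA (act (ract p r) c1)) (ract w v)) c2)))"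
    by (rule Sw_swap)
  also have "\<dots> = Sw d a (\<lambda>p w. Sw d b (\<lambda>r v. Sw d c (\<lambda>c1 c2. bul (bul (SA (act (ract p r) c1)) (ract w v)) c2)))"
    by (rule Sw_cong, rule Sw_swap)
  also have "\<dots> = ract (ract a b) c"
    by (subst (2) ract_exp, rule comult_ract[symmetric, OF vs]) (auto intro!: LR4 simp: bil_def)
  finally show ?thesis .
qed

lemma Sw_concat: "sum_list (concat (map (\<lambda>(a1,a2). map (\<lambda>(b1,b2). K a1 a2 b1 b2) (d b)) (d a))) = Sw d a (\<lambda>a1 a2. Sw d b (\<lambda>b1 b2. K a1 a2 b1 b2))"
  unfolding Sw_def by (simp add: sum_list_concat' o_def case_prod_beta')

lemma teq2I: assumes "\<And>B. bil sc (*) B \<Longrightarrow> sum_list (map (\<lambda>(a,b). B a b) xs) = sum_list (map (\<lambda>(a,b). B a b) ys)"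
  shows "teq2 sc xs ys" using assms unfolding teq2_def bilinK_bil by blast

lemma is_MP_toMP: "is_MP sc \<lparr>bmul = bul, bone = u, bdelta = d, beps = e, bT = SA, lact = act, ract = ract\<rparr>"
  unfolding is_MP_def Let_def mpair.simps
proof (intro conjI allI)
  show "is_hopf sc bul u d e SA" by (rule hopf_bul)
  show "bilinH sc act" by (rule actb)
  show "bilinH sc ract" using bil_ract unfolding bilinH_bil .
  fix a b c
  show "act u b = b" by simp
  show "act (bul a b) c = act a (act b c)" by (simp add: P2)
  show "teq2 sc (d (act a b)) (concat (map (\<lambda>(a1, a2). map (\<lambda>(b1, b2). (act a1 b1, act a2 b2)) (d b)) (d a)))"
    using actc by blast
  show "e (act a b) = e a * e b" by (rule e_act)
  show "ract a u = a" by (rule ract_u2)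
  show "ract a (bul b c) = ract (ract a b) c" by (rule ract_act)
  show "teq2 sc (d (ract a b)) (concat (map (\<lambda>(a1, a2). map (\<lambda>(b1, b2). (ract a1 b1, ract a2 b2)) (d b)) (d a)))"
  proof (rule teq2I)
    fix B :: "'h \<Rightarrow> 'h \<Rightarrow> 'k" assume B: "bil sc (*) B"
    show "sum_list (map (\<lambda>(a,b). B a b) (d (ract a b))) = sum_list (map (\<lambda>(a,b). B a b) (concat (map (\<lambda>(a1, a2). map (\<lambda>(b1, b2). (ract a1 b1, ract a2 b2)) (d b)) (d a))))"
      using comult_ract[OF vs_field B, of a b] unfolding Sw_def
      by (simp add: sum_list_concat' map_concat o_def case_prod_beta')
  qed
  show "e (ract a b) = e a * e b" by (rule e_ract)
  show "act a u = sc (e a) u" by (rule act_x_u)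
  show "ract u a = sc (e a) u" by (rule ract_u1)
  show "act a (bul b c) = sum_list (concat (map (\<lambda>(a1, a2). map (\<lambda>(b1, b2). bul (act a1 b1) (act (ract a2 b2) c)) (d b)) (d a)))"
    by (simp add: Sw_concat compat_left)
  show "ract (bul a b) c = sum_list (concat (map (\<lambda>(b1, b2). map (\<lambda>(c1, c2). bul (ract a (act b1 c1)) (ract b2 c2)) (d c)) (d b)))"
    by (simp add: Sw_concat compat_right)
  show "bul a b = sum_list (concat (map (\<lambda>(a1, a2). map (\<lambda>(b1, b2). bul (act a1 b1) (ract a2 b2)) (d b)) (d a)))"
    by (simp add: Sw_concat bul_mp[symmetric])
qed

end


lemma YD_locale:
  assumes "is_YDPH sc A"
  shows "ydph sc (ydelta A) (yeps A) (ymul A) (yone A) (yS A) (yact A) (betaOf sc A) (bulletOf A) (SOf sc A) (ractOf sc A)"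
proof -
  have ex: "\<exists>b. is_conv_inv sc (ydelta A) (yeps A) (yact A) b" using assms unfolding is_YDPH_def Let_def by blast
  have ci: "is_conv_inv sc (ydelta A) (yeps A) (yact A) (betaOf sc A)"
    unfolding betaOf_def by (rule someI_ex[OF ex])
  have be: "bulletOf A = (\<lambda>x y. Sw (ydelta A) x (\<lambda>a b. ymul A a (yact A b y)))"
    by (simp add: bulletOf_def Sw_def fun_eq_iff)
  have se: "SOf sc A = (\<lambda>x. Sw (ydelta A) x (\<lambda>a b. betaOf sc A a (yS A b)))"
    by (simp add: SOf_def Sw_def fun_eq_iff)
  have re: "ractOf sc A = (\<lambda>x y. Sw (ydelta A) x (\<lambda>x1 x2. Sw (ydelta A) y (\<lambda>y1 y2. bulletOf A (bulletOf A (SOf sc A (yact A x1 y1)) x2) y2)))"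
    unfolding ractOf_def fun_eq_iff Sw_def by (simp add: sum_list_concat' o_def case_prod_beta')
  have Y: "is_algebra sc (ymul A) (yone A) \<and> is_coalgebra sc (ydelta A) (yeps A)
       \<and> is_antipode sc (ymul A) (yone A) (ydelta A) (yeps A) (yS A) \<and> bilinH sc (yact A)" 
    using assms unfolding is_YDPH_def Let_def by blast
  show ?thesis
    apply (unfold_locales)
    using assms ci be se re Y unfolding is_YDPH_def Let_def by blast+
qed

theorem part1:
  assumes "is_YDPH sc A"
  shows "is_MP sc (toMP sc A) \<and> toYD (toMP sc A) = A"
proof -
  interpret Y: ydph sc "ydelta A" "yeps A" "ymul A" "yone A" "yS A" "yact A" "betaOf sc A" "bulletOf A" "SOf sc A" "ractOf sc A"
    by (rule YD_locale[OF assms])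
  have 1: "is_MP sc (toMP sc A)" unfolding toMP_def by (rule Y.is_MP_toMP)
  have m: "(\<lambda>a b. sum_list (map (\<lambda>(a1,a2). bulletOf A a1 (yact A (SOf sc A a2) b)) (ydelta A a))) = ymul A"
    using Y.m_recover unfolding Sw_def by (intro ext) simp
  have S: "(\<lambda>a. sum_list (map (\<lambda>(a1,a2). yact A a1 (SOf sc A a2)) (ydelta A a))) = yS A"
    using Y.act_SA unfolding Sw_def by (intro ext) simp
  have 2: "toYD (toMP sc A) = A"
    unfolding toYD_def toMP_def using m S by (cases A) simp
  show ?thesis using 1 2 by simp
qed



locale mpl = hopfl sc d e mul one T
  for sc :: "'k::field \<Rightarrow> 'h::ab_group_add \<Rightarrow> 'h" and d e mul one T +
  fixes la ra
  assumes la_bil: "bilinH sc la" and la_one: "\<forall>b. la one b = b" and la_mul: "\<forall>a b c. la (mul a b) c = la a (la b c)"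
    and la_c: "\<forall>a b. teq2 sc (d (la a b)) (concat (map (\<lambda>(a1,a2). map (\<lambda>(b1,b2). (la a1 b1, la a2 b2)) (d b)) (d a)))"
    and la_e: "\<forall>a b. e (la a b) = e a * e b"
    and ra_bil: "bilinH sc ra" and ra_one: "\<forall>a. ra a one = a" and ra_mul: "\<forall>a b c. ra a (mul b c) = ra (ra a b) c"
    and ra_c: "\<forall>a b. teq2 sc (d (ra a b)) (concat (map (\<lambda>(a1,a2). map (\<lambda>(b1,b2). (ra a1 b1, ra a2 b2)) (d b)) (d a)))"
    and ra_e: "\<forall>a b. e (ra a b) = e a * e b"
    and la_u: "\<forall>a. la a one = sc (e a) one"
    and ra_u: "\<forall>a. ra one a = sc (e a) one"
    and mp1: "\<forall>a b c. la a (mul b c) = sum_list (concat (map (\<lambda>(a1,a2). map (\<lambda>(b1,b2).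
                     mul (la a1 b1) (la (ra a2 b2) c)) (d b)) (d a)))"
    and mp2: "\<forall>a b c. ra (mul a b) c = sum_list (concat (map (\<lambda>(b1,b2). map (\<lambda>(c1,c2).
                     mul (ra a (la b1 c1)) (ra b2 c2)) (d c)) (d b)))"
    and mp3: "\<forall>a b. mul a b = sum_list (concat (map (\<lambda>(a1,a2). map (\<lambda>(b1,b2).
                     mul (la a1 b1) (ra a2 b2)) (d b)) (d a)))"
begin

lemma Sw_concat: "sum_list (concat (map (\<lambda>(a1,a2). map (\<lambda>(b1,b2). K a1 a2 b1 b2) (d b)) (d a))) = Sw d a (\<lambda>a1 a2. Sw d b (\<lambda>b1 b2. K a1 a2 b1 b2))"
  unfolding Sw_def by (simp add: sum_list_concat' o_def case_prod_beta')

lemma bil_la: "bil sc sc la" using la_bil unfolding bilinH_bil .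
lemma bil_ra: "bil sc sc ra" using ra_bil unfolding bilinH_bil .
lemma la_one'[simp]: "la one b = b" using la_one by blast
lemma la_mul': "la (mul a b) c = la a (la b c)" using la_mul by blast
lemma ra_one'[simp]: "ra a one = a" using ra_one by blast
lemma ra_mul': "ra a (mul b c) = ra (ra a b) c" using ra_mul by blast
lemma la_e': "e (la a b) = e a * e b" using la_e by blast
lemma ra_e': "e (ra a b) = e a * e b" using ra_e by blast
lemma la_u': "la a one = sc (e a) one" using la_u by blast
lemma ra_u': "ra one a = sc (e a) one" using ra_u by blast
lemma mp1': "la a (mul b c) = Sw d a (\<lambda>a1 a2. Sw d b (\<lambda>b1 b2. mul (la a1 b1) (la (ra a2 b2) c)))"
  using mp1 Sw_concat by metis
lemma mp2': "ra (mul a b) c = Sw d b (\<lambda>b1 b2. Sw d c (\<lambda>c1 c2. mul (ra a (la b1 c1)) (ra b2 c2)))"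
  using mp2 Sw_concat by metis
lemma mp3': "mul a b = Sw d a (\<lambda>a1 a2. Sw d b (\<lambda>b1 b2. mul (la a1 b1) (ra a2 b2)))"
  using mp3 Sw_concat by metis

lemma la_c': "vector_space s \<Longrightarrow> bil sc s F \<Longrightarrow> Sw d (la x y) F = Sw d x (\<lambda>x1 x2. Sw d y (\<lambda>y1 y2. F (la x1 y1) (la x2 y2)))"
  using teq2_transfer[OF la_c[rule_format]] unfolding Sw_def by (simp add: sum_list_concat' map_concat o_def case_prod_beta')
lemma ra_c': "vector_space s \<Longrightarrow> bil sc s F \<Longrightarrow> Sw d (ra x y) F = Sw d x (\<lambda>x1 x2. Sw d y (\<lambda>y1 y2. F (ra x1 y1) (ra x2 y2)))"
  using teq2_transfer[OF ra_c[rule_format]] unfolding Sw_def by (simp add: sum_list_concat' map_concat o_def case_prod_beta')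

lemmas LRm = LRh L_bil1[OF bil_la] L_bil2[OF bil_la] L_bil1[OF bil_ra] L_bil2[OF bil_ra]
lemmas sclm = sclh bil_scale1[OF bil_la] bil_scale2[OF bil_la] bil_scale1[OF bil_ra] bil_scale2[OF bil_ra]
lemmas pullm = pullh Sw_pull1[OF bil_la] Sw_pull2[OF bil_la] Sw_pull1[OF bil_ra] Sw_pull2[OF bil_ra]

lemma la_sc1: "la (sc c one) y = sc c y" by (simp add: sclm)
lemma mul_sc1: "mul (sc c one) y = sc c y" by (simp add: sclm)
lemma mul_sc2: "mul y (sc c one) = sc c y" by (simp add: sclm)

lemma CT: "Sw d w (\<lambda>a1 p. Sw d v (\<lambda>b1 r. mul (T (la a1 b1)) (la p r))) = sc (e w * e v) one"
proof -
  have "Sw d w (\<lambda>a1 p. Sw d v (\<lambda>b1 r. mul (T (la a1 b1)) (la p r))) = Sw d (la w v) (\<lambda>X Y. mul (T X) Y)"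
    by (rule la_c'[symmetric, OF vs]) (auto intro!: LRm simp: bil_def)
  then show ?thesis by (simp add: T_l la_e')
qed

lemma ra_formula: "ra x b = Sw d x (\<lambda>x1 x2. Sw d b (\<lambda>b1 b2. mul (mul (T (la x1 b1)) x2) b2))"
proof -
  have "Sw d x (\<lambda>x1 x2. Sw d b (\<lambda>b1 b2. mul (mul (T (la x1 b1)) x2) b2))
      = Sw d x (\<lambda>x1 x2. Sw d b (\<lambda>b1 b2. Sw d x2 (\<lambda>p q. Sw d b2 (\<lambda>r t. mul (T (la x1 b1)) (mul (la p r) (ra q t))))))"
    by (simp add: mul_assoc pullm mp3'[symmetric])
  also have "\<dots> = Sw d x (\<lambda>x' q. Sw d b (\<lambda>b' t. Sw d x' (\<lambda>x1 p. Sw d b' (\<lambda>b1 r. mul (T (la x1 b1)) (mul (la p r) (ra q t))))))"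
    by (rule regroup2[OF vs]) (auto simp: ml_defs intro!: LRm)
  also have "\<dots> = Sw d x (\<lambda>x' q. Sw d b (\<lambda>b' t. sc (e x') (sc (e b') (ra q t))))"
    by (simp add: mul_assoc[symmetric] Sw_pull1[OF bil_mul] CT mul_sc1 vsS[OF vs])
  also have "\<dots> = Sw d x (\<lambda>x' q. sc (e x') (ra q b))"
    by (simp add: Sw_pull_scale[OF vs] counit2 LRm)
  also have "\<dots> = ra x b" by (rule counit2) (auto intro!: LRm)
  finally show ?thesis by simp
qed


definition dot where "dot a b = Sw d a (\<lambda>a1 a2. mul a1 (la (T a2) b))"
definition Sy where "Sy a = Sw d a (\<lambda>a1 a2. la a1 (T a2))"
definition beta0 where "beta0 x y = la (T x) y"

lemma bil_dot: "bil sc sc dot"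
  unfolding bil_def dot_def by (auto intro!: LRm Sw_arg simp: bil_def)
lemma Sy_lin: "Vector_Spaces.linear sc sc Sy"
  unfolding Sy_def by (rule Sw_arg[OF vs]) (auto intro!: LRm simp: bil_def)
lemma bil_beta0: "bil sc sc beta0"
  unfolding bil_def beta0_def by (auto intro!: LRm)

lemmas LRd = LRm L_bil1[OF bil_dot] L_bil2[OF bil_dot] lin_comp[OF _ Sy_lin]
lemmas scld = sclm bil_scale1[OF bil_dot] bil_scale2[OF bil_dot] lin_scale[OF Sy_lin]
lemmas pulld = pullm Sw_pull1[OF bil_dot] Sw_pull2[OF bil_dot] Sw_pullL[OF Sy_lin]

lemma dot_one1: "dot one b = b"
  unfolding dot_def by (subst Sw_one[OF vs]) (auto intro!: LRm simp: bil_def T_one)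
lemma dot_one2: "dot a one = a"
  unfolding dot_def by (simp add: la_u' e_T sclm counit1[OF L_id[OF vs]])

lemma bul_eq: "Sw d x (\<lambda>a b. dot a (la b y)) = mul x y"
proof -
  have "Sw d x (\<lambda>a b. dot a (la b y)) = Sw3 d x (\<lambda>a1 a2 b. mul a1 (la (mul (T a2) b) y))"
    by (simp add: S3_1 dot_def pullm la_mul')
  also have "\<dots> = Sw d x (\<lambda>a1 w. Sw d w (\<lambda>a2 b. mul a1 (la (mul (T a2) b) y)))"
    by (rule S3_2[OF vs]) (auto simp: ml_defs intro!: LRm)
  also have "\<dots> = Sw d x (\<lambda>a1 w. sc (e w) (mul a1 y))"
    by (simp add: pullm T_l la_sc1 sclm)
  also have "\<dots> = mul x y" by (rule counit1) (auto intro!: LRm)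
  finally show ?thesis .
qed

lemma conv_beta0: "is_conv_inv sc d e la beta0"
  unfolding is_conv_inv_def
proof (intro conjI allI)
  show "bilinH sc beta0" using bil_beta0 unfolding bilinH_bil .
  fix x y
  show "sum_list (map (\<lambda>(a, b). la a (beta0 b y)) (d x)) = sc (e x) y"
    using T_r[of x] unfolding beta0_def Sw_def[symmetric]
    by (simp add: la_mul'[symmetric] Sw_pull1[OF bil_la] la_sc1)
  show "sum_list (map (\<lambda>(a, b). beta0 a (la b y)) (d x)) = sc (e x) y"
    using T_l[of x] unfolding beta0_def Sw_def[symmetric]
    by (simp add: la_mul'[symmetric] Sw_pull1[OF bil_la] la_sc1)
qed

lemma SA_eq: "Sw d x (\<lambda>a b. beta0 a (Sy b)) = T x"
proof -
  have "Sw d x (\<lambda>a b. beta0 a (Sy b)) = Sw d x (\<lambda>a b. Sw d b (\<lambda>p q. la (mul (T a) p) (T q)))"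
    by (simp add: beta0_def Sy_def pullm la_mul')
  also have "\<dots> = Sw3 d x (\<lambda>a p q. la (mul (T a) p) (T q))"
    by (rule S3_2[symmetric, OF vs]) (auto simp: ml_defs intro!: LRm)
  also have "\<dots> = Sw d x (\<lambda>w q. sc (e w) (T q))"
    by (simp add: S3_1 pullm T_l la_sc1)
  also have "\<dots> = T x" by (rule counit2[OF T_lin])
  finally show ?thesis .
qed

lemma M2: assumes K: "bil sc sc K"
  shows "Sw d x (\<lambda>x1 x2. Sw3 d b (\<lambda>p q t. K (la x1 p) (mul (ra x2 q) (T t))))
       = Sw3 d x (\<lambda>p q x2. Sw d b (\<lambda>b1 b2. K (la p b1) (mul (T (la q b2)) x2)))"
proof -
  note LRK = LRm L_bil1[OF K] L_bil2[OF K]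
  have "Sw3 d x (\<lambda>p q x2. Sw d b (\<lambda>b1 b2. K (la p b1) (mul (T (la q b2)) x2)))
      = Sw3 d x (\<lambda>p q x2. Sw d b (\<lambda>b1 w. Sw d w (\<lambda>b2 v. Sw d v (\<lambda>b3 b4. K (la p b1) (mul (mul (mul (T (la q b2)) x2) b3) (T b4))))))"
  proof (intro arg_cong[where f="Sw3 d x"] ext Sw_cong)
    fix p q x2 b1 w
    have "Sw d w (\<lambda>b2 v. Sw d v (\<lambda>b3 b4. K (la p b1) (mul (mul (mul (T (la q b2)) x2) b3) (T b4))))
        = K (la p b1) (Sw d w (\<lambda>b2 v. sc (e v) (mul (T (la q b2)) x2)))"
      by (simp add: mul_assoc pullm Sw_pull2[OF K] T_r sclm)
    also have "\<dots> = K (la p b1) (mul (T (la q w)) x2)"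
      by (subst counit1) (auto intro!: LRK)
    finally show "K (la p b1) (mul (T (la q w)) x2) = Sw d w (\<lambda>b2 v. Sw d v (\<lambda>b3 b4. K (la p b1) (mul (mul (mul (T (la q b2)) x2) b3) (T b4))))" by simp
  qed
  also have "\<dots> = Sw3 d x (\<lambda>p q x2. Sw4 d b (\<lambda>b1 b2 b3 b4. K (la p b1) (mul (mul (mul (T (la q b2)) x2) b3) (T b4))))"
    apply (intro arg_cong[where f="Sw3 d x"] ext)
    apply (subst R4[OF vs]) apply (auto simp: ml_defs intro!: LRK)[1]
    apply (intro Sw_cong) apply (subst S3_2[OF vs]) apply (auto simp: ml_defs intro!: LRK)[1]
    by (rule refl)
  also have "\<dots> = Sw3 d x (\<lambda>p q x2. Sw3 d b (\<lambda>b1 b' b4. Sw d b' (\<lambda>b2 b3. K (la p b1) (mul (mul (mul (T (la q b2)) x2) b3) (T b4)))))"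
    by (intro arg_cong[where f="Sw3 d x"] ext S4_2[OF vs]) (auto simp: ml_defs intro!: LRK)
  also have "\<dots> = Sw d x (\<lambda>p x'. Sw d x' (\<lambda>q x2. Sw3 d b (\<lambda>b1 b' b4. Sw d b' (\<lambda>b2 b3. K (la p b1) (mul (mul (mul (T (la q b2)) x2) b3) (T b4))))))"
    by (rule S3_2[OF vs]) (auto simp: ml_defs Sw_defs intro!: LRK)
  also have "\<dots> = Sw d x (\<lambda>p x'. Sw3 d b (\<lambda>b1 b' b4. Sw d x' (\<lambda>q x2. Sw d b' (\<lambda>b2 b3. K (la p b1) (mul (mul (mul (T (la q b2)) x2) b3) (T b4))))))"
    by (rule Sw_cong, rule swap3[symmetric])
  also have "\<dots> = Sw d x (\<lambda>p x'. Sw3 d b (\<lambda>b1 b' b4. K (la p b1) (mul (ra x' b') (T b4))))"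
    by (simp add: ra_formula Sw_pull2[OF K] Sw_pull1[OF bil_mul])
  finally show ?thesis by simp
qed

lemma P1dot: "la x (dot b c) = Sw d x (\<lambda>x1 x2. dot (la x1 b) (la x2 c))"
proof -
  have K: "bil sc sc (\<lambda>P Z. mul P (la Z c))" by (auto intro!: LRm simp: bil_def)
  have "la x (dot b c) = Sw d b (\<lambda>b1 b2. Sw d x (\<lambda>x1 x2. Sw d b1 (\<lambda>p q. mul (la x1 p) (la (mul (ra x2 q) (T b2)) c))))"
    by (simp add: dot_def Sw_pull2[OF bil_la, symmetric] mp1' la_mul')
  also have "\<dots> = Sw d x (\<lambda>x1 x2. Sw3 d b (\<lambda>p q t. mul (la x1 p) (la (mul (ra x2 q) (T t)) c)))"
    by (simp add: S3_1 Sw_swap[of d b])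
  also have "\<dots> = Sw3 d x (\<lambda>p q x2. Sw d b (\<lambda>b1 b2. mul (la p b1) (la (mul (T (la q b2)) x2) c)))"
    by (rule M2[OF K])
  also have "\<dots> = Sw d x (\<lambda>x1 x2. dot (la x1 b) (la x2 c))"
    by (simp add: S3_1 dot_def la_mul' la_c'[OF vs] bil_def LRm)
  finally show ?thesis .
qed


lemma comult_dot: assumes s: "vector_space s" and F: "bil sc s F"
  shows "Sw d (dot a b) F = Sw4 d a (\<lambda>a1 a2 a3 a4. Sw d b (\<lambda>b1 b2. F (mul a1 (la (T a4) b1)) (mul a2 (la (T a3) b2))))"
proof -
  note LRF = LRd L_bil1[OF F] L_bil2[OF F] s
  have "Sw d (dot a b) F = Sw d a (\<lambda>a1 a2. Sw d (mul a1 (la (T a2) b)) F)"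
    by (simp add: dot_def Sw_lin_out[OF Sw_arg[OF s F]])
  also have "\<dots> = Sw d a (\<lambda>a1 a2. Sw d a1 (\<lambda>p q. Sw d a2 (\<lambda>r t. Sw d b (\<lambda>b1 b2. F (mul p (la (T t) b1)) (mul q (la (T r) b2))))))"
  proof (intro Sw_cong)
    fix a1 a2
    have "Sw d (mul a1 (la (T a2) b)) F = Sw d a1 (\<lambda>p q. Sw d (la (T a2) b) (\<lambda>P Q. F (mul p P) (mul q Q)))"
      by (rule comult[OF s F])
    also have "\<dots> = Sw d a1 (\<lambda>p q. Sw d (T a2) (\<lambda>X Y. Sw d b (\<lambda>b1 b2. F (mul p (la X b1)) (mul q (la Y b2)))))"
      by (intro Sw_cong la_c'[OF s]) (auto intro!: LRF simp: bil_def)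
    also have "\<dots> = Sw d a1 (\<lambda>p q. Sw d a2 (\<lambda>r t. Sw d b (\<lambda>b1 b2. F (mul p (la (T t) b1)) (mul q (la (T r) b2)))))"
      by (intro Sw_cong T_anti_comult[OF s]) (auto intro!: LRF simp: bil_def)
    finally show "Sw d (mul a1 (la (T a2) b)) F = Sw d a1 (\<lambda>p q. Sw d a2 (\<lambda>r t. Sw d b (\<lambda>b1 b2. F (mul p (la (T t) b1)) (mul q (la (T r) b2)))))" .
  qed
  also have "\<dots> = Sw3 d a (\<lambda>p q a2. Sw d a2 (\<lambda>r t. Sw d b (\<lambda>b1 b2. F (mul p (la (T t) b1)) (mul q (la (T r) b2)))))"
    by (simp add: S3_1)
  also have "\<dots> = Sw4 d a (\<lambda>p q r t. Sw d b (\<lambda>b1 b2. F (mul p (la (T t) b1)) (mul q (la (T r) b2))))"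
    by (rule S4_3[symmetric, OF s]) (auto simp: ml_defs intro!: LRF)
  finally show ?thesis .
qed

lemma dot_assoc: "dot (dot a b) c = dot a (dot b c)"
proof -
  have "dot (dot a b) c = Sw4 d a (\<lambda>a1 a2 a3 a4. Sw d b (\<lambda>b1 b2. mul (mul a1 (la (T a4) b1)) (la (T (mul a2 (la (T a3) b2))) c)))"
    by (subst (1) dot_def, rule comult_dot[OF vs]) (auto intro!: LRd simp: bil_def)
  also have "\<dots> = Sw4 d a (\<lambda>a1 a2 a3 a4. Sw d b (\<lambda>b1 b2. mul a1 (mul (la (T a4) b1) (la (T (la (T a3) b2)) (la (T a2) c)))))"
    by (simp add: mul_assoc T_anti_mult la_mul')
  also have "\<dots> = Sw3 d a (\<lambda>a1 a2 w. Sw d w (\<lambda>a3 a4. Sw d b (\<lambda>b1 b2. mul a1 (mul (la (T a4) b1) (la (T (la (T a3) b2)) (la (T a2) c))))))"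
    by (rule S4_3[OF vs]) (auto simp: ml_defs intro!: LRd)
  also have "\<dots> = Sw3 d a (\<lambda>a1 a2 w. mul a1 (dot (la (T w) b) (la (T a2) c)))"
  proof (intro arg_cong[where f="Sw3 d a"] ext)
    fix a1 a2 w
    have "dot (la (T w) b) (la (T a2) c) = Sw d (T w) (\<lambda>X Y. Sw d b (\<lambda>b1 b2. mul (la X b1) (la (T (la Y b2)) (la (T a2) c))))"
      by (subst dot_def, rule la_c'[OF vs]) (auto intro!: LRd simp: bil_def)
    also have "\<dots> = Sw d w (\<lambda>r t. Sw d b (\<lambda>b1 b2. mul (la (T t) b1) (la (T (la (T r) b2)) (la (T a2) c))))"
      by (rule T_anti_comult[OF vs]) (auto intro!: LRd simp: bil_def)
    finally show "Sw d w (\<lambda>a3 a4. Sw d b (\<lambda>b1 b2. mul a1 (mul (la (T a4) b1) (la (T (la (T a3) b2)) (la (T a2) c))))) = mul a1 (dot (la (T w) b) (la (T a2) c))"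
      by (simp add: pullm)
  qed
  also have "\<dots> = Sw d a (\<lambda>a1 a2. Sw d a2 (\<lambda>r t. mul a1 (dot (la (T t) b) (la (T r) c))))"
    by (rule S3_2[OF vs]) (auto simp: ml_defs intro!: LRd)
  also have "\<dots> = Sw d a (\<lambda>a1 a2. mul a1 (Sw d (T a2) (\<lambda>X Y. dot (la X b) (la Y c))))"
    by (intro Sw_cong, subst T_anti_comult[OF vs]) (auto intro!: LRd simp: bil_def pullm)
  also have "\<dots> = dot a (dot b c)"
    by (simp add: P1dot[symmetric] dot_def[of a])
  finally show ?thesis .
qed

lemma e_dot: "e (dot a b) = e a * e b"
proof -
  have "e (dot a b) = Sw d a (\<lambda>a1 a2. e a1 * e a2) * e b"
    by (simp add: dot_def Sw_lin_out[OF e_lin] e_mul la_e' e_T Sw_mult_right[symmetric] mult.assoc)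
  also have "Sw d a (\<lambda>a1 a2. e a1 * e a2) = e a" using counit2[OF e_lin, of a] by simp
  finally show ?thesis .
qed

lemma Sy_r: "Sw d x (\<lambda>a b. dot a (Sy b)) = sc (e x) one"
proof -
  have "Sw d x (\<lambda>a b. dot a (Sy b)) = Sw3 d x (\<lambda>a1 a2 b. Sw d b (\<lambda>p q. mul a1 (la (mul (T a2) p) (T q))))"
    by (simp add: S3_1 dot_def Sy_def pullm la_mul')
  also have "\<dots> = Sw4 d x (\<lambda>a1 a2 p q. mul a1 (la (mul (T a2) p) (T q)))"
    by (rule S4_3[symmetric, OF vs]) (auto simp: ml_defs intro!: LRd)
  also have "\<dots> = Sw3 d x (\<lambda>a1 w q. Sw d w (\<lambda>a2 p. mul a1 (la (mul (T a2) p) (T q))))"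
    by (rule S4_2[OF vs]) (auto simp: ml_defs intro!: LRd)
  also have "\<dots> = Sw3 d x (\<lambda>a1 w q. sc (e w) (mul a1 (T q)))"
    by (simp add: pullm T_l la_sc1 sclm)
  also have "\<dots> = Sw d x (\<lambda>a1 v. Sw d v (\<lambda>w q. sc (e w) (mul a1 (T q))))"
    by (rule S3_2[OF vs]) (auto simp: ml_defs intro!: LRd)
  also have "\<dots> = Sw d x (\<lambda>a1 v. mul a1 (T v))"
    by (intro Sw_cong counit2) (auto intro!: LRd)
  finally show ?thesis by (simp add: T_r)
qed


lemma Sy_l: "Sw d x (\<lambda>a b. dot (Sy a) b) = sc (e x) one"
proof -
  have "Sw d x (\<lambda>a b. dot (Sy a) b) = Sw3 d x (\<lambda>x1 x2 x3. dot (la x1 (T x2)) x3)"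
    by (simp add: S3_1 Sy_def Sw_pull1[OF bil_dot])
  also have "\<dots> = Sw4 d x (\<lambda>x1 w x4 x5. sc (e w) (dot (la x1 (T x4)) x5))"
    by (simp only: S4_1, intro arg_cong[where f="Sw3 d x"] ext counit1[symmetric]) (auto intro!: LRd)
  also have "\<dots> = Sw5 d x (\<lambda>x1 x2 x3 x4 x5. dot (la x1 (T x4)) (la x2 (la (T x3) x5)))"
    by (subst S5_2[OF vs]) (auto simp: ml_defs intro!: LRd simp: la_mul'[symmetric] Sw_pull1[OF bil_la] Sw_pull2[OF bil_dot] T_r la_sc1 scld)
  also have "\<dots> = Sw4 d x (\<lambda>y1 x3 x4 x5. la y1 (dot (T x4) (la (T x3) x5)))"
    by (simp add: S5_1 P1dot)
  also have "\<dots> = Sw5 d x (\<lambda>x1 x3 r t x5. la x1 (mul (T t) (la (T (mul x3 (T r))) x5)))"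
  proof (subst S5_3[OF vs])
    show "ml5 sc sc (\<lambda>x1 x3 r t x5. la x1 (mul (T t) (la (T (mul x3 (T r))) x5)))"
      by (auto simp: ml_defs intro!: LRd)
    show "Sw4 d x (\<lambda>y1 x3 x4 x5. la y1 (dot (T x4) (la (T x3) x5))) = Sw4 d x (\<lambda>a1 a2 a3 a4. Sw d a3 (\<lambda>p q. la a1 (mul (T q) (la (T (mul a2 (T p))) a4))))"
    proof (intro arg_cong[where f="Sw4 d x"] ext)
      fix y1 x3 x4 x5
      have "dot (T x4) (la (T x3) x5) = Sw d x4 (\<lambda>r t. mul (T t) (la (T (T r)) (la (T x3) x5)))"
        by (subst dot_def, rule T_anti_comult[OF vs]) (auto intro!: LRd simp: bil_def)
      then show "la y1 (dot (T x4) (la (T x3) x5)) = Sw d x4 (\<lambda>p q. la y1 (mul (T q) (la (T (mul x3 (T p))) x5)))"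
        by (simp add: pullm T_anti_mult la_mul')
    qed
  qed
  also have "\<dots> = Sw4 d x (\<lambda>x1 w t x5. Sw d w (\<lambda>x3 r. la x1 (mul (T t) (la (T (mul x3 (T r))) x5))))"
    by (rule S5_2[OF vs]) (auto simp: ml_defs intro!: LRd)
  also have "\<dots> = Sw4 d x (\<lambda>x1 w t x5. sc (e w) (la x1 (mul (T t) x5)))"
    by (simp add: pullm T_r T_one sclm)
  also have "\<dots> = Sw3 d x (\<lambda>x1 t x5. la x1 (mul (T t) x5))"
    by (simp only: S4_1, intro arg_cong[where f="Sw3 d x"] ext counit1) (auto intro!: LRd)
  also have "\<dots> = Sw d x (\<lambda>x1 v. Sw d v (\<lambda>t x5. la x1 (mul (T t) x5)))"
    by (rule S3_2[OF vs]) (auto simp: ml_defs intro!: LRd)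
  also have "\<dots> = Sw d x (\<lambda>x1 v. sc (e v) (la x1 one))"
    by (simp add: pullm T_l sclm)
  also have "\<dots> = la x one" by (rule counit1) (auto intro!: LRd)
  finally show ?thesis by (simp add: la_u')
qed

lemma P5dot: assumes s: "vector_space s" and F: "bil sc s F"
  shows "Sw d (dot x y) F = Sw4 d x (\<lambda>x1 x2 x3 x4. Sw d y (\<lambda>y1 y2. F (dot x1 (la x2 (beta0 x4 y1))) (dot x3 y2)))"
proof -
  note LRF = LRd L_bil1[OF F] L_bil2[OF F] s
  have "Sw4 d x (\<lambda>x1 x2 x3 x4. Sw d y (\<lambda>y1 y2. F (dot x1 (la x2 (beta0 x4 y1))) (dot x3 y2)))
      = Sw4 d x (\<lambda>x1 x2 x3 x4. Sw d y (\<lambda>y1 y2. Sw d x1 (\<lambda>p q. F (mul p (la (mul (mul (T q) x2) (T x4)) y1)) (dot x3 y2))))"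
    by (simp add: dot_def beta0_def la_mul' Sw_pull1[OF F])
  also have "\<dots> = Sw4 d x (\<lambda>x1 x2 x3 x4. Sw d x1 (\<lambda>p q. Sw d y (\<lambda>y1 y2. F (mul p (la (mul (mul (T q) x2) (T x4)) y1)) (dot x3 y2))))"
    by (intro arg_cong[where f="Sw4 d x"] ext, rule Sw_swap)
  also have "\<dots> = Sw5 d x (\<lambda>p q x2 x3 x4. Sw d y (\<lambda>y1 y2. F (mul p (la (mul (mul (T q) x2) (T x4)) y1)) (dot x3 y2)))"
    by (simp add: S5_1)
  also have "\<dots> = Sw4 d x (\<lambda>p w x3 x4. Sw d w (\<lambda>q x2. Sw d y (\<lambda>y1 y2. F (mul p (la (mul (mul (T q) x2) (T x4)) y1)) (dot x3 y2))))"
    by (rule S5_2[OF s]) (auto simp: ml_defs intro!: LRF)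
  also have "\<dots> = Sw4 d x (\<lambda>p w x3 x4. s (e w) (Sw d y (\<lambda>y1 y2. F (mul p (la (T x4) y1)) (dot x3 y2))))"
    apply (intro arg_cong[where f="Sw4 d x"] ext)
    apply (subst Sw_swap)
    by (simp add: Sw_pull1[OF F] Sw_pull2[OF bil_mul] Sw_pull1[OF bil_la] Sw_pull1[OF bil_mul] T_l mul_sc1 sclm bil_scale1[OF F] Sw_pull_scale[OF s])
  also have "\<dots> = Sw3 d x (\<lambda>p x3 x4. Sw d y (\<lambda>y1 y2. F (mul p (la (T x4) y1)) (dot x3 y2)))"
    by (simp only: S4_1, intro arg_cong[where f="Sw3 d x"] ext counit1) (auto intro!: LRF)
  also have "\<dots> = Sw4 d x (\<lambda>p a2 a3 x4. Sw d y (\<lambda>y1 y2. F (mul p (la (T x4) y1)) (mul a2 (la (T a3) y2))))"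
    apply (subst S4_2[OF s]) apply (auto simp: ml_defs intro!: LRF)[1]
    apply (intro arg_cong[where f="Sw3 d x"] ext)
    apply (subst Sw_swap)
    by (simp add: dot_def Sw_pull2[OF F])
  also have "\<dots> = Sw d (dot x y) F" by (rule comult_dot[symmetric, OF s F])
  finally show ?thesis by simp
qed


lemma CT': "Sw d w (\<lambda>a1 p. Sw d v (\<lambda>b1 r. mul (la a1 b1) (T (la p r)))) = sc (e w * e v) one"
proof -
  have "Sw d w (\<lambda>a1 p. Sw d v (\<lambda>b1 r. mul (la a1 b1) (T (la p r)))) = Sw d (la w v) (\<lambda>X Y. mul X (T Y))"
    by (rule la_c'[symmetric, OF vs]) (auto intro!: LRm simp: bil_def)
  then show ?thesis by (simp add: T_r la_e')
qed

lemma CR: "Sw d w (\<lambda>a1 p. Sw d v (\<lambda>b1 r. mul (ra a1 b1) (T (ra p r)))) = sc (e w * e v) one"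
proof -
  have "Sw d w (\<lambda>a1 p. Sw d v (\<lambda>b1 r. mul (ra a1 b1) (T (ra p r)))) = Sw d (ra w v) (\<lambda>X Y. mul X (T Y))"
    by (rule ra_c'[symmetric, OF vs]) (auto intro!: LRm simp: bil_def)
  then show ?thesis by (simp add: T_r ra_e')
qed

lemma STAR2: assumes s: "vector_space s" and F: "bil sc s F"
  shows "Sw d x (\<lambda>x1 x2. Sw d y (\<lambda>y1 y2. F (ra x1 y1) (ra x2 y2)))
       = Sw3 d x (\<lambda>x1 x2 x3. Sw3 d y (\<lambda>y1 y2 y3. F (ra x2 y2) (mul (mul (T (la x1 y1)) x3) y3)))"
proof -
  note LRF = LRm L_bil1[OF F] L_bil2[OF F] s
  have "Sw d x (\<lambda>x1 x2. Sw d y (\<lambda>y1 y2. F (ra x1 y1) (ra x2 y2))) = Sw d (ra x y) F"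
    by (rule ra_c'[symmetric, OF s F])
  also have "\<dots> = Sw d x (\<lambda>a b. Sw d y (\<lambda>c f. Sw d (mul (mul (T (la a c)) b) f) F))"
    by (subst ra_formula) (simp add: Sw_lin_out[OF Sw_arg[OF s F]])
  also have "\<dots> = Sw d x (\<lambda>a b. Sw d y (\<lambda>c f. Sw d a (\<lambda>a1 a2. Sw d c (\<lambda>c1 c2. Sw d b (\<lambda>b1 b2. Sw d f (\<lambda>f1 f2.
          F (mul (mul (T (la a2 c2)) b1) f1) (mul (mul (T (la a1 c1)) b2) f2)))))))"
  proof (intro Sw_cong)
    fix a b c f
    have "Sw d (mul (mul (T (la a c)) b) f) F = Sw d (mul (T (la a c)) b) (\<lambda>P Q. Sw d f (\<lambda>f1 f2. F (mul P f1) (mul Q f2)))"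
      by (rule comult[OF s F])
    also have "\<dots> = Sw d (T (la a c)) (\<lambda>P1 P2. Sw d b (\<lambda>b1 b2. Sw d f (\<lambda>f1 f2. F (mul (mul P1 b1) f1) (mul (mul P2 b2) f2))))"
      by (rule comult[OF s]) (auto intro!: LRF simp: bil_def)
    also have "\<dots> = Sw d (la a c) (\<lambda>L1 L2. Sw d b (\<lambda>b1 b2. Sw d f (\<lambda>f1 f2. F (mul (mul (T L2) b1) f1) (mul (mul (T L1) b2) f2))))"
      by (rule T_anti_comult[OF s]) (auto intro!: LRF simp: bil_def)
    also have "\<dots> = Sw d a (\<lambda>a1 a2. Sw d c (\<lambda>c1 c2. Sw d b (\<lambda>b1 b2. Sw d f (\<lambda>f1 f2.
          F (mul (mul (T (la a2 c2)) b1) f1) (mul (mul (T (la a1 c1)) b2) f2)))))"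
      by (rule la_c'[OF s]) (auto intro!: LRF simp: bil_def)
    finally show "Sw d (mul (mul (T (la a c)) b) f) F = Sw d a (\<lambda>a1 a2. Sw d c (\<lambda>c1 c2. Sw d b (\<lambda>b1 b2. Sw d f (\<lambda>f1 f2.
          F (mul (mul (T (la a2 c2)) b1) f1) (mul (mul (T (la a1 c1)) b2) f2)))))" .
  qed
  also have "\<dots> = Sw d x (\<lambda>z t. Sw d y (\<lambda>z' q. Sw d z (\<lambda>g w. Sw d z' (\<lambda>g' v. Sw d w (\<lambda>h r. Sw d v (\<lambda>h' p.
          F (mul (mul (T (la h h')) r) p) (mul (mul (T (la g g')) t) q)))))))"
    by (rule regroup4[OF s]) (auto simp: ml_defs intro!: LRF)
  also have "\<dots> = Sw d x (\<lambda>z t. Sw d y (\<lambda>z' q. Sw d z (\<lambda>g w. Sw d z' (\<lambda>g' v. F (ra w v) (mul (mul (T (la g g')) t) q)))))"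
    by (simp add: ra_formula Sw_pull1[OF F])
  also have "\<dots> = Sw d x (\<lambda>z t. Sw d z (\<lambda>g w. Sw d y (\<lambda>z' q. Sw d z' (\<lambda>g' v. F (ra w v) (mul (mul (T (la g g')) t) q)))))"
    by (rule Sw_cong, rule Sw_swap)
  also have "\<dots> = Sw3 d x (\<lambda>x1 x2 x3. Sw3 d y (\<lambda>y1 y2 y3. F (ra x2 y2) (mul (mul (T (la x1 y1)) x3) y3)))"
    by (simp add: S3_1)
  finally show ?thesis .
qed


lemma conv3: assumes s: "vector_space s" and G: "tril sc s G" and G': "tril sc s G'"
  and eq: "\<And>x1 X. Sw d X (\<lambda>x2 x3. G x1 x2 x3) = Sw d X (\<lambda>x2 x3. G' x1 x2 x3)"
  shows "Sw3 d x G = Sw3 d x G'"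
  using eq by (simp add: S3_2[OF s G] S3_2[OF s G'])

lemma STAR3: assumes s: "vector_space s" and H: "bil sc s H"
  shows "Sw3 d x (\<lambda>x1 x2 x3. Sw3 d y (\<lambda>y1 y2 y3. H (ra x2 y2) (mul (la x1 y1) (ra x3 y3))))
       = Sw3 d x (\<lambda>x1 x2 x3. Sw3 d y (\<lambda>y1 y2 y3. H (ra x1 y1) (mul (la x2 y2) (ra x3 y3))))"
proof -
  note LRF = LRm L_bil1[OF H] L_bil2[OF H] s
  define V where "V = Sw d x (\<lambda>p q. Sw d y (\<lambda>r t. H (ra p r) (mul q t)))"
  have rhs: "Sw3 d x (\<lambda>x1 x2 x3. Sw3 d y (\<lambda>y1 y2 y3. H (ra x1 y1) (mul (la x2 y2) (ra x3 y3)))) = V"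
  proof -
    have "Sw3 d x (\<lambda>x1 x2 x3. Sw3 d y (\<lambda>y1 y2 y3. H (ra x1 y1) (mul (la x2 y2) (ra x3 y3))))
        = Sw d x (\<lambda>x1 X. Sw d X (\<lambda>x2 x3. Sw d y (\<lambda>y1 Y. Sw d Y (\<lambda>y2 y3. H (ra x1 y1) (mul (la x2 y2) (ra x3 y3))))))"
      apply (subst S3_2[OF s]) apply (auto simp: ml_defs Sw_defs intro!: LRF)[1]
      apply (intro Sw_cong)
      apply (subst S3_2[OF s]) apply (auto simp: ml_defs Sw_defs intro!: LRF)[1]
      by (rule refl)
    also have "\<dots> = Sw d x (\<lambda>x1 X. Sw d y (\<lambda>y1 Y. Sw d X (\<lambda>x2 x3. Sw d Y (\<lambda>y2 y3. H (ra x1 y1) (mul (la x2 y2) (ra x3 y3))))))"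
      by (rule Sw_cong, rule Sw_swap)
    also have "\<dots> = V" by (simp add: V_def Sw_pull2[OF H] mp3'[symmetric])
    finally show ?thesis .
  qed
  have lhs: "Sw3 d x (\<lambda>x1 x2 x3. Sw3 d y (\<lambda>y1 y2 y3. H (ra x2 y2) (mul (la x1 y1) (ra x3 y3)))) = V"
  proof -
    have "Sw3 d x (\<lambda>x1 x2 x3. Sw3 d y (\<lambda>y1 y2 y3. H (ra x2 y2) (mul (la x1 y1) (ra x3 y3))))
        = Sw d x (\<lambda>x0 X. Sw d X (\<lambda>x1 x2. Sw d y (\<lambda>y0 Y. Sw d Y (\<lambda>y1 y2. H (ra x1 y1) (mul (la x0 y0) (ra x2 y2))))))"
      apply (subst S3_2[OF s]) apply (auto simp: ml_defs Sw_defs intro!: LRF)[1]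
      apply (intro Sw_cong)
      apply (subst S3_2[OF s]) apply (auto simp: ml_defs Sw_defs intro!: LRF)[1]
      by (rule refl)
    also have "\<dots> = Sw d x (\<lambda>x0 X. Sw d y (\<lambda>y0 Y. Sw d X (\<lambda>x1 x2. Sw d Y (\<lambda>y1 y2. H (ra x1 y1) (mul (la x0 y0) (ra x2 y2))))))"
      by (rule Sw_cong, rule Sw_swap)
    also have "\<dots> = Sw d x (\<lambda>x0 X. Sw d y (\<lambda>y0 Y. Sw3 d X (\<lambda>X1 X2 X3. Sw3 d Y (\<lambda>Y1 Y2 Y3.
          H (ra X2 Y2) (mul (mul (mul (la x0 y0) (T (la X1 Y1))) X3) Y3)))))"
    proof (intro Sw_cong)
      fix x0 X y0 Y
      have "Sw d X (\<lambda>x1 x2. Sw d Y (\<lambda>y1 y2. (\<lambda>P Q. H P (mul (la x0 y0) Q)) (ra x1 y1) (ra x2 y2)))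
        = Sw3 d X (\<lambda>x1 x2 x3. Sw3 d Y (\<lambda>y1 y2 y3. (\<lambda>P Q. H P (mul (la x0 y0) Q)) (ra x2 y2) (mul (mul (T (la x1 y1)) x3) y3)))"
        by (rule STAR2[OF s]) (auto intro!: LRF simp: bil_def)
      then show "Sw d X (\<lambda>x1 x2. Sw d Y (\<lambda>y1 y2. H (ra x1 y1) (mul (la x0 y0) (ra x2 y2)))) =
          Sw3 d X (\<lambda>X1 X2 X3. Sw3 d Y (\<lambda>Y1 Y2 Y3. H (ra X2 Y2) (mul (mul (mul (la x0 y0) (T (la X1 Y1))) X3) Y3)))"
        by (simp add: mul_assoc)
    qed
    also have "\<dots> = Sw d x (\<lambda>x0 X. Sw3 d X (\<lambda>X1 X2 X3. Sw d y (\<lambda>y0 Y. Sw3 d Y (\<lambda>Y1 Y2 Y3.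
          H (ra X2 Y2) (mul (mul (mul (la x0 y0) (T (la X1 Y1))) X3) Y3)))))"
      by (rule Sw_cong, rule swap3[symmetric])
    also have "\<dots> = Sw4 d x (\<lambda>x0 X1 X2 X3. Sw4 d y (\<lambda>y0 Y1 Y2 Y3.
          H (ra X2 Y2) (mul (mul (mul (la x0 y0) (T (la X1 Y1))) X3) Y3)))"
      apply (subst R4[OF s]) apply (auto simp: ml_defs Sw_defs intro!: LRF)[1]
      apply (intro Sw_cong arg_cong[where f="Sw3 d _"] ext)
      apply (subst R4[OF s]) apply (auto simp: ml_defs Sw_defs intro!: LRF)[1]
      by (rule refl)
    also have "\<dots> = Sw3 d x (\<lambda>w X2 X3. Sw3 d y (\<lambda>v Y2 Y3. Sw d w (\<lambda>x0 X1. Sw d v (\<lambda>y0 Y1.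
          H (ra X2 Y2) (mul (mul (mul (la x0 y0) (T (la X1 Y1))) X3) Y3)))))"
      by (simp add: S4_1 swap3)
    also have "\<dots> = Sw3 d x (\<lambda>w X2 X3. Sw3 d y (\<lambda>v Y2 Y3. s (e w) (s (e v) (H (ra X2 Y2) (mul X3 Y3)))))"
      by (simp add: Sw_pull2[OF H] Sw_pull1[OF bil_mul] CT' mul_sc1 sclm bil_scale2[OF H] vsS[OF s] mult.commute)
    also have "\<dots> = Sw d x (\<lambda>X2 X3. Sw3 d y (\<lambda>v Y2 Y3. s (e v) (H (ra X2 Y2) (mul X3 Y3))))"
      unfolding S3_1[of x] Sw3_def[of d y] Sw_pull_scale[OF s]
      by (intro Sw_cong counit2) (auto intro!: LRF)
    also have "\<dots> = V"
      unfolding V_def S3_1[of y]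
      by (intro Sw_cong counit2) (auto intro!: LRF)
    finally show ?thesis .
  qed
  show ?thesis using lhs rhs by simp
qed

lemma Sw3_scale: assumes "vector_space s" shows "Sw3 d y (\<lambda>a b c. s k (F a b c)) = s k (Sw3 d y F)"
  by (simp add: Sw3_def Sw_pull_scale[OF assms])

lemma collapse34: assumes s: "vector_space s"
  and K1: "\<And>b c f Z. Vector_Spaces.linear sc s (\<lambda>a. K a b c f Z)"
  and K2: "\<And>a c f Z. Vector_Spaces.linear sc s (\<lambda>b. K a b c f Z)"
  and K3: "\<And>a b f Z. Vector_Spaces.linear sc s (\<lambda>c. K a b c f Z)"
  and K4: "\<And>a b c Z. Vector_Spaces.linear sc s (\<lambda>f. K a b c f Z)"
  and K5: "\<And>a b c f. Vector_Spaces.linear sc s (K a b c f)"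
  shows "Sw4 d x (\<lambda>x1 x2 x3 x4. Sw4 d y (\<lambda>y1 y2 y3 y4. K x1 x2 y1 y2 (mul (ra x3 y3) (T (ra x4 y4)))))
       = Sw d x (\<lambda>x1 x2. Sw d y (\<lambda>y1 y2. K x1 x2 y1 y2 one))"
proof -
  note LRK = LRm s K1 K2 K3 K4 K5 lin_comp[OF _ K5]
  have "Sw4 d x (\<lambda>x1 x2 x3 x4. Sw4 d y (\<lambda>y1 y2 y3 y4. K x1 x2 y1 y2 (mul (ra x3 y3) (T (ra x4 y4)))))
      = Sw3 d x (\<lambda>x1 x2 w. Sw3 d y (\<lambda>y1 y2 v. Sw d w (\<lambda>x3 x4. Sw d v (\<lambda>y3 y4. K x1 x2 y1 y2 (mul (ra x3 y3) (T (ra x4 y4)))))))"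
    apply (subst S4_3[OF s]) apply (auto simp: ml_defs Sw_defs intro!: LRK)[1]
    apply (intro arg_cong[where f="Sw3 d x"] ext)
    apply (subst S4_3[OF s]) apply (auto simp: ml_defs intro!: LRK)[1]
    by (rule swap3[symmetric])
  also have "\<dots> = Sw3 d x (\<lambda>x1 x2 w. Sw3 d y (\<lambda>y1 y2 v. s (e w) (s (e v) (K x1 x2 y1 y2 one))))"
    by (simp add: Sw_pullL[OF K5] Sw_pull2[OF bil_mul] Sw_pull1[OF bil_mul] CR lin_scale[OF K5] vsS[OF s] mult.commute)
  also have "\<dots> = Sw d x (\<lambda>x1 x2. Sw3 d y (\<lambda>y1 y2 v. s (e v) (K x1 x2 y1 y2 one)))"
    apply (simp only: Sw3_scale[OF s])
    apply (subst S3_2[OF s]) apply (auto simp: ml_defs Sw_defs intro!: LRK)[1]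
    by (intro Sw_cong counit1) (auto simp: Sw_defs intro!: LRK)
  also have "\<dots> = Sw d x (\<lambda>x1 x2. Sw d y (\<lambda>y1 y2. K x1 x2 y1 y2 one))"
    apply (intro Sw_cong)
    apply (subst S3_2[OF s]) apply (auto simp: ml_defs Sw_defs intro!: LRK)[1]
    by (intro Sw_cong counit1) (auto intro!: LRK)
  finally show ?thesis .
qed

lemma P6b_mp: assumes s: "vector_space s" and G: "bil sc s G"
  shows "Sw d x (\<lambda>x1 x2. Sw d y (\<lambda>y1 y2. G (la x1 y1) (ra x2 y2))) = Sw d x (\<lambda>x1 x2. Sw d y (\<lambda>y1 y2. G (la x2 y2) (ra x1 y1)))"
proof -
  note LRF = LRm L_bil1[OF G] L_bil2[OF G] s
  have "Sw d x (\<lambda>x1 x2. Sw d y (\<lambda>y1 y2. G (la x1 y1) (ra x2 y2)))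
      = Sw4 d x (\<lambda>x1 x2 x3 x4. Sw4 d y (\<lambda>y1 y2 y3 y4. (\<lambda>x1 x2 y1 y2 Z. G (mul (la x1 y1) Z) (ra x2 y2)) x1 x2 y1 y2 (mul (ra x3 y3) (T (ra x4 y4)))))"
    by (subst collapse34[OF s]) (auto intro!: LRF)
  also have "\<dots> = Sw d x (\<lambda>X x4. Sw d y (\<lambda>Y y4. Sw3 d X (\<lambda>x1 x2 x3. Sw3 d Y (\<lambda>y1 y2 y3.
      (\<lambda>P Q. G (mul Q (T (ra x4 y4))) P) (ra x2 y2) (mul (la x1 y1) (ra x3 y3))))))"
    by (simp add: Sw4_def mul_assoc swap3)
  also have "\<dots> = Sw d x (\<lambda>X x4. Sw d y (\<lambda>Y y4. Sw3 d X (\<lambda>x1 x2 x3. Sw3 d Y (\<lambda>y1 y2 y3.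
      (\<lambda>P Q. G (mul Q (T (ra x4 y4))) P) (ra x1 y1) (mul (la x2 y2) (ra x3 y3))))))"
    by (intro Sw_cong STAR3[OF s]) (auto intro!: LRF simp: bil_def)
  also have "\<dots> = Sw4 d x (\<lambda>x1 x2 x3 x4. Sw4 d y (\<lambda>y1 y2 y3 y4. (\<lambda>x1 x2 y1 y2 Z. G (mul (la x2 y2) Z) (ra x1 y1)) x1 x2 y1 y2 (mul (ra x3 y3) (T (ra x4 y4)))))"
    by (simp add: Sw4_def mul_assoc swap3)
  also have "\<dots> = Sw d x (\<lambda>x1 x2. Sw d y (\<lambda>y1 y2. G (la x2 y2) (ra x1 y1)))"
    by (subst collapse34[OF s]) (auto intro!: LRF)
  finally show ?thesis .
qed


definition MM where "MM = \<lparr>bmul = mul, bone = one, bdelta = d, beps = e, bT = T, lact = la, ract = ra\<rparr>"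

lemma ymul_eq: "ymul (toYD MM) = dot"
  by (simp add: MM_def toYD_def dot_def Sw_def fun_eq_iff)
lemma yS_eq: "yS (toYD MM) = Sy"
  by (simp add: MM_def toYD_def Sy_def Sw_def fun_eq_iff)
lemma y_simps: "yone (toYD MM) = one" "ydelta (toYD MM) = d" "yeps (toYD MM) = e" "yact (toYD MM) = la"
  by (simp_all add: MM_def toYD_def)

lemma betaOf_eq: "betaOf sc (toYD MM) = beta0"
proof -
  have ex: "is_conv_inv sc d e la beta0" by (rule conv_beta0)
  have "is_conv_inv sc d e la (betaOf sc (toYD MM))"
    unfolding betaOf_def y_simps by (rule someI[where P="\<lambda>b. is_conv_inv sc d e la b", OF ex])
  then show ?thesis using conv_inv_unique[OF bil_la _ ex] by blast
qed

lemma bulletOf_eq: "bulletOf (toYD MM) = mul"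
  using bul_eq by (simp add: bulletOf_def ymul_eq y_simps Sw_def fun_eq_iff)
lemma SOf_eq: "SOf sc (toYD MM) = T"
  using SA_eq by (simp add: SOf_def betaOf_eq yS_eq y_simps Sw_def fun_eq_iff)
lemma ractOf_eq: "ractOf sc (toYD MM) = ra"
  using ra_formula by (simp add: ractOf_def bulletOf_eq SOf_eq y_simps Sw_concat fun_eq_iff)

lemma teq2I: assumes "\<And>B. bil sc (*) B \<Longrightarrow> sum_list (map (\<lambda>(a,b). B a b) xs) = sum_list (map (\<lambda>(a,b). B a b) ys)"
  shows "teq2 sc xs ys" using assms unfolding teq2_def bilinK_bil by blast

lemma YDPH_toYD: "is_YDPH sc (toYD MM)"
  unfolding is_YDPH_def Let_def ymul_eq yS_eq y_simps betaOf_eq bulletOf_eq SOf_eq ractOf_eq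
proof (intro conjI allI)
  show "is_algebra sc dot one" unfolding is_algebra_def bilinH_bil
    using vs bil_dot dot_assoc dot_one1 dot_one2 by blast
  show "is_coalgebra sc d e" by (rule coal)
  show "is_antipode sc dot one d e Sy" unfolding is_antipode_def
    using Sy_lin Sy_r Sy_l unfolding Sw_def by blast
  show "bilinH sc la" by (rule la_bil)
  show "\<exists>b. is_conv_inv sc d e la b" using conv_beta0 by blast
  show "e one = 1" by simp
  show "teq2 sc (d one) [(one, one)]" using hopf unfolding is_hopf_def is_bialgebra_def by blast
  fix x y z
  show "teq2 sc (d (la x y)) (concat (map (\<lambda>(x1, x2). map (\<lambda>(y1, y2). (la x1 y1, la x2 y2)) (d y)) (d x)))"
    using la_c by blast
  show "e (la x y) = e x * e y" by (rule la_e')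
  show "la x (dot y z) = sum_list (map (\<lambda>(x1, x2). dot (la x1 y) (la x2 z)) (d x))"
    using P1dot unfolding Sw_def .
  show "la x (la y z) = la (mul x y) z" by (simp add: la_mul')
  show "e (dot x y) = e x * e y" by (rule e_dot)
  show "teq2 sc (d (dot x y)) (concat (map (\<lambda>(x1, x2, x3, x4). map (\<lambda>(y1, y2). (dot x1 (la x2 (beta0 x4 y1)), dot x3 y2)) (d y)) (sw4 d x)))"
  proof (rule teq2I)
    fix B :: "'h \<Rightarrow> 'h \<Rightarrow> 'k" assume B: "bil sc (*) B"
    show "sum_list (map (\<lambda>(a,b). B a b) (d (dot x y))) = sum_list (map (\<lambda>(a,b). B a b) (concat (map (\<lambda>(x1, x2, x3, x4). map (\<lambda>(y1, y2). (dot x1 (la x2 (beta0 x4 y1)), dot x3 y2)) (d y)) (sw4 d x))))"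
      using P5dot[OF vs_field B, of x y] unfolding Sw_def Sw_defs sw4_def sw3_def
      by (simp add: sum_list_concat' map_concat o_def case_prod_beta')
  qed
  show "teq2 sc (d (T x)) (map (\<lambda>(x1, x2). (T x2, T x1)) (d x))"
  proof (rule teq2I)
    fix B :: "'h \<Rightarrow> 'h \<Rightarrow> 'k" assume B: "bil sc (*) B"
    show "sum_list (map (\<lambda>(a,b). B a b) (d (T x))) = sum_list (map (\<lambda>(a,b). B a b) (map (\<lambda>(x1, x2). (T x2, T x1)) (d x)))"
      using T_anti_comult[OF vs_field B, of x] unfolding Sw_def by (simp add: o_def case_prod_beta')
  qed
  show "teq2 sc (concat (map (\<lambda>(x1, x2). map (\<lambda>(y1, y2). (la x1 y1, ra x2 y2)) (d y)) (d x)))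
                (concat (map (\<lambda>(x1, x2). map (\<lambda>(y1, y2). (la x2 y2, ra x1 y1)) (d y)) (d x)))"
  proof (rule teq2I)
    fix B :: "'h \<Rightarrow> 'h \<Rightarrow> 'k" assume B: "bil sc (*) B"
    show "sum_list (map (\<lambda>(a,b). B a b) (concat (map (\<lambda>(x1, x2). map (\<lambda>(y1, y2). (la x1 y1, ra x2 y2)) (d y)) (d x))))
        = sum_list (map (\<lambda>(a,b). B a b) (concat (map (\<lambda>(x1, x2). map (\<lambda>(y1, y2). (la x2 y2, ra x1 y1)) (d y)) (d x))))"
      using P6b_mp[OF vs_field B, of x y] unfolding Sw_def
      by (simp add: sum_list_concat' map_concat o_def case_prod_beta')
  qed
qed

lemma toMP_toYD: "toMP sc (toYD MM) = MM"
  by (simp add: toMP_def bulletOf_eq SOf_eq ractOf_eq y_simps) (simp add: MM_def)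

end

lemma MP_locale: assumes "is_MP sc M"
  shows "mpl sc (bdelta M) (beps M) (bmul M) (bone M) (bT M) (lact M) (ract M)"
proof -
  have H: "is_hopf sc (bmul M) (bone M) (bdelta M) (beps M) (bT M)" using assms unfolding is_MP_def Let_def by blast
  have C: "is_coalgebra sc (bdelta M) (beps M)" using H unfolding is_hopf_def is_bialgebra_def by blast
  show ?thesis
    by (unfold_locales; insert assms H C; unfold is_MP_def Let_def; elim conjE; assumption)
qed

theorem part2: assumes "is_MP sc M" shows "is_YDPH sc (toYD M) \<and> toMP sc (toYD M) = M"
proof -
  interpret X: mpl sc "bdelta M" "beps M" "bmul M" "bone M" "bT M" "lact M" "ract M"
    by (rule MP_locale[OF assms])
  have MMe: "X.MM = M" unfolding X.MM_def by (cases M) simp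
  show ?thesis using X.YDPH_toYD X.toMP_toYD unfolding MMe by simp
qed



lemma L_bil1g: "bil sc' s p \<Longrightarrow> Vector_Spaces.linear sc sc' f \<Longrightarrow> Vector_Spaces.linear sc s (\<lambda>v. p (f v) c)"
  unfolding bil_def using lin_comp[of sc sc' f s "\<lambda>a. p a c"] by blast
lemma L_bil2g: "bil sc' s p \<Longrightarrow> Vector_Spaces.linear sc sc' f \<Longrightarrow> Vector_Spaces.linear sc s (\<lambda>v. p c (f v))"
  unfolding bil_def using lin_comp[of sc sc' f s "p c"] by blast

lemma Sw_hom:
  assumes "\<forall>x. teq2 sc' (d' (f x)) (map (\<lambda>(a,b). (f a, f b)) (d x))" "vector_space s" "bil sc' s G"
  shows "Sw d' (f x) G = Sw d x (\<lambda>a b. G (f a) (f b))"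
  using teq2_transfer[OF assms(1)[rule_format] assms(2,3)] unfolding Sw_def by (simp add: o_def case_prod_beta')

locale hhom = H1: hopfl sc d e mul one T + H2: hopfl sc' d' e' mul' one' T'
  for sc :: "'k::field \<Rightarrow> 'h::ab_group_add \<Rightarrow> 'h" and d e mul one T
  and sc' :: "'k \<Rightarrow> 'g::ab_group_add \<Rightarrow> 'g" and d' e' mul' one' T' +
  fixes f
  assumes f_lin: "Vector_Spaces.linear sc sc' f"
    and f_mul: "\<And>x y. f (mul x y) = mul' (f x) (f y)" and f_one: "f one = one'"
    and f_d: "\<forall>x. teq2 sc' (d' (f x)) (map (\<lambda>(a,b). (f a, f b)) (d x))"
    and f_e: "\<And>x. e' (f x) = e x"
begin

lemma f_T: "f (T x) = T' (f x)"
proof -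
  note LRf = H1.LRh H2.LRh lin_comp[OF _ f_lin] L_bil1g[OF H2.bil_mul] L_bil2g[OF H2.bil_mul] lin_comp[OF _ H2.T_lin] H2.vs
  have "f (T x) = Sw d x (\<lambda>a b. sc' (e b) (f (T a)))"
    by (rule H1.counit1[symmetric]) (auto intro!: LRf)
  also have "\<dots> = Sw d x (\<lambda>a b. mul' (f (T a)) (Sw d' (f b) (\<lambda>p q. mul' p (T' q))))"
    by (simp add: H2.T_r f_e H2.sclh)
  also have "\<dots> = Sw d x (\<lambda>a b. Sw d b (\<lambda>p q. mul' (f (mul (T a) p)) (T' (f q))))"
    by (intro H1.Sw_cong, subst Sw_hom[OF f_d H2.vs]) (auto intro!: LRf simp: bil_def H2.pullh f_mul H2.mul_assoc)
  also have "\<dots> = Sw3 d x (\<lambda>a p q. mul' (f (mul (T a) p)) (T' (f q)))"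
    by (rule H1.S3_2[symmetric, OF H2.vs]) (auto simp: ml_defs intro!: LRf)
  also have "\<dots> = Sw d x (\<lambda>w q. sc' (e w) (T' (f q)))"
    by (simp add: H1.S3_1 Sw_pull1[OF H2.bil_mul] Sw_pullL[OF f_lin] H1.T_l lin_scale[OF f_lin] f_one H2.sclh)
  also have "\<dots> = T' (f x)" by (rule H1.counit2) (auto intro!: LRf)
  finally show ?thesis .
qed

end


theorem part3:
  fixes sc :: "'k::field \<Rightarrow> 'h::ab_group_add \<Rightarrow> 'h" and sc' :: "'k \<Rightarrow> 'g::ab_group_add \<Rightarrow> 'g"
  assumes A: "is_YDPH sc A" and A': "is_YDPH sc' A'"
  shows "is_YD_hom sc sc' f A A' \<longleftrightarrow> is_MP_hom sc sc' f (toMP sc A) (toMP sc' A')"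
proof -
  interpret Y: ydph sc "ydelta A" "yeps A" "ymul A" "yone A" "yS A" "yact A" "betaOf sc A" "bulletOf A" "SOf sc A" "ractOf sc A"
    by (rule YD_locale[OF A])
  interpret Y': ydph sc' "ydelta A'" "yeps A'" "ymul A'" "yone A'" "yS A'" "yact A'" "betaOf sc' A'" "bulletOf A'" "SOf sc' A'" "ractOf sc' A'"
    by (rule YD_locale[OF A'])
  have common: "f (ractOf sc A x y) = ractOf sc' A' (f x) (f y)"
    if lin: "Vector_Spaces.linear sc sc' f"
    and fd: "\<forall>x. teq2 sc' (ydelta A' (f x)) (map (\<lambda>(a,b). (f a, f b)) (ydelta A x))"
    and fa: "\<And>x y. f (yact A x y) = yact A' (f x) (f y)"
    and fb: "\<And>x y. f (bulletOf A x y) = bulletOf A' (f x) (f y)"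
    and fS: "\<And>x. f (SOf sc A x) = SOf sc' A' (f x)" for x y
  proof -
    have "f (ractOf sc A x y) = Sw (ydelta A) x (\<lambda>x1 x2. Sw (ydelta A) y (\<lambda>y1 y2.
        bulletOf A' (bulletOf A' (SOf sc' A' (yact A' (f x1) (f y1))) (f x2)) (f y2)))"
      by (simp add: Y.ract_exp Sw_lin_out[OF lin] fa fb fS)
    also have "\<dots> = Sw (ydelta A') (f x) (\<lambda>x1 x2. Sw (ydelta A') (f y) (\<lambda>y1 y2.
        bulletOf A' (bulletOf A' (SOf sc' A' (yact A' x1 y1)) x2) y2))"
      apply (subst Sw_hom[OF fd Y'.vs]) apply (auto intro!: Y'.LR4 simp: bil_def)[1]
      apply (intro Y.Sw_cong)
      apply (subst Sw_hom[OF fd Y'.vs]) apply (auto intro!: Y'.LR4 simp: bil_def)[1]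
      by (rule refl)
    also have "\<dots> = ractOf sc' A' (f x) (f y)" by (simp add: Y'.ract_exp)
    finally show ?thesis .
  qed
  have HH: "hhom sc (ydelta A) (yeps A) (bulletOf A) (yone A) (SOf sc A) sc' (ydelta A') (yeps A') (bulletOf A') (yone A') (SOf sc' A') f"
    if lin: "Vector_Spaces.linear sc sc' f"
    and fd: "\<forall>x. teq2 sc' (ydelta A' (f x)) (map (\<lambda>(a,b). (f a, f b)) (ydelta A x))"
    and fb: "\<And>x y. f (bulletOf A x y) = bulletOf A' (f x) (f y)"
    and fu: "f (yone A) = yone A'"
    and fe: "\<And>x. yeps A' (f x) = yeps A x"
  proof -
    have HA: "hopfl sc (ydelta A) (yeps A) (bulletOf A) (yone A) (SOf sc A)"
      unfolding hopfl_def hopfl_axioms_def coal_def using Y.coal Y.hopf_bul by blast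
    have HA': "hopfl sc' (ydelta A') (yeps A') (bulletOf A') (yone A') (SOf sc' A')"
      unfolding hopfl_def hopfl_axioms_def coal_def using Y'.coal Y'.hopf_bul by blast
    show ?thesis unfolding hhom_def hhom_axioms_def using HA HA' lin fd fb fu fe by blast
  qed
  show ?thesis
  proof
    assume h: "is_YD_hom sc sc' f A A'"
    have lin: "Vector_Spaces.linear sc sc' f" using h unfolding is_YD_hom_def by blast
    have fm: "\<And>x y. f (ymul A x y) = ymul A' (f x) (f y)" using h unfolding is_YD_hom_def by blast
    have fu: "f (yone A) = yone A'" using h unfolding is_YD_hom_def by blast
    have fd: "\<forall>x. teq2 sc' (ydelta A' (f x)) (map (\<lambda>(a,b). (f a, f b)) (ydelta A x))" using h unfolding is_YD_hom_def by blast
    have fe: "\<And>x. yeps A' (f x) = yeps A x" using h unfolding is_YD_hom_def by blast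
    have fa: "\<And>x y. f (yact A x y) = yact A' (f x) (f y)" using h unfolding is_YD_hom_def by blast
    have fb: "f (bulletOf A x y) = bulletOf A' (f x) (f y)" for x y
    proof -
      have "f (bulletOf A x y) = Sw (ydelta A) x (\<lambda>a b. ymul A' (f a) (yact A' (f b) (f y)))"
        by (simp add: Y.bul_def Sw_lin_out[OF lin] fm fa)
      also have "\<dots> = Sw (ydelta A') (f x) (\<lambda>a b. ymul A' a (yact A' b (f y)))"
        by (rule Sw_hom[OF fd Y'.vs, symmetric]) (auto intro!: Y'.LR4 simp: bil_def)
      finally show ?thesis by (simp add: Y'.bul_def)
    qed
    interpret HH: hhom sc "ydelta A" "yeps A" "bulletOf A" "yone A" "SOf sc A" sc' "ydelta A'" "yeps A'" "bulletOf A'" "yone A'" "SOf sc' A'" f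
      by (rule HH[OF lin fd fb fu fe])
    have fr: "f (ractOf sc A x y) = ractOf sc' A' (f x) (f y)" for x y
      by (rule common[OF lin fd fa fb HH.f_T])
    show "is_MP_hom sc sc' f (toMP sc A) (toMP sc' A')"
      unfolding is_MP_hom_def toMP_def mpair.simps using lin fb fu fd fe fa fr by blast
  next
    assume h: "is_MP_hom sc sc' f (toMP sc A) (toMP sc' A')"
    have lin: "Vector_Spaces.linear sc sc' f" using h unfolding is_MP_hom_def by blast
    have fb: "\<And>x y. f (bulletOf A x y) = bulletOf A' (f x) (f y)" using h unfolding is_MP_hom_def toMP_def by simp
    have fu: "f (yone A) = yone A'" using h unfolding is_MP_hom_def toMP_def by simp
    have fd: "\<forall>x. teq2 sc' (ydelta A' (f x)) (map (\<lambda>(a,b). (f a, f b)) (ydelta A x))" using h unfolding is_MP_hom_def toMP_def by simp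
    have fe: "\<And>x. yeps A' (f x) = yeps A x" using h unfolding is_MP_hom_def toMP_def by simp
    have fa: "\<And>x y. f (yact A x y) = yact A' (f x) (f y)" using h unfolding is_MP_hom_def toMP_def by simp
    interpret HH: hhom sc "ydelta A" "yeps A" "bulletOf A" "yone A" "SOf sc A" sc' "ydelta A'" "yeps A'" "bulletOf A'" "yone A'" "SOf sc' A'" f
      by (rule HH[OF lin fd fb fu fe])
    have fm: "f (ymul A x z) = ymul A' (f x) (f z)" for x z
    proof -
      have "f (ymul A x z) = Sw (ydelta A) x (\<lambda>a b. bulletOf A' (f a) (yact A' (SOf sc' A' (f b)) (f z)))"
        by (subst Y.m_recover) (simp add: Sw_lin_out[OF lin] fb fa HH.f_T)
      also have "\<dots> = Sw (ydelta A') (f x) (\<lambda>a b. bulletOf A' a (yact A' (SOf sc' A' b) (f z)))"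
        by (rule Sw_hom[OF fd Y'.vs, symmetric]) (auto intro!: Y'.LR4 simp: bil_def)
      finally show ?thesis by (simp add: Y'.m_recover[symmetric])
    qed
    show "is_YD_hom sc sc' f A A'"
      unfolding is_YD_hom_def using lin fm fu fd fe fa by blast
  qed
qed


theorem part4:
  fixes sc :: "'k::field \<Rightarrow> 'h::ab_group_add \<Rightarrow> 'h" and sc' :: "'k \<Rightarrow> 'g::ab_group_add \<Rightarrow> 'g"
  assumes M: "is_MP sc M" and M': "is_MP sc' M'"
  shows "is_MP_hom sc sc' f M M' \<longleftrightarrow> is_YD_hom sc sc' f (toYD M) (toYD M')"
proof -
  interpret X: mpl sc "bdelta M" "beps M" "bmul M" "bone M" "bT M" "lact M" "ract M"
    by (rule MP_locale[OF M])
  interpret X': mpl sc' "bdelta M'" "beps M'" "bmul M'" "bone M'" "bT M'" "lact M'" "ract M'"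
    by (rule MP_locale[OF M'])
  have MMe: "X.MM = M" unfolding X.MM_def by (cases M) simp
  have MMe': "X'.MM = M'" unfolding X'.MM_def by (cases M') simp
  have HH: "hhom sc (bdelta M) (beps M) (bmul M) (bone M) (bT M) sc' (bdelta M') (beps M') (bmul M') (bone M') (bT M') f"
    if lin: "Vector_Spaces.linear sc sc' f"
    and fd: "\<forall>x. teq2 sc' (bdelta M' (f x)) (map (\<lambda>(a,b). (f a, f b)) (bdelta M x))"
    and fb: "\<And>x y. f (bmul M x y) = bmul M' (f x) (f y)"
    and fu: "f (bone M) = bone M'"
    and fe: "\<And>x. beps M' (f x) = beps M x"
  proof -
    have HA: "hopfl sc (bdelta M) (beps M) (bmul M) (bone M) (bT M)"
      unfolding hopfl_def hopfl_axioms_def coal_def using X.coal X.hopf by blast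
    have HA': "hopfl sc' (bdelta M') (beps M') (bmul M') (bone M') (bT M')"
      unfolding hopfl_def hopfl_axioms_def coal_def using X'.coal X'.hopf by blast
    show ?thesis unfolding hhom_def hhom_axioms_def using HA HA' lin fd fb fu fe by blast
  qed
  have yM: "ymul (toYD M) = X.dot" "yone (toYD M) = bone M" "ydelta (toYD M) = bdelta M" "yeps (toYD M) = beps M" "yact (toYD M) = lact M"
    using X.ymul_eq X.y_simps unfolding MMe by simp_all
  have yM': "ymul (toYD M') = X'.dot" "yone (toYD M') = bone M'" "ydelta (toYD M') = bdelta M'" "yeps (toYD M') = beps M'" "yact (toYD M') = lact M'"
    using X'.ymul_eq X'.y_simps unfolding MMe' by simp_all
  show ?thesis
  proof
    assume h: "is_MP_hom sc sc' f M M'"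
    have lin: "Vector_Spaces.linear sc sc' f" using h unfolding is_MP_hom_def by blast
    have fb: "\<And>x y. f (bmul M x y) = bmul M' (f x) (f y)" using h unfolding is_MP_hom_def by blast
    have fu: "f (bone M) = bone M'" using h unfolding is_MP_hom_def by blast
    have fd: "\<forall>x. teq2 sc' (bdelta M' (f x)) (map (\<lambda>(a,b). (f a, f b)) (bdelta M x))" using h unfolding is_MP_hom_def by blast
    have fe: "\<And>x. beps M' (f x) = beps M x" using h unfolding is_MP_hom_def by blast
    have fa: "\<And>x y. f (lact M x y) = lact M' (f x) (f y)" using h unfolding is_MP_hom_def by blast
    interpret HH: hhom sc "bdelta M" "beps M" "bmul M" "bone M" "bT M" sc' "bdelta M'" "beps M'" "bmul M'" "bone M'" "bT M'" f
      by (rule HH[OF lin fd fb fu fe])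
    have fdot: "f (X.dot x y) = X'.dot (f x) (f y)" for x y
    proof -
      have "f (X.dot x y) = Sw (bdelta M) x (\<lambda>a1 a2. bmul M' (f a1) (lact M' (bT M' (f a2)) (f y)))"
        by (simp add: X.dot_def Sw_lin_out[OF lin] fb fa HH.f_T)
      also have "\<dots> = Sw (bdelta M') (f x) (\<lambda>a1 a2. bmul M' a1 (lact M' (bT M' a2) (f y)))"
        by (rule Sw_hom[OF fd X'.vs, symmetric]) (auto intro!: X'.LRd simp: bil_def)
      finally show ?thesis by (simp add: X'.dot_def)
    qed
    show "is_YD_hom sc sc' f (toYD M) (toYD M')"
      unfolding is_YD_hom_def yM yM' using lin fdot fu fd fe fa by blast
  next
    assume h: "is_YD_hom sc sc' f (toYD M) (toYD M')"
    have lin: "Vector_Spaces.linear sc sc' f" using h unfolding is_YD_hom_def by blast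
    have fdot: "\<And>x y. f (X.dot x y) = X'.dot (f x) (f y)" using h unfolding is_YD_hom_def yM yM' by blast
    have fu: "f (bone M) = bone M'" using h unfolding is_YD_hom_def yM yM' by blast
    have fd: "\<forall>x. teq2 sc' (bdelta M' (f x)) (map (\<lambda>(a,b). (f a, f b)) (bdelta M x))" using h unfolding is_YD_hom_def yM yM' by blast
    have fe: "\<And>x. beps M' (f x) = beps M x" using h unfolding is_YD_hom_def yM yM' by blast
    have fa: "\<And>x y. f (lact M x y) = lact M' (f x) (f y)" using h unfolding is_YD_hom_def yM yM' by blast
    have fb: "f (bmul M x y) = bmul M' (f x) (f y)" for x y
    proof -
      have "f (bmul M x y) = Sw (bdelta M) x (\<lambda>a b. X'.dot (f a) (lact M' (f b) (f y)))"
        by (subst X.bul_eq[symmetric]) (simp add: Sw_lin_out[OF lin] fdot fa)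
      also have "\<dots> = Sw (bdelta M') (f x) (\<lambda>a b. X'.dot a (lact M' b (f y)))"
        by (rule Sw_hom[OF fd X'.vs, symmetric]) (auto intro!: X'.LRd simp: bil_def)
      finally show ?thesis by (simp add: X'.bul_eq)
    qed
    interpret HH: hhom sc "bdelta M" "beps M" "bmul M" "bone M" "bT M" sc' "bdelta M'" "beps M'" "bmul M'" "bone M'" "bT M'" f
      by (rule HH[OF lin fd fb fu fe])
    have fr: "f (ract M x y) = ract M' (f x) (f y)" for x y
    proof -
      have "f (ract M x y) = Sw (bdelta M) x (\<lambda>x1 x2. Sw (bdelta M) y (\<lambda>y1 y2. bmul M' (bmul M' (bT M' (lact M' (f x1) (f y1))) (f x2)) (f y2)))"
        by (subst X.ra_formula) (simp add: Sw_lin_out[OF lin] fb fa HH.f_T)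
      also have "\<dots> = Sw (bdelta M') (f x) (\<lambda>x1 x2. Sw (bdelta M') (f y) (\<lambda>y1 y2. bmul M' (bmul M' (bT M' (lact M' x1 y1)) x2) y2))"
        apply (subst Sw_hom[OF fd X'.vs]) apply (auto intro!: X'.LRd simp: bil_def)[1]
        apply (intro X.Sw_cong)
        apply (subst Sw_hom[OF fd X'.vs]) apply (auto intro!: X'.LRd simp: bil_def)[1]
        by (rule refl)
      finally show ?thesis by (simp add: X'.ra_formula[symmetric])
    qed
    show "is_MP_hom sc sc' f M M'"
      unfolding is_MP_hom_def using lin fb fu fd fe fa fr by blast
  qed
qed

theorem corollary3:
  fixes sc :: "'k::field \<Rightarrow> 'h::ab_group_add \<Rightarrow> 'h"
    and sc' :: "'k \<Rightarrow> 'g::ab_group_add \<Rightarrow> 'g"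
  shows
   "(\<forall>A. is_YDPH sc A \<longrightarrow> is_MP sc (toMP sc A) \<and> toYD (toMP sc A) = A)
  \<and> (\<forall>M. is_MP sc M \<longrightarrow> is_YDPH sc (toYD M) \<and> toMP sc (toYD M) = M)
  \<and> (\<forall>(A :: ('k, 'h) ydph) (A' :: ('k, 'g) ydph) f. is_YDPH sc A \<and> is_YDPH sc' A' \<longrightarrow>
        (is_YD_hom sc sc' f A A' \<longleftrightarrow> is_MP_hom sc sc' f (toMP sc A) (toMP sc' A')))
  \<and> (\<forall>(M :: ('k, 'h) mpair) (M' :: ('k, 'g) mpair) f. is_MP sc M \<and> is_MP sc' M' \<longrightarrow>
        (is_MP_hom sc sc' f M M' \<longleftrightarrow> is_YD_hom sc sc' f (toYD M) (toYD M')))"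
  using part1 part2 part3 part4 by blast


end
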